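(* Let $\mathbb{A}$ be a 2-category having the two-dimensional cokernel diagram of a 1-cell $p:e\to b$. Then: (1) $p$ is monadic if and only if $p$ has a left adjoint and $p$ is an effective faithful morphism; (2) $p$ is comonadic if and only if $p$ has a right adjoint and $p$ is an effective faithful morphism.
   Context: A 2-category is a $\mathbf{Cat}$-enriched category; composition of 1-cells is juxtaposition, vertical composition of 2-cells is $\cdot$, horizontal composition is $\ast$, $\mathrm{id}_f$ is the identity 2-cell on $f$. $\mathbb{A}^{\mathrm{co}}$ is obtained by reversing 2-cells. A 1-cell is an equivalence if it has a pseudo-inverse up to invertible 2-cells. Adjunctions in $\mathbb{A}$ are given by unit and counit 2-cells satisfying the triangle identities. Opcomma object of $p$ along itself: $b\uparrow_p b$ with $\delta^0,\delta^1:b\to b\uparrow_pb$ and $\alpha:\delta^1p\Rightarrow\delta^0p$ such that for every $y$, $h\mapsto(h\delta^0,h\delta^1,\mathrm{id}_h\ast\alpha)$, $\xi\mapsto(\xi\ast\mathrm{id}_{\delta^0},\xi\ast\mathrm{id}_{\delta^1})$ is an isomorphism from $\mathbb{A}(b\uparrow_pb,y)$ onto the category of triples $(h_0,h_1:b\to y,\beta:h_1p\Rightarrow h_0p)$ with morphisms pairs $(\xi_0,\xi_1)$ with $(\xi_0\ast\mathrm{id}_p)\cdot\beta=\beta'\cdot(\xi_1\ast\mathrm{id}_p)$. A two-dimensional pushout of a span $f_0:c\to c_0$, $f_1:c\to c_1$ is $P$ with $q_0,q_1$, $q_0f_0=q_1f_1$, such that $k\mapsto(kq_0,kq_1)$ is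 an isomorphism from $\mathbb{A}(P,y)$ onto the category of pairs $(k_0,k_1)$ with $k_0f_0=k_1f_1$ and morphisms pairs of 2-cells $(\xi_0,\xi_1)$ with $\xi_0\ast\mathrm{id}_{f_0}=\xi_1\ast\mathrm{id}_{f_1}$. $\mathbb{A}$ has the two-dimensional cokernel diagram of $p$ if it has $b\uparrow_pb$ and a two-dimensional pushout $b\uparrow_pb\uparrow_pb$ of $(\delta^0,\delta^1)$ with $D^0,D^2$, $D^2\delta^0=D^0\delta^1$; $D^1$ is the unique 1-cell with $D^1\delta^1=D^2\delta^1$, $D^1\delta^0=D^0\delta^0$, $\mathrm{id}_{D^1}\ast\alpha=(\mathrm{id}_{D^0}\ast\alpha)\cdot(\mathrm{id}_{D^2}\ast\alpha)$; $s^0$ is the unique 1-cell with $s^0\delta^0=s^0\delta^1=\mathrm{id}_b$, $\mathrm{id}_{s^0}\ast\alpha=\mathrm{id}_p$. Effective faithful: $\mathrm{Desc}_p(y)$ has objects $(h:y\to b,\beta:\delta^1h\Rightarrow\delta^0h)$ with $(\mathrm{id}_{D^0}\ast\beta)\cdot(\mathrm{id}_{D^2}\ast\beta)=\mathrm{id}_{D^1}\ast\beta$, $\mathrm{id}_{s^0}\ast\beta=\mathrm{id}_h$, morphisms 2-cells $\xi:h_1\Rightarrow h_0$ with $\beta_0\cdot(\mathrm{id}_{\delta^1}\ast\xi)=(\mathrm{id}_{\delta^0}\ast\xi)\cdot\beta_1$; a lax descent object is $L$ with $d:L\to b$, $\Psi:\delta^1d\Rightarrow\delta^0d$ such that $g\mapsto(dg,\Psi\ast\mathrm{id}_g)$,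 $\xi\mapsto\mathrm{id}_d\ast\xi$ is an isomorphism $\mathbb{A}(y,L)\cong\mathrm{Desc}_p(y)$ for all $y$; $p^H$ is unique with $dp^H=p$, $\Psi\ast\mathrm{id}_{p^H}=\alpha$. $p$ is an effective faithful morphism if $\mathbb{A}$ has the two-dimensional cokernel diagram of $p$, a lax descent object of it, and $p^H$ is an equivalence. Monadic: a right Kan extension of $f$ along $g$ is $(r,\gamma:rg\Rightarrow f)$ with $\beta\mapsto\gamma\cdot(\beta\ast\mathrm{id}_g)$ bijective from 2-cells $k\Rightarrow r$ to 2-cells $kg\Rightarrow f$. The codensity monad of $p$ is $(b,t,m,\eta)$ where $(t,\gamma)$ is a right Kan extension of $p$ along $p$, $m$ unique with $\gamma\cdot(m\ast\mathrm{id}_p)=\gamma\cdot(\mathrm{id}_t\ast\gamma)$, $\eta$ unique with $\gamma\cdot(\eta\ast\mathrm{id}_p)=\mathrm{id}_p$. An Eilenberg–Moore object of $\mathsf{T}=(b,t,m,\eta)$ is $b^{\mathsf{T}}$ with $u:b^{\mathsf{T}}\to b$, $\mu:tu\Rightarrow u$ such that $g\mapsto(ug,\mu\ast\mathrm{id}_g)$ is an isomorphism from $\mathbb{A}(y,b^{\mathsf{T}})$ onto the category of pairs $(h,\beta:th\Rightarrow h)$ with $\beta\cdot(\mathrm{id}_t\ast\beta)=\beta\cdot(m\ast\mathrm{id}_h)$, $\beta\cdot(\eta\ast\mathrm{id}_h)=\mathrm{id}_h$ (morphisms $\xi$ with $\xi\cdot\beta_1=\beta_0\cdot(\mathrm{id}_t\ast\xi)$).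 $p$ is monadic if it has a codensity monad $\mathsf{T}$, $\mathbb{A}$ has an Eilenberg–Moore object of $\mathsf{T}$, and the unique $p^{\mathsf{T}}$ with $up^{\mathsf{T}}=p$, $\mu\ast\mathrm{id}_{p^{\mathsf{T}}}=\gamma$ is an equivalence. $p$ is comonadic if the corresponding 1-cell of $\mathbb{A}^{\mathrm{co}}$ is monadic in $\mathbb{A}^{\mathrm{co}}$. *)

theory Defs
  imports Main
begin

text \<open>Objects of type 'o, 1-cells of type 'a, 2-cells of type 'c.
  cmp g f is the juxtaposition g f (first f, then g);
  vc b a is the vertical composite b . a (first a, then b);
  hc b a is the horizontal composite b * a (b on the left).\<close>

record ('o, 'a, 'c) twocat_data =
  Ob   :: "'o set"
  Ar   :: "'a set"
  Ce   :: "'c set"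
  src1 :: "'a \<Rightarrow> 'o"
  trg1 :: "'a \<Rightarrow> 'o"
  dom2 :: "'c \<Rightarrow> 'a"
  cod2 :: "'c \<Rightarrow> 'a"
  cmp  :: "'a \<Rightarrow> 'a \<Rightarrow> 'a"
  ide1 :: "'o \<Rightarrow> 'a"
  vc   :: "'c \<Rightarrow> 'c \<Rightarrow> 'c"
  hc   :: "'c \<Rightarrow> 'c \<Rightarrow> 'c"
  id2  :: "'a \<Rightarrow> 'c"

definition hom1 :: "('o,'a,'c,'z) twocat_data_scheme \<Rightarrow> 'o \<Rightarrow> 'o \<Rightarrow> 'a set" where
  "hom1 C x y = {f \<in> Ar C. src1 C f = x \<and> trg1 C f = y}"

definition hom2 :: "('o,'a,'c,'z) twocat_data_scheme \<Rightarrow> 'a \<Rightarrow> 'a \<Rightarrow> 'c set" where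
  "hom2 C f g = {\<xi> \<in> Ce C. dom2 C \<xi> = f \<and> cod2 C \<xi> = g}"

definition twocat :: "('o,'a,'c,'z) twocat_data_scheme \<Rightarrow> bool" where
  "twocat C \<longleftrightarrow>
    (\<forall>x\<in>Ob C. ide1 C x \<in> hom1 C x x) \<and>
    (\<forall>f\<in>Ar C. src1 C f \<in> Ob C \<and> trg1 C f \<in> Ob C) \<and>
    (\<forall>x\<in>Ob C. \<forall>y\<in>Ob C. \<forall>z\<in>Ob C. \<forall>f\<in>hom1 C x y. \<forall>g\<in>hom1 C y z.
        cmp C g f \<in> hom1 C x z) \<and>
    (\<forall>x\<in>Ob C. \<forall>y\<in>Ob C. \<forall>z\<in>Ob C. \<forall>w\<in>Ob C.
       \<forall>f\<in>hom1 C x y. \<forall>g\<in>hom1 C y z. \<forall>h\<in>hom1 C z w.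
        cmp C h (cmp C g f) = cmp C (cmp C h g) f) \<and>
    (\<forall>f\<in>Ar C. cmp C (ide1 C (trg1 C f)) f = f \<and> cmp C f (ide1 C (src1 C f)) = f) \<and>
    (\<forall>\<xi>\<in>Ce C. dom2 C \<xi> \<in> Ar C \<and> cod2 C \<xi> \<in> Ar C \<and>
        src1 C (dom2 C \<xi>) = src1 C (cod2 C \<xi>) \<and> trg1 C (dom2 C \<xi>) = trg1 C (cod2 C \<xi>)) \<and>
    (\<forall>f\<in>Ar C. id2 C f \<in> hom2 C f f) \<and>
    (\<forall>f g h \<xi> \<eta>. \<xi> \<in> hom2 C f g \<longrightarrow> \<eta> \<in> hom2 C g h \<longrightarrow> vc C \<eta> \<xi> \<in> hom2 C f h) \<and>
    (\<forall>f g h k \<xi> \<eta> \<theta>. \<xi> \<in> hom2 C f g \<longrightarrow> \<eta> \<in> hom2 C g h \<longrightarrow> \<theta> \<in> hom2 C h k \<longrightarrow>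
        vc C \<theta> (vc C \<eta> \<xi>) = vc C (vc C \<theta> \<eta>) \<xi>) \<and>
    (\<forall>\<xi>\<in>Ce C. vc C (id2 C (cod2 C \<xi>)) \<xi> = \<xi> \<and> vc C \<xi> (id2 C (dom2 C \<xi>)) = \<xi>) \<and>
    (\<forall>x\<in>Ob C. \<forall>y\<in>Ob C. \<forall>z\<in>Ob C. \<forall>f\<in>hom1 C x y. \<forall>f'\<in>hom1 C x y.
       \<forall>g\<in>hom1 C y z. \<forall>g'\<in>hom1 C y z. \<forall>\<xi>\<in>hom2 C f f'. \<forall>\<eta>\<in>hom2 C g g'.
        hc C \<eta> \<xi> \<in> hom2 C (cmp C g f) (cmp C g' f')) \<and>
    (\<forall>\<xi>\<in>Ce C. \<forall>\<eta>\<in>Ce C. \<forall>\<theta>\<in>Ce C.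
        src1 C (dom2 C \<eta>) = trg1 C (dom2 C \<xi>) \<longrightarrow> src1 C (dom2 C \<theta>) = trg1 C (dom2 C \<eta>) \<longrightarrow>
        hc C \<theta> (hc C \<eta> \<xi>) = hc C (hc C \<theta> \<eta>) \<xi>) \<and>
    (\<forall>\<xi>\<in>Ce C. hc C (id2 C (ide1 C (trg1 C (dom2 C \<xi>)))) \<xi> = \<xi> \<and>
        hc C \<xi> (id2 C (ide1 C (src1 C (dom2 C \<xi>)))) = \<xi>) \<and>
    (\<forall>f\<in>Ar C. \<forall>g\<in>Ar C. src1 C g = trg1 C f \<longrightarrow>
        id2 C (cmp C g f) = hc C (id2 C g) (id2 C f)) \<and>
    (\<forall>x\<in>Ob C. \<forall>y\<in>Ob C. \<forall>z\<in>Ob C. \<forall>f\<in>hom1 C x y. \<forall>f'\<in>hom1 C x y. \<forall>f''\<in>hom1 C x y.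
       \<forall>g\<in>hom1 C y z. \<forall>g'\<in>hom1 C y z. \<forall>g''\<in>hom1 C y z.
       \<forall>\<xi>\<in>hom2 C f f'. \<forall>\<xi>'\<in>hom2 C f' f''. \<forall>\<eta>\<in>hom2 C g g'. \<forall>\<eta>'\<in>hom2 C g' g''.
        hc C (vc C \<eta>' \<eta>) (vc C \<xi>' \<xi>) = vc C (hc C \<eta>' \<xi>') (hc C \<eta> \<xi>))"

definition co :: "('o,'a,'c,'z) twocat_data_scheme \<Rightarrow> ('o,'a,'c,'z) twocat_data_scheme" where
  "co C = C\<lparr>dom2 := cod2 C, cod2 := dom2 C, vc := (\<lambda>a b. vc C b a)\<rparr>"

text \<open>A functor given by object map F and morphism map G between categories with object
  sets X, Y and hom-sets HX, HY is an isomorphism iff it is bijective on objects and on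
  every hom-set. (All the comparison maps below are functorial by the 2-category axioms.)\<close>
definition cat_iso_by ::
  "'x set \<Rightarrow> ('x \<Rightarrow> 'x \<Rightarrow> 'm set) \<Rightarrow> 'y set \<Rightarrow> ('y \<Rightarrow> 'y \<Rightarrow> 'n set)
     \<Rightarrow> ('x \<Rightarrow> 'y) \<Rightarrow> ('m \<Rightarrow> 'n) \<Rightarrow> bool" where
  "cat_iso_by X HX Y HY F G \<longleftrightarrow>
     bij_betw F X Y \<and> (\<forall>a\<in>X. \<forall>b\<in>X. bij_betw G (HX a b) (HY (F a) (F b)))"

definition invertible2 :: "('o,'a,'c,'z) twocat_data_scheme \<Rightarrow> 'c \<Rightarrow> bool" where
  "invertible2 C \<xi> \<longleftrightarrow> \<xi> \<in> Ce C \<and>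
     (\<exists>\<theta>\<in>hom2 C (cod2 C \<xi>) (dom2 C \<xi>).
        vc C \<theta> \<xi> = id2 C (dom2 C \<xi>) \<and> vc C \<xi> \<theta> = id2 C (cod2 C \<xi>))"

definition equivalence1 :: "('o,'a,'c,'z) twocat_data_scheme \<Rightarrow> 'a \<Rightarrow> bool" where
  "equivalence1 C f \<longleftrightarrow> f \<in> Ar C \<and>
     (\<exists>g\<in>hom1 C (trg1 C f) (src1 C f).
        \<exists>\<eta>\<in>hom2 C (ide1 C (src1 C f)) (cmp C g f). \<exists>\<epsilon>\<in>hom2 C (cmp C f g) (ide1 C (trg1 C f)).
          invertible2 C \<eta> \<and> invertible2 C \<epsilon>)"

text \<open>adjunction C l r eta eps : l is left adjoint to r.\<close>
definition adjunction :: "('o,'a,'c,'z) twocat_data_scheme \<Rightarrow> 'a \<Rightarrow> 'a \<Rightarrow> 'c \<Rightarrow> 'c \<Rightarrow> bool" where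
  "adjunction C l r \<eta> \<epsilon> \<longleftrightarrow>
     l \<in> Ar C \<and> r \<in> hom1 C (trg1 C l) (src1 C l) \<and>
     \<eta> \<in> hom2 C (ide1 C (src1 C l)) (cmp C r l) \<and>
     \<epsilon> \<in> hom2 C (cmp C l r) (ide1 C (trg1 C l)) \<and>
     vc C (hc C \<epsilon> (id2 C l)) (hc C (id2 C l) \<eta>) = id2 C l \<and>
     vc C (hc C (id2 C r) \<epsilon>) (hc C \<eta> (id2 C r)) = id2 C r"

definition has_left_adjoint :: "('o,'a,'c,'z) twocat_data_scheme \<Rightarrow> 'a \<Rightarrow> bool" where
  "has_left_adjoint C p \<longleftrightarrow> (\<exists>l \<eta> \<epsilon>. adjunction C l p \<eta> \<epsilon>)"

definition has_right_adjoint :: "('o,'a,'c,'z) twocat_data_scheme \<Rightarrow> 'a \<Rightarrow> bool" where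
  "has_right_adjoint C p \<longleftrightarrow> (\<exists>r \<eta> \<epsilon>. adjunction C p r \<eta> \<epsilon>)"

definition opcomma ::
  "('o,'a,'c,'z) twocat_data_scheme \<Rightarrow> 'a \<Rightarrow> 'o \<Rightarrow> 'a \<Rightarrow> 'a \<Rightarrow> 'c \<Rightarrow> bool" where
  "opcomma C p P d0 d1 \<alpha> \<longleftrightarrow>
     p \<in> Ar C \<and> P \<in> Ob C \<and> d0 \<in> hom1 C (trg1 C p) P \<and> d1 \<in> hom1 C (trg1 C p) P \<and>
     \<alpha> \<in> hom2 C (cmp C d1 p) (cmp C d0 p) \<and>
     (\<forall>y\<in>Ob C.
        cat_iso_by (hom1 C P y) (hom2 C)
          {(h0, h1, \<beta>). h0 \<in> hom1 C (trg1 C p) y \<and> h1 \<in> hom1 C (trg1 C p) y \<and>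
                        \<beta> \<in> hom2 C (cmp C h1 p) (cmp C h0 p)}
          (\<lambda>(h0, h1, \<beta>) (h0', h1', \<beta>').
             {(\<xi>0, \<xi>1). \<xi>0 \<in> hom2 C h0 h0' \<and> \<xi>1 \<in> hom2 C h1 h1' \<and>
                vc C (hc C \<xi>0 (id2 C p)) \<beta> = vc C \<beta>' (hc C \<xi>1 (id2 C p))})
          (\<lambda>h. (cmp C h d0, cmp C h d1, hc C (id2 C h) \<alpha>))
          (\<lambda>\<xi>. (hc C \<xi> (id2 C d0), hc C \<xi> (id2 C d1))))"

definition pushout2 ::
  "('o,'a,'c,'z) twocat_data_scheme \<Rightarrow> 'a \<Rightarrow> 'a \<Rightarrow> 'o \<Rightarrow> 'a \<Rightarrow> 'a \<Rightarrow> bool" where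
  "pushout2 C f0 f1 P q0 q1 \<longleftrightarrow>
     f0 \<in> Ar C \<and> f1 \<in> Ar C \<and> src1 C f0 = src1 C f1 \<and> P \<in> Ob C \<and>
     q0 \<in> hom1 C (trg1 C f0) P \<and> q1 \<in> hom1 C (trg1 C f1) P \<and> cmp C q0 f0 = cmp C q1 f1 \<and>
     (\<forall>y\<in>Ob C.
        cat_iso_by (hom1 C P y) (hom2 C)
          {(k0, k1). k0 \<in> hom1 C (trg1 C f0) y \<and> k1 \<in> hom1 C (trg1 C f1) y \<and>
                     cmp C k0 f0 = cmp C k1 f1}
          (\<lambda>(k0, k1) (k0', k1').
             {(\<xi>0, \<xi>1). \<xi>0 \<in> hom2 C k0 k0' \<and> \<xi>1 \<in> hom2 C k1 k1' \<and>
                hc C \<xi>0 (id2 C f0) = hc C \<xi>1 (id2 C f1)})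
          (\<lambda>k. (cmp C k q0, cmp C k q1))
          (\<lambda>\<xi>. (hc C \<xi> (id2 C q0), hc C \<xi> (id2 C q1))))"

text \<open>The two-dimensional cokernel diagram of p: opcomma object P with d0, d1, alpha;
  two-dimensional pushout Q of (d0, d1) with D0, D2 (D2 d0 = D0 d1); and the induced
  1-cells D1 : P -> Q and s0 : P -> b (uniquely determined by the stated equations).\<close>
definition cokernel_diagram ::
  "('o,'a,'c,'z) twocat_data_scheme \<Rightarrow> 'a \<Rightarrow> 'o \<Rightarrow> 'a \<Rightarrow> 'a \<Rightarrow> 'c \<Rightarrow>
     'o \<Rightarrow> 'a \<Rightarrow> 'a \<Rightarrow> 'a \<Rightarrow> 'a \<Rightarrow> bool" where
  "cokernel_diagram C p P d0 d1 \<alpha> Q D0 D1 D2 s0 \<longleftrightarrow>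
     opcomma C p P d0 d1 \<alpha> \<and>
     pushout2 C d0 d1 Q D2 D0 \<and>
     D1 \<in> hom1 C P Q \<and> cmp C D1 d1 = cmp C D2 d1 \<and> cmp C D1 d0 = cmp C D0 d0 \<and>
     hc C (id2 C D1) \<alpha> = vc C (hc C (id2 C D0) \<alpha>) (hc C (id2 C D2) \<alpha>) \<and>
     s0 \<in> hom1 C P (trg1 C p) \<and> cmp C s0 d0 = ide1 C (trg1 C p) \<and>
     cmp C s0 d1 = ide1 C (trg1 C p) \<and> hc C (id2 C s0) \<alpha> = id2 C p"

definition has_cokernel_diagram :: "('o,'a,'c,'z) twocat_data_scheme \<Rightarrow> 'a \<Rightarrow> bool" where
  "has_cokernel_diagram C p \<longleftrightarrow>
     (\<exists>P d0 d1 \<alpha> Q D0 D1 D2 s0. cokernel_diagram C p P d0 d1 \<alpha> Q D0 D1 D2 s0)"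

definition lax_descent_object ::
  "('o,'a,'c,'z) twocat_data_scheme \<Rightarrow> 'a \<Rightarrow> 'a \<Rightarrow> 'a \<Rightarrow> 'a \<Rightarrow> 'a \<Rightarrow> 'a \<Rightarrow> 'a \<Rightarrow>
     'o \<Rightarrow> 'a \<Rightarrow> 'c \<Rightarrow> bool" where
  "lax_descent_object C p d0 d1 D0 D1 D2 s0 L d \<Psi> \<longleftrightarrow>
     L \<in> Ob C \<and> d \<in> hom1 C L (trg1 C p) \<and> \<Psi> \<in> hom2 C (cmp C d1 d) (cmp C d0 d) \<and>
     (\<forall>y\<in>Ob C.
        cat_iso_by (hom1 C y L) (hom2 C)
          {(h, \<beta>). h \<in> hom1 C y (trg1 C p) \<and> \<beta> \<in> hom2 C (cmp C d1 h) (cmp C d0 h) \<and>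
                   vc C (hc C (id2 C D0) \<beta>) (hc C (id2 C D2) \<beta>) = hc C (id2 C D1) \<beta> \<and>
                   hc C (id2 C s0) \<beta> = id2 C h}
          (\<lambda>(h, \<beta>) (h', \<beta>').
             {\<xi>. \<xi> \<in> hom2 C h h' \<and>
                 vc C \<beta>' (hc C (id2 C d1) \<xi>) = vc C (hc C (id2 C d0) \<xi>) \<beta>})
          (\<lambda>g. (cmp C d g, hc C \<Psi> (id2 C g)))
          (\<lambda>\<xi>. hc C (id2 C d) \<xi>))"

definition effective_faithful :: "('o,'a,'c,'z) twocat_data_scheme \<Rightarrow> 'a \<Rightarrow> bool" where
  "effective_faithful C p \<longleftrightarrow>
     (\<exists>P d0 d1 \<alpha> Q D0 D1 D2 s0 L d \<Psi> pH.
        cokernel_diagram C p P d0 d1 \<alpha> Q D0 D1 D2 s0 \<and>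
        lax_descent_object C p d0 d1 D0 D1 D2 s0 L d \<Psi> \<and>
        pH \<in> hom1 C (src1 C p) L \<and> cmp C d pH = p \<and> hc C \<Psi> (id2 C pH) = \<alpha> \<and>
        equivalence1 C pH)"

definition right_kan ::
  "('o,'a,'c,'z) twocat_data_scheme \<Rightarrow> 'a \<Rightarrow> 'a \<Rightarrow> 'a \<Rightarrow> 'c \<Rightarrow> bool" where
  "right_kan C f g r \<gamma> \<longleftrightarrow>
     f \<in> Ar C \<and> g \<in> Ar C \<and> src1 C f = src1 C g \<and>
     r \<in> hom1 C (trg1 C g) (trg1 C f) \<and> \<gamma> \<in> hom2 C (cmp C r g) f \<and>
     (\<forall>k\<in>hom1 C (trg1 C g) (trg1 C f).
        bij_betw (\<lambda>\<beta>. vc C \<gamma> (hc C \<beta> (id2 C g))) (hom2 C k r) (hom2 C (cmp C k g) f))"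

definition codensity_monad ::
  "('o,'a,'c,'z) twocat_data_scheme \<Rightarrow> 'a \<Rightarrow> 'a \<Rightarrow> 'c \<Rightarrow> 'c \<Rightarrow> 'c \<Rightarrow> bool" where
  "codensity_monad C p t \<gamma> m \<eta> \<longleftrightarrow>
     right_kan C p p t \<gamma> \<and>
     m \<in> hom2 C (cmp C t t) t \<and>
     vc C \<gamma> (hc C m (id2 C p)) = vc C \<gamma> (hc C (id2 C t) \<gamma>) \<and>
     \<eta> \<in> hom2 C (ide1 C (trg1 C p)) t \<and>
     vc C \<gamma> (hc C \<eta> (id2 C p)) = id2 C p"

definition eilenberg_moore ::
  "('o,'a,'c,'z) twocat_data_scheme \<Rightarrow> 'o \<Rightarrow> 'a \<Rightarrow> 'c \<Rightarrow> 'c \<Rightarrow> 'o \<Rightarrow> 'a \<Rightarrow> 'c \<Rightarrow> bool" where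
  "eilenberg_moore C b t m \<eta> bT u \<mu> \<longleftrightarrow>
     bT \<in> Ob C \<and> u \<in> hom1 C bT b \<and> \<mu> \<in> hom2 C (cmp C t u) u \<and>
     (\<forall>y\<in>Ob C.
        cat_iso_by (hom1 C y bT) (hom2 C)
          {(h, \<beta>). h \<in> hom1 C y b \<and> \<beta> \<in> hom2 C (cmp C t h) h \<and>
                   vc C \<beta> (hc C (id2 C t) \<beta>) = vc C \<beta> (hc C m (id2 C h)) \<and>
                   vc C \<beta> (hc C \<eta> (id2 C h)) = id2 C h}
          (\<lambda>(h, \<beta>) (h', \<beta>').
             {\<xi>. \<xi> \<in> hom2 C h h' \<and> vc C \<xi> \<beta> = vc C \<beta>' (hc C (id2 C t) \<xi>)})
          (\<lambda>g. (cmp C u g, hc C \<mu> (id2 C g)))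
          (\<lambda>\<xi>. hc C (id2 C u) \<xi>))"

definition monadic :: "('o,'a,'c,'z) twocat_data_scheme \<Rightarrow> 'a \<Rightarrow> bool" where
  "monadic C p \<longleftrightarrow> p \<in> Ar C \<and>
     (\<exists>t \<gamma> m \<eta> bT u \<mu> pT.
        codensity_monad C p t \<gamma> m \<eta> \<and>
        eilenberg_moore C (trg1 C p) t m \<eta> bT u \<mu> \<and>
        pT \<in> hom1 C (src1 C p) bT \<and> cmp C u pT = p \<and> hc C \<mu> (id2 C pT) = \<gamma> \<and>
        equivalence1 C pT)"

definition comonadic :: "('o,'a,'c,'z) twocat_data_scheme \<Rightarrow> 'a \<Rightarrow> bool" where
  "comonadic C p \<longleftrightarrow> monadic (co C) p"

end

theory Submission
  imports Defs
begin

locale tc =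
  fixes C :: "('o,'a,'c,'z) twocat_data_scheme" (structure)
  assumes tc: "twocat C"
begin

abbreviation cm (infixr "\<odot>" 55) where "g \<odot> f \<equiv> cmp C g f"
abbreviation vv (infixr "\<bullet>" 55) where "\<eta> \<bullet> \<xi> \<equiv> vc C \<eta> \<xi>"
abbreviation hh (infixr "\<star>" 56) where "\<eta> \<star> \<xi> \<equiv> hc C \<eta> \<xi>"
abbreviation II ("I") where "I f \<equiv> id2 C f"
abbreviation "sr f \<equiv> src1 C f"
abbreviation "tg f \<equiv> trg1 C f"
abbreviation "dm \<xi> \<equiv> dom2 C \<xi>"
abbreviation "cd \<xi> \<equiv> cod2 C \<xi>"
abbreviation "Arr \<equiv> Ar C"
abbreviation "Obs \<equiv> Ob C"
abbreviation "Cel \<equiv> Ce C"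
abbreviation "ii x \<equiv> ide1 C x"

lemma hom1_iff[simp]: "f \<in> hom1 C x y \<longleftrightarrow> f \<in> Arr \<and> sr f = x \<and> tg f = y"
  by (simp add: hom1_def)
lemma hom2_iff[simp]: "\<xi> \<in> hom2 C f g \<longleftrightarrow> \<xi> \<in> Cel \<and> dm \<xi> = f \<and> cd \<xi> = g"
  by (simp add: hom2_def)

lemma ar_st[simp]: "f \<in> Arr \<Longrightarrow> sr f \<in> Obs" "f \<in> Arr \<Longrightarrow> tg f \<in> Obs"
  using tc unfolding twocat_def by auto

lemma ide_ar[simp]: "x \<in> Obs \<Longrightarrow> ii x \<in> Arr" "x \<in> Obs \<Longrightarrow> sr (ii x) = x" "x \<in> Obs \<Longrightarrow> tg (ii x) = x"
  using tc unfolding twocat_def by auto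

lemma cmp_ar[simp]: assumes "f \<in> Arr" "g \<in> Arr" "sr g = tg f"
  shows "g \<odot> f \<in> Arr" "sr (g \<odot> f) = sr f" "tg (g \<odot> f) = tg g"
proof -
  have "\<forall>x\<in>Obs. \<forall>y\<in>Obs. \<forall>z\<in>Obs. \<forall>f\<in>hom1 C x y. \<forall>g\<in>hom1 C y z. g \<odot> f \<in> hom1 C x z"
    using tc unfolding twocat_def by (elim conjE) assumption
  then have "g \<odot> f \<in> hom1 C (sr f) (tg g)" using assms by (simp add: Ball_def) (metis ar_st)
  then show "g \<odot> f \<in> Arr" "sr (g \<odot> f) = sr f" "tg (g \<odot> f) = tg g" by auto
qed

lemma cmp_assoc: assumes "f \<in> Arr" "g \<in> Arr" "h \<in> Arr" "sr g = tg f" "sr h = tg g"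
  shows "h \<odot> (g \<odot> f) = (h \<odot> g) \<odot> f"
proof -
  have "\<forall>x\<in>Obs. \<forall>y\<in>Obs. \<forall>z\<in>Obs. \<forall>w\<in>Obs.
       \<forall>f\<in>hom1 C x y. \<forall>g\<in>hom1 C y z. \<forall>h\<in>hom1 C z w.
        cmp C h (cmp C g f) = cmp C (cmp C h g) f" using tc unfolding twocat_def by (elim conjE) assumption
  then show ?thesis using assms by (simp add: Ball_def) (metis ar_st)
qed

lemma cmp_assoc_r[simp]: assumes "f \<in> Arr" "g \<in> Arr" "h \<in> Arr" "sr g = tg f" "sr h = tg g"
  shows "(h \<odot> g) \<odot> f = h \<odot> (g \<odot> f)"
  using cmp_assoc[OF assms] by simp

lemma cmp_ide[simp]: "f \<in> Arr \<Longrightarrow> ii (tg f) \<odot> f = f" "f \<in> Arr \<Longrightarrow> f \<odot> ii (sr f) = f"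
  using tc unfolding twocat_def by auto

lemma cmp_ide'[simp]: "f \<in> Arr \<Longrightarrow> tg f = x \<Longrightarrow> ii x \<odot> f = f" "f \<in> Arr \<Longrightarrow> sr f = x \<Longrightarrow> f \<odot> ii x = f"
  by auto

lemma ce_dc[simp]: "\<xi> \<in> Cel \<Longrightarrow> dm \<xi> \<in> Arr" "\<xi> \<in> Cel \<Longrightarrow> cd \<xi> \<in> Arr"
  "\<xi> \<in> Cel \<Longrightarrow> sr (cd \<xi>) = sr (dm \<xi>)" "\<xi> \<in> Cel \<Longrightarrow> tg (cd \<xi>) = tg (dm \<xi>)"
  using tc unfolding twocat_def by auto

lemma id2_ce[simp]: "f \<in> Arr \<Longrightarrow> I f \<in> Cel" "f \<in> Arr \<Longrightarrow> dm (I f) = f" "f \<in> Arr \<Longrightarrow> cd (I f) = f"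
  using tc unfolding twocat_def by auto

lemma vc_ce[simp]: assumes "\<xi> \<in> Cel" "\<eta> \<in> Cel" "cd \<xi> = dm \<eta>"
  shows "\<eta> \<bullet> \<xi> \<in> Cel" "dm (\<eta> \<bullet> \<xi>) = dm \<xi>" "cd (\<eta> \<bullet> \<xi>) = cd \<eta>"
proof -
  have "\<forall>f g h \<xi> \<eta>. \<xi> \<in> hom2 C f g \<longrightarrow> \<eta> \<in> hom2 C g h \<longrightarrow> vc C \<eta> \<xi> \<in> hom2 C f h"
    using tc unfolding twocat_def by (elim conjE) assumption
  then have "\<eta> \<bullet> \<xi> \<in> hom2 C (dm \<xi>) (cd \<eta>)" using assms by (simp add: Ball_def) 
  then show "\<eta> \<bullet> \<xi> \<in> Cel" "dm (\<eta> \<bullet> \<xi>) = dm \<xi>" "cd (\<eta> \<bullet> \<xi>) = cd \<eta>" by auto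
qed

lemma vc_assoc: assumes "\<xi> \<in> Cel" "\<eta> \<in> Cel" "\<theta> \<in> Cel" "cd \<xi> = dm \<eta>" "cd \<eta> = dm \<theta>"
  shows "\<theta> \<bullet> (\<eta> \<bullet> \<xi>) = (\<theta> \<bullet> \<eta>) \<bullet> \<xi>"
proof -
  have "\<forall>f g h k \<xi> \<eta> \<theta>. \<xi> \<in> hom2 C f g \<longrightarrow> \<eta> \<in> hom2 C g h \<longrightarrow> \<theta> \<in> hom2 C h k \<longrightarrow>
        vc C \<theta> (vc C \<eta> \<xi>) = vc C (vc C \<theta> \<eta>) \<xi>" using tc unfolding twocat_def by (elim conjE) assumption
  then show ?thesis using assms by (simp add: Ball_def)
qed

lemma vc_assoc_r[simp]: assumes "\<xi> \<in> Cel" "\<eta> \<in> Cel" "\<theta> \<in> Cel" "cd \<xi> = dm \<eta>" "cd \<eta> = dm \<theta>"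
  shows "(\<theta> \<bullet> \<eta>) \<bullet> \<xi> = \<theta> \<bullet> (\<eta> \<bullet> \<xi>)"
  using vc_assoc[OF assms] by simp

lemma vc_id[simp]: "\<xi> \<in> Cel \<Longrightarrow> I (cd \<xi>) \<bullet> \<xi> = \<xi>" "\<xi> \<in> Cel \<Longrightarrow> \<xi> \<bullet> I (dm \<xi>) = \<xi>"
  using tc unfolding twocat_def by auto

lemma vc_id'[simp]: "\<xi> \<in> Cel \<Longrightarrow> cd \<xi> = f \<Longrightarrow> I f \<bullet> \<xi> = \<xi>" "\<xi> \<in> Cel \<Longrightarrow> dm \<xi> = f \<Longrightarrow> \<xi> \<bullet> I f = \<xi>"
  by auto

lemma hc_ce[simp]: assumes "\<xi> \<in> Cel" "\<eta> \<in> Cel" "sr (dm \<eta>) = tg (dm \<xi>)"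
  shows "\<eta> \<star> \<xi> \<in> Cel" "dm (\<eta> \<star> \<xi>) = dm \<eta> \<odot> dm \<xi>" "cd (\<eta> \<star> \<xi>) = cd \<eta> \<odot> cd \<xi>"
proof -
  have "\<forall>x\<in>Obs. \<forall>y\<in>Obs. \<forall>z\<in>Obs. \<forall>f\<in>hom1 C x y. \<forall>f'\<in>hom1 C x y.
       \<forall>g\<in>hom1 C y z. \<forall>g'\<in>hom1 C y z. \<forall>\<xi>\<in>hom2 C f f'. \<forall>\<eta>\<in>hom2 C g g'.
        hc C \<eta> \<xi> \<in> hom2 C (cmp C g f) (cmp C g' f')" using tc unfolding twocat_def by (elim conjE) assumption
  then have "\<eta> \<star> \<xi> \<in> hom2 C (dm \<eta> \<odot> dm \<xi>) (cd \<eta> \<odot> cd \<xi>)" using assms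
    apply - apply (drule bspec[of _ _ "sr (dm \<xi>)"], simp)
    apply (drule bspec[of _ _ "tg (dm \<xi>)"], simp)
    apply (drule bspec[of _ _ "tg (dm \<eta>)"], simp)
    apply (drule bspec[of _ _ "dm \<xi>"], simp)
    apply (drule bspec[of _ _ "cd \<xi>"], simp)
    apply (drule bspec[of _ _ "dm \<eta>"], simp)
    apply (drule bspec[of _ _ "cd \<eta>"], simp)
    by simp
  then show "\<eta> \<star> \<xi> \<in> Cel" "dm (\<eta> \<star> \<xi>) = dm \<eta> \<odot> dm \<xi>" "cd (\<eta> \<star> \<xi>) = cd \<eta> \<odot> cd \<xi>" by auto
qed

lemma hc_assoc: assumes "\<xi> \<in> Cel" "\<eta> \<in> Cel" "\<theta> \<in> Cel" "sr (dm \<eta>) = tg (dm \<xi>)" "sr (dm \<theta>) = tg (dm \<eta>)"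
  shows "\<theta> \<star> (\<eta> \<star> \<xi>) = (\<theta> \<star> \<eta>) \<star> \<xi>"
  using tc assms unfolding twocat_def by blast

lemma hc_id_ide[simp]: "\<xi> \<in> Cel \<Longrightarrow> I (ii (tg (dm \<xi>))) \<star> \<xi> = \<xi>" "\<xi> \<in> Cel \<Longrightarrow> \<xi> \<star> I (ii (sr (dm \<xi>))) = \<xi>"
  using tc unfolding twocat_def by auto

lemma hc_id_ide'[simp]: "\<xi> \<in> Cel \<Longrightarrow> tg (dm \<xi>) = x \<Longrightarrow> I (ii x) \<star> \<xi> = \<xi>"
   "\<xi> \<in> Cel \<Longrightarrow> sr (dm \<xi>) = x \<Longrightarrow> \<xi> \<star> I (ii x) = \<xi>"
  by auto

lemma id2_cmp: "f \<in> Arr \<Longrightarrow> g \<in> Arr \<Longrightarrow> sr g = tg f \<Longrightarrow> I (g \<odot> f) = I g \<star> I f"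
  using tc unfolding twocat_def by auto

lemma hc_ids[simp]: "f \<in> Arr \<Longrightarrow> g \<in> Arr \<Longrightarrow> sr g = tg f \<Longrightarrow> I g \<star> I f = I (g \<odot> f)"
  using id2_cmp by simp

lemma interchange: assumes "\<xi> \<in> Cel" "\<xi>' \<in> Cel" "\<eta> \<in> Cel" "\<eta>' \<in> Cel" "cd \<xi> = dm \<xi>'" "cd \<eta> = dm \<eta>'"
   "sr (dm \<eta>) = tg (dm \<xi>)"
  shows "(\<eta>' \<bullet> \<eta>) \<star> (\<xi>' \<bullet> \<xi>) = (\<eta>' \<star> \<xi>') \<bullet> (\<eta> \<star> \<xi>)"
proof -
  have "\<forall>x\<in>Obs. \<forall>y\<in>Obs. \<forall>z\<in>Obs. \<forall>f\<in>hom1 C x y. \<forall>f'\<in>hom1 C x y. \<forall>f''\<in>hom1 C x y.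
       \<forall>g\<in>hom1 C y z. \<forall>g'\<in>hom1 C y z. \<forall>g''\<in>hom1 C y z.
       \<forall>\<xi>\<in>hom2 C f f'. \<forall>\<xi>'\<in>hom2 C f' f''. \<forall>\<eta>\<in>hom2 C g g'. \<forall>\<eta>'\<in>hom2 C g' g''.
        hc C (vc C \<eta>' \<eta>) (vc C \<xi>' \<xi>) = vc C (hc C \<eta>' \<xi>') (hc C \<eta> \<xi>)"
    using tc unfolding twocat_def by (elim conjE) assumption
  moreover have "sr (dm \<xi>') = sr (dm \<xi>)" "tg (dm \<xi>') = tg (dm \<xi>)" "sr (dm \<eta>') = sr (dm \<eta>)" "tg (dm \<eta>') = tg (dm \<eta>)"
    using assms ce_dc by metis+
  ultimately show ?thesis using assms
    apply - apply (drule bspec[of _ _ "sr (dm \<xi>)"], simp)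
    apply (drule bspec[of _ _ "tg (dm \<xi>)"], simp)
    apply (drule bspec[of _ _ "tg (dm \<eta>)"], simp)
    apply (drule bspec[of _ _ "dm \<xi>"], simp)
    apply (drule bspec[of _ _ "cd \<xi>"], simp)
    apply (drule bspec[of _ _ "cd \<xi>'"], simp)
    apply (drule bspec[of _ _ "dm \<eta>"], simp)
    apply (drule bspec[of _ _ "cd \<eta>"], simp)
    apply (drule bspec[of _ _ "cd \<eta>'"], simp)
    by simp
qed


lemma hc_assoc_l: assumes "\<xi> \<in> Cel" "\<eta> \<in> Cel" "\<theta> \<in> Cel" "sr (dm \<eta>) = tg (dm \<xi>)" "sr (dm \<theta>) = tg (dm \<eta>)"
  shows "\<theta> \<star> (\<eta> \<star> \<xi>) = (\<theta> \<star> \<eta>) \<star> \<xi>"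
  using hc_assoc[OF assms] .

lemma whisk_merge_r: assumes "X \<in> Cel" "f \<in> Arr" "g \<in> Arr" "sr f = tg g" "sr (dm X) = tg f"
  shows "(X \<star> I f) \<star> I g = X \<star> I (f \<odot> g)"
  using assms hc_assoc[of "I g" "I f" X] by simp

lemma whisk_vc_l: assumes "\<xi> \<in> Cel" "\<eta> \<in> Cel" "cd \<xi> = dm \<eta>" "g \<in> Arr" "sr g = tg (dm \<xi>)"
  shows "I g \<star> (\<eta> \<bullet> \<xi>) = (I g \<star> \<eta>) \<bullet> (I g \<star> \<xi>)"
proof -
  have "I g \<star> (\<eta> \<bullet> \<xi>) = (I g \<bullet> I g) \<star> (\<eta> \<bullet> \<xi>)" using assms by simp
  also have "\<dots> = (I g \<star> \<eta>) \<bullet> (I g \<star> \<xi>)" using assms by (intro interchange) auto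
  finally show ?thesis .
qed

lemma whisk_vc_r: assumes "\<xi> \<in> Cel" "\<eta> \<in> Cel" "cd \<xi> = dm \<eta>" "f \<in> Arr" "tg f = sr (dm \<xi>)"
  shows "(\<eta> \<bullet> \<xi>) \<star> I f = (\<eta> \<star> I f) \<bullet> (\<xi> \<star> I f)"
proof -
  have "(\<eta> \<bullet> \<xi>) \<star> I f = (\<eta> \<bullet> \<xi>) \<star> (I f \<bullet> I f)" using assms by simp
  also have "\<dots> = (\<eta> \<star> I f) \<bullet> (\<xi> \<star> I f)" using assms by (intro interchange) auto
  finally show ?thesis .
qed

lemma hc_split1: assumes "\<xi> \<in> Cel" "\<eta> \<in> Cel" "sr (dm \<eta>) = tg (dm \<xi>)"
  shows "\<eta> \<star> \<xi> = (\<eta> \<star> I (cd \<xi>)) \<bullet> (I (dm \<eta>) \<star> \<xi>)"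
proof -
  have "\<eta> \<star> \<xi> = (\<eta> \<bullet> I (dm \<eta>)) \<star> (I (cd \<xi>) \<bullet> \<xi>)" using assms by simp
  also have "\<dots> = (\<eta> \<star> I (cd \<xi>)) \<bullet> (I (dm \<eta>) \<star> \<xi>)" using assms by (intro interchange) auto
  finally show ?thesis .
qed

lemma hc_split2: assumes "\<xi> \<in> Cel" "\<eta> \<in> Cel" "sr (dm \<eta>) = tg (dm \<xi>)"
  shows "\<eta> \<star> \<xi> = (I (cd \<eta>) \<star> \<xi>) \<bullet> (\<eta> \<star> I (dm \<xi>))"
proof -
  have "\<eta> \<star> \<xi> = (I (cd \<eta>) \<bullet> \<eta>) \<star> (\<xi> \<bullet> I (dm \<xi>))" using assms by simp
  also have "\<dots> = (I (cd \<eta>) \<star> \<xi>) \<bullet> (\<eta> \<star> I (dm \<xi>))" using assms by (intro interchange) auto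
  finally show ?thesis .
qed

lemma swap: assumes "\<xi> \<in> Cel" "\<eta> \<in> Cel" "sr (dm \<eta>) = tg (dm \<xi>)"
  shows "(\<eta> \<star> I (cd \<xi>)) \<bullet> (I (dm \<eta>) \<star> \<xi>) = (I (cd \<eta>) \<star> \<xi>) \<bullet> (\<eta> \<star> I (dm \<xi>))"
  using hc_split1[OF assms] hc_split2[OF assms] by simp

lemma swap_ctx: assumes "\<xi> \<in> Cel" "\<eta> \<in> Cel" "sr (dm \<eta>) = tg (dm \<xi>)" "Z \<in> Cel" "cd Z = dm \<eta> \<odot> dm \<xi>"
  shows "(\<eta> \<star> I (cd \<xi>)) \<bullet> (I (dm \<eta>) \<star> \<xi>) \<bullet> Z = (I (cd \<eta>) \<star> \<xi>) \<bullet> (\<eta> \<star> I (dm \<xi>)) \<bullet> Z"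
proof -
  have "(\<eta> \<star> I (cd \<xi>)) \<bullet> (I (dm \<eta>) \<star> \<xi>) \<bullet> Z = ((\<eta> \<star> I (cd \<xi>)) \<bullet> (I (dm \<eta>) \<star> \<xi>)) \<bullet> Z"
    using assms by simp
  also have "\<dots> = ((I (cd \<eta>) \<star> \<xi>) \<bullet> (\<eta> \<star> I (dm \<xi>))) \<bullet> Z" using swap[OF assms(1-3)] by simp
  also have "\<dots> = (I (cd \<eta>) \<star> \<xi>) \<bullet> (\<eta> \<star> I (dm \<xi>)) \<bullet> Z" using assms by simp
  finally show ?thesis .
qed


lemma cmp_ctx: assumes "X \<in> Arr" "a \<in> Arr" "b \<in> Arr" "c \<in> Arr" "d \<in> Arr" "sr b = tg a" "sr d = tg c" "tg X = sr a" "tg X = sr c"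
  "b \<odot> a = d \<odot> c" shows "b \<odot> a \<odot> X = d \<odot> c \<odot> X"
proof -
  have "b \<odot> a \<odot> X = (b \<odot> a) \<odot> X" using assms by (simp del: cmp_assoc_r add: cmp_assoc)
  also have "\<dots> = (d \<odot> c) \<odot> X" using assms(10) by simp
  also have "\<dots> = d \<odot> c \<odot> X" using assms by simp
  finally show ?thesis .
qed


definition WL where "WL g \<xi> = I g \<star> \<xi>"
definition WR where "WR \<xi> f = \<xi> \<star> I f"

lemma to_WL[simp]: "I g \<star> \<xi> = WL g \<xi>" by (simp add: WL_def)
lemma to_WR[simp]: "\<xi> \<star> I f = WR \<xi> f" by (simp add: WR_def)

lemma WL_ce[simp]: "g \<in> Arr \<Longrightarrow> \<xi> \<in> Cel \<Longrightarrow> sr g = tg (dm \<xi>) \<Longrightarrow> WL g \<xi> \<in> Cel"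
  "g \<in> Arr \<Longrightarrow> \<xi> \<in> Cel \<Longrightarrow> sr g = tg (dm \<xi>) \<Longrightarrow> dm (WL g \<xi>) = g \<odot> dm \<xi>"
  "g \<in> Arr \<Longrightarrow> \<xi> \<in> Cel \<Longrightarrow> sr g = tg (dm \<xi>) \<Longrightarrow> cd (WL g \<xi>) = g \<odot> cd \<xi>"
  unfolding WL_def by (simp_all del: to_WL)
lemma WR_ce[simp]: "f \<in> Arr \<Longrightarrow> \<xi> \<in> Cel \<Longrightarrow> sr (dm \<xi>) = tg f \<Longrightarrow> WR \<xi> f \<in> Cel"
  "f \<in> Arr \<Longrightarrow> \<xi> \<in> Cel \<Longrightarrow> sr (dm \<xi>) = tg f \<Longrightarrow> dm (WR \<xi> f) = dm \<xi> \<odot> f"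
  "f \<in> Arr \<Longrightarrow> \<xi> \<in> Cel \<Longrightarrow> sr (dm \<xi>) = tg f \<Longrightarrow> cd (WR \<xi> f) = cd \<xi> \<odot> f"
  unfolding WR_def by (simp_all del: to_WR)

lemma WL_id[simp]: "g \<in> Arr \<Longrightarrow> f \<in> Arr \<Longrightarrow> sr g = tg f \<Longrightarrow> WL g (I f) = I (g \<odot> f)"
  unfolding WL_def by (simp del: to_WL to_WR)
lemma WR_id[simp]: "g \<in> Arr \<Longrightarrow> f \<in> Arr \<Longrightarrow> sr g = tg f \<Longrightarrow> WR (I g) f = I (g \<odot> f)"
  unfolding WR_def by (simp del: to_WL to_WR)
lemma WL_ide[simp]: "\<xi> \<in> Cel \<Longrightarrow> tg (dm \<xi>) = x \<Longrightarrow> WL (ii x) \<xi> = \<xi>"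
  unfolding WL_def by (simp del: to_WL to_WR)
lemma WR_ide[simp]: "\<xi> \<in> Cel \<Longrightarrow> sr (dm \<xi>) = x \<Longrightarrow> WR \<xi> (ii x) = \<xi>"
  unfolding WR_def by (simp del: to_WL to_WR)

lemma WL_cmp[simp]: "g \<in> Arr \<Longrightarrow> f \<in> Arr \<Longrightarrow> \<xi> \<in> Cel \<Longrightarrow> sr g = tg f \<Longrightarrow> sr f = tg (dm \<xi>) \<Longrightarrow>
  WL (g \<odot> f) \<xi> = WL g (WL f \<xi>)"
  unfolding WL_def using hc_assoc[of \<xi> "I f" "I g"] by (simp del: to_WL to_WR)
lemma WR_cmp[simp]: "g \<in> Arr \<Longrightarrow> f \<in> Arr \<Longrightarrow> \<xi> \<in> Cel \<Longrightarrow> sr g = tg f \<Longrightarrow> sr (dm \<xi>) = tg g \<Longrightarrow>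
  WR \<xi> (g \<odot> f) = WR (WR \<xi> g) f"
  unfolding WR_def using hc_assoc[of "I f" "I g" \<xi>] by (simp del: to_WL to_WR)
lemma WR_WL[simp]: "g \<in> Arr \<Longrightarrow> f \<in> Arr \<Longrightarrow> \<xi> \<in> Cel \<Longrightarrow> sr g = tg (dm \<xi>) \<Longrightarrow> sr (dm \<xi>) = tg f \<Longrightarrow>
  WR (WL g \<xi>) f = WL g (WR \<xi> f)"
  unfolding WR_def WL_def using hc_assoc[of "I f" \<xi> "I g"] by (simp del: to_WL to_WR)

lemma WL_vc[simp]: "\<xi> \<in> Cel \<Longrightarrow> \<eta> \<in> Cel \<Longrightarrow> cd \<xi> = dm \<eta> \<Longrightarrow> g \<in> Arr \<Longrightarrow> sr g = tg (dm \<xi>) \<Longrightarrow>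
  WL g (\<eta> \<bullet> \<xi>) = WL g \<eta> \<bullet> WL g \<xi>"
  unfolding WL_def using whisk_vc_l by (simp del: to_WL to_WR)
lemma WR_vc[simp]: "\<xi> \<in> Cel \<Longrightarrow> \<eta> \<in> Cel \<Longrightarrow> cd \<xi> = dm \<eta> \<Longrightarrow> f \<in> Arr \<Longrightarrow> tg f = sr (dm \<xi>) \<Longrightarrow>
  WR (\<eta> \<bullet> \<xi>) f = WR \<eta> f \<bullet> WR \<xi> f"
  unfolding WR_def using whisk_vc_r by (simp del: to_WL to_WR)

lemma nat_WLR: assumes "\<xi> \<in> Cel" "\<eta> \<in> Cel" "sr (dm \<eta>) = tg (dm \<xi>)"
  shows "WR \<eta> (cd \<xi>) \<bullet> WL (dm \<eta>) \<xi> = WL (cd \<eta>) \<xi> \<bullet> WR \<eta> (dm \<xi>)"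
  using swap[OF assms] unfolding WL_def WR_def by (simp del: to_WL to_WR)
lemma hc_WLR: assumes "\<xi> \<in> Cel" "\<eta> \<in> Cel" "sr (dm \<eta>) = tg (dm \<xi>)"
  shows "\<eta> \<star> \<xi> = WR \<eta> (cd \<xi>) \<bullet> WL (dm \<eta>) \<xi>" "\<eta> \<star> \<xi> = WL (cd \<eta>) \<xi> \<bullet> WR \<eta> (dm \<xi>)"
  using hc_split1[OF assms] hc_split2[OF assms] unfolding WL_def WR_def by (simp_all del: to_WL to_WR)

lemma nat_ctx: assumes "\<xi> \<in> Cel" "\<eta> \<in> Cel" "sr (dm \<eta>) = tg (dm \<xi>)" "Z \<in> Cel" "cd Z = dm \<eta> \<odot> dm \<xi>"
  shows "WR \<eta> (cd \<xi>) \<bullet> WL (dm \<eta>) \<xi> \<bullet> Z = WL (cd \<eta>) \<xi> \<bullet> WR \<eta> (dm \<xi>) \<bullet> Z"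
  using swap_ctx[OF assms] unfolding WL_def WR_def by (simp del: to_WL to_WR)

lemma vc_ctx: assumes "X \<in> Cel" "a \<in> Cel" "b \<in> Cel" "c \<in> Cel" "d \<in> Cel" "cd a = dm b" "cd c = dm d" "cd X = dm a" "cd X = dm c"
  "b \<bullet> a = d \<bullet> c" shows "b \<bullet> a \<bullet> X = d \<bullet> c \<bullet> X"
proof -
  have "b \<bullet> a \<bullet> X = (b \<bullet> a) \<bullet> X" using assms by (simp del: vc_assoc_r add: vc_assoc)
  also have "\<dots> = (d \<bullet> c) \<bullet> X" using assms(10) by simp
  also have "\<dots> = d \<bullet> c \<bullet> X" using assms by simp
  finally show ?thesis .
qed


lemma vc_pair_ctx: "\<beta> \<bullet> \<alpha> = \<gamma> \<Longrightarrow> \<alpha> \<in> Cel \<Longrightarrow> \<beta> \<in> Cel \<Longrightarrow> cd \<alpha> = dm \<beta> \<Longrightarrow> Z \<in> Cel \<Longrightarrow> cd Z = dm \<alpha> \<Longrightarrow>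
   \<beta> \<bullet> \<alpha> \<bullet> Z = \<gamma> \<bullet> Z"
  using vc_assoc[of Z \<alpha> \<beta>] by simp

lemma vc_triple_ctx: "\<delta> \<bullet> \<beta> \<bullet> \<alpha> = \<gamma> \<Longrightarrow> \<alpha> \<in> Cel \<Longrightarrow> \<beta> \<in> Cel \<Longrightarrow> \<delta> \<in> Cel \<Longrightarrow> cd \<alpha> = dm \<beta> \<Longrightarrow> cd \<beta> = dm \<delta> \<Longrightarrow>
   Z \<in> Cel \<Longrightarrow> cd Z = dm \<alpha> \<Longrightarrow> \<delta> \<bullet> \<beta> \<bullet> \<alpha> \<bullet> Z = \<gamma> \<bullet> Z"
  using vc_assoc[of Z \<alpha> \<beta>] vc_assoc[of "\<alpha> \<bullet> Z" \<beta> \<delta>] vc_assoc[of Z "\<alpha>" "\<delta> \<bullet> \<beta>"] by simp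

lemma WL_vc_rev: "\<xi> \<in> Cel \<Longrightarrow> \<eta> \<in> Cel \<Longrightarrow> cd \<xi> = dm \<eta> \<Longrightarrow> g \<in> Arr \<Longrightarrow> sr g = tg (dm \<xi>) \<Longrightarrow>
  WL g \<eta> \<bullet> WL g \<xi> = WL g (\<eta> \<bullet> \<xi>)" by simp
lemma WR_vc_rev: "\<xi> \<in> Cel \<Longrightarrow> \<eta> \<in> Cel \<Longrightarrow> cd \<xi> = dm \<eta> \<Longrightarrow> f \<in> Arr \<Longrightarrow> tg f = sr (dm \<xi>) \<Longrightarrow>
  WR \<eta> f \<bullet> WR \<xi> f = WR (\<eta> \<bullet> \<xi>) f" by simp


lemma WL_pair: "\<eta> \<bullet> \<xi> = \<zeta> \<Longrightarrow> \<xi> \<in> Cel \<Longrightarrow> \<eta> \<in> Cel \<Longrightarrow> cd \<xi> = dm \<eta> \<Longrightarrow> g \<in> Arr \<Longrightarrow> sr g = tg (dm \<xi>) \<Longrightarrow>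
  WL g \<eta> \<bullet> WL g \<xi> = WL g \<zeta>" using WL_vc by metis
lemma WR_pair: "\<eta> \<bullet> \<xi> = \<zeta> \<Longrightarrow> \<xi> \<in> Cel \<Longrightarrow> \<eta> \<in> Cel \<Longrightarrow> cd \<xi> = dm \<eta> \<Longrightarrow> f \<in> Arr \<Longrightarrow> tg f = sr (dm \<xi>) \<Longrightarrow>
  WR \<eta> f \<bullet> WR \<xi> f = WR \<zeta> f" using WR_vc by metis

end

lemma cat_iso_surj: "cat_iso_by X HX Y HY F G \<Longrightarrow> y \<in> Y \<Longrightarrow> \<exists>x\<in>X. F x = y"
  unfolding cat_iso_by_def bij_betw_def by auto
lemma cat_iso_inj: "cat_iso_by X HX Y HY F G \<Longrightarrow> x \<in> X \<Longrightarrow> x' \<in> X \<Longrightarrow> F x = F x' \<Longrightarrow> x = x'"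
  unfolding cat_iso_by_def bij_betw_def inj_on_def by auto
lemma cat_iso_map: "cat_iso_by X HX Y HY F G \<Longrightarrow> x \<in> X \<Longrightarrow> F x \<in> Y"
  unfolding cat_iso_by_def bij_betw_def by auto
lemma cat_iso_surj2: "cat_iso_by X HX Y HY F G \<Longrightarrow> a \<in> X \<Longrightarrow> b \<in> X \<Longrightarrow> \<eta> \<in> HY (F a) (F b) \<Longrightarrow> \<exists>\<xi>\<in>HX a b. G \<xi> = \<eta>"
  unfolding cat_iso_by_def bij_betw_def by (metis imageE)
lemma cat_iso_inj2: "cat_iso_by X HX Y HY F G \<Longrightarrow> a \<in> X \<Longrightarrow> b \<in> X \<Longrightarrow> \<xi> \<in> HX a b \<Longrightarrow> \<xi>' \<in> HX a b \<Longrightarrow> G \<xi> = G \<xi>' \<Longrightarrow> \<xi> = \<xi>'"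
  unfolding cat_iso_by_def bij_betw_def inj_on_def by metis

locale ckd = tc +
  fixes p P d0 d1 \<alpha> Q D0 D1 D2 s0
  assumes ck: "cokernel_diagram C p P d0 d1 \<alpha> Q D0 D1 D2 s0"
begin

abbreviation "bb \<equiv> tg p"
abbreviation "ee \<equiv> sr p"

lemma opc: "opcomma C p P d0 d1 \<alpha>" using ck unfolding cokernel_diagram_def by blast
lemma po: "pushout2 C d0 d1 Q D2 D0" using ck unfolding cokernel_diagram_def by blast

lemma basic[simp]: "p \<in> Arr" "P \<in> Obs" "d0 \<in> Arr" "d1 \<in> Arr" "sr d0 = bb" "sr d1 = bb" "tg d0 = P" "tg d1 = P"
  "\<alpha> \<in> Cel" "dm \<alpha> = d1 \<odot> p" "cd \<alpha> = d0 \<odot> p" "Q \<in> Obs" "D0 \<in> Arr" "D2 \<in> Arr" "sr D0 = P" "tg D0 = Q"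
  "sr D2 = P" "tg D2 = Q" "D1 \<in> Arr" "sr D1 = P" "tg D1 = Q" "s0 \<in> Arr" "sr s0 = P" "tg s0 = bb"
proof -
  have o: "p \<in> Ar C \<and> P \<in> Ob C \<and> d0 \<in> hom1 C (trg1 C p) P \<and> d1 \<in> hom1 C (trg1 C p) P \<and>
     \<alpha> \<in> hom2 C (cmp C d1 p) (cmp C d0 p)" using opc unfolding opcomma_def by (elim conjE) simp
  have q: "Q \<in> Ob C \<and> D2 \<in> hom1 C (trg1 C d0) Q \<and> D0 \<in> hom1 C (trg1 C d1) Q"
    using po unfolding pushout2_def by (elim conjE) simp
  have r: "D1 \<in> hom1 C P Q \<and> s0 \<in> hom1 C P (trg1 C p)" using ck unfolding cokernel_diagram_def by (elim conjE) simp
  show "p \<in> Arr" "P \<in> Obs" "d0 \<in> Arr" "d1 \<in> Arr" "sr d0 = bb" "sr d1 = bb" "tg d0 = P" "tg d1 = P"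
  "\<alpha> \<in> Cel" "dm \<alpha> = d1 \<odot> p" "cd \<alpha> = d0 \<odot> p" "Q \<in> Obs" "D0 \<in> Arr" "D2 \<in> Arr" "sr D0 = P" "tg D0 = Q"
  "sr D2 = P" "tg D2 = Q" "D1 \<in> Arr" "sr D1 = P" "tg D1 = Q" "s0 \<in> Arr" "sr s0 = P" "tg s0 = bb"
    using o q r by auto
qed

lemma basic2[simp]: "bb \<in> Obs" "ee \<in> Obs" by simp_all

lemma eqs: "D2 \<odot> d0 = D0 \<odot> d1" "D1 \<odot> d1 = D2 \<odot> d1" "D1 \<odot> d0 = D0 \<odot> d0"
  "I D1 \<star> \<alpha> = (I D0 \<star> \<alpha>) \<bullet> (I D2 \<star> \<alpha>)" "s0 \<odot> d0 = ii bb" "s0 \<odot> d1 = ii bb" "I s0 \<star> \<alpha> = I p"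
proof -
  have "cmp C D2 d0 = cmp C D0 d1" using po unfolding pushout2_def by (elim conjE) simp
  moreover have "cmp C D1 d1 = cmp C D2 d1 \<and> cmp C D1 d0 = cmp C D0 d0 \<and>
     hc C (id2 C D1) \<alpha> = vc C (hc C (id2 C D0) \<alpha>) (hc C (id2 C D2) \<alpha>) \<and>
     cmp C s0 d0 = ide1 C (trg1 C p) \<and>
     cmp C s0 d1 = ide1 C (trg1 C p) \<and> hc C (id2 C s0) \<alpha> = id2 C p"
    using ck unfolding cokernel_diagram_def by (elim conjE) simp
  ultimately show "D2 \<odot> d0 = D0 \<odot> d1" "D1 \<odot> d1 = D2 \<odot> d1" "D1 \<odot> d0 = D0 \<odot> d0"
  "I D1 \<star> \<alpha> = (I D0 \<star> \<alpha>) \<bullet> (I D2 \<star> \<alpha>)" "s0 \<odot> d0 = ii bb" "s0 \<odot> d1 = ii bb" "I s0 \<star> \<alpha> = I p"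
    by auto
qed

lemmas eqs_simp[simp] = eqs(2) eqs(3) eqs(5) eqs(6) eqs(7)

lemma e1[simp]: "X \<in> Arr \<Longrightarrow> tg X = bb \<Longrightarrow> D1 \<odot> d1 \<odot> X = D2 \<odot> d1 \<odot> X"
  using cmp_ctx[of X d1 D1 d1 D2] by simp
lemma e2[simp]: "X \<in> Arr \<Longrightarrow> tg X = bb \<Longrightarrow> D1 \<odot> d0 \<odot> X = D0 \<odot> d0 \<odot> X"
  using cmp_ctx[of X d0 D1 d0 D0] by simp
lemma e3[simp]: "X \<in> Arr \<Longrightarrow> tg X = bb \<Longrightarrow> s0 \<odot> d0 \<odot> X = X"
  using cmp_ctx[of X d0 s0 "ii bb" "ii bb"] by simp
lemma e4[simp]: "X \<in> Arr \<Longrightarrow> tg X = bb \<Longrightarrow> s0 \<odot> d1 \<odot> X = X"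
  using cmp_ctx[of X d1 s0 "ii bb" "ii bb"] by simp

lemma eq20[simp]: "D0 \<odot> d1 = D2 \<odot> d0" using eqs(1) by (rule sym)
lemma eq20_ctx[simp]: "X \<in> Arr \<Longrightarrow> tg X = bb \<Longrightarrow> D0 \<odot> d1 \<odot> X = D2 \<odot> d0 \<odot> X"
  using cmp_ctx[of X d1 D0 d0 D2] by simp

lemma opc_iso: "y \<in> Obs \<Longrightarrow> cat_iso_by (hom1 C P y) (hom2 C)
          {(h0, h1, \<beta>). h0 \<in> hom1 C (trg1 C p) y \<and> h1 \<in> hom1 C (trg1 C p) y \<and>
                        \<beta> \<in> hom2 C (cmp C h1 p) (cmp C h0 p)}
          (\<lambda>(h0, h1, \<beta>) (h0', h1', \<beta>').
             {(\<xi>0, \<xi>1). \<xi>0 \<in> hom2 C h0 h0' \<and> \<xi>1 \<in> hom2 C h1 h1' \<and>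
                vc C (hc C \<xi>0 (id2 C p)) \<beta> = vc C \<beta>' (hc C \<xi>1 (id2 C p))})
          (\<lambda>h. (cmp C h d0, cmp C h d1, hc C (id2 C h) \<alpha>))
          (\<lambda>\<xi>. (hc C \<xi> (id2 C d0), hc C \<xi> (id2 C d1)))"
  using opc unfolding opcomma_def by (elim conjE) (drule bspec, assumption)

lemma op_ex1: assumes "y \<in> Obs" "h0 \<in> Arr" "h1 \<in> Arr" "sr h0 = bb" "sr h1 = bb" "tg h0 = y" "tg h1 = y"
  "\<beta> \<in> Cel" "dm \<beta> = h1 \<odot> p" "cd \<beta> = h0 \<odot> p"
  shows "\<exists>h. h \<in> Arr \<and> sr h = P \<and> tg h = y \<and> h \<odot> d0 = h0 \<and> h \<odot> d1 = h1 \<and> I h \<star> \<alpha> = \<beta>"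
proof -
  note Z = cat_iso_surj[OF opc_iso[OF assms(1)], where y="(h0,h1,\<beta>)"]
  have "\<exists>h\<in>hom1 C P y. (h \<odot> d0, h \<odot> d1, I h \<star> \<alpha>) = (h0,h1,\<beta>)"
    apply (rule Z) apply (simp only: mem_Collect_eq case_prod_conv hom1_iff hom2_iff) by (intro conjI; rule assms)
  then obtain h where "h \<in> hom1 C P y" "(h \<odot> d0, h \<odot> d1, I h \<star> \<alpha>) = (h0,h1,\<beta>)" by (elim bexE)
  then show ?thesis by (intro exI[of _ h]) (simp only: hom1_iff prod.inject)
qed

lemma op_uniq1: assumes "h \<in> Arr" "sr h = P" "tg h = y" "h' \<in> Arr" "sr h' = P" "tg h' = y"
  "h \<odot> d0 = h' \<odot> d0" "h \<odot> d1 = h' \<odot> d1" "I h \<star> \<alpha> = I h' \<star> \<alpha>"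
  shows "h = h'"
proof -
  have y: "y \<in> Obs" using ar_st(2)[OF assms(1)] assms(3) by simp
  have "h \<in> hom1 C P y" "h' \<in> hom1 C P y" using assms by simp_all
  from cat_iso_inj[OF opc_iso[OF y] this] show ?thesis using assms by simp
qed

lemma op_ex2: assumes "h \<in> Arr" "sr h = P" "tg h = y" "h' \<in> Arr" "sr h' = P" "tg h' = y"
  "\<xi>0 \<in> Cel" "dm \<xi>0 = h \<odot> d0" "cd \<xi>0 = h' \<odot> d0" "\<xi>1 \<in> Cel" "dm \<xi>1 = h \<odot> d1" "cd \<xi>1 = h' \<odot> d1"
  "(\<xi>0 \<star> I p) \<bullet> (I h \<star> \<alpha>) = (I h' \<star> \<alpha>) \<bullet> (\<xi>1 \<star> I p)"
  shows "\<exists>\<xi>. \<xi> \<in> Cel \<and> dm \<xi> = h \<and> cd \<xi> = h' \<and> \<xi> \<star> I d0 = \<xi>0 \<and> \<xi> \<star> I d1 = \<xi>1"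
proof -
  have y: "y \<in> Obs" using ar_st(2)[OF assms(1)] assms(3) by simp
  have hh: "h \<in> hom1 C P y" "h' \<in> hom1 C P y" using assms(1-6) by simp_all
  note Z = cat_iso_surj2[OF opc_iso[OF y] hh, where \<eta>="(\<xi>0,\<xi>1)"]
  have "\<exists>\<xi>\<in>hom2 C h h'. (\<xi> \<star> I d0, \<xi> \<star> I d1) = (\<xi>0, \<xi>1)"
    apply (rule Z) apply (simp only: mem_Collect_eq case_prod_conv hom2_iff) by (intro conjI; rule assms)
  then obtain \<xi> where "\<xi> \<in> hom2 C h h'" "(\<xi> \<star> I d0, \<xi> \<star> I d1) = (\<xi>0, \<xi>1)" by (elim bexE)
  then show ?thesis by (intro exI[of _ \<xi>]) (simp only: hom2_iff prod.inject)
qed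

lemma op_uniq2: assumes "h \<in> Arr" "sr h = P" "tg h = y" "h' \<in> Arr" "sr h' = P" "tg h' = y"
  "\<xi> \<in> Cel" "dm \<xi> = h" "cd \<xi> = h'" "\<xi>' \<in> Cel" "dm \<xi>' = h" "cd \<xi>' = h'"
  "\<xi> \<star> I d0 = \<xi>' \<star> I d0" "\<xi> \<star> I d1 = \<xi>' \<star> I d1"
  shows "\<xi> = \<xi>'"
proof -
  have y: "y \<in> Obs" using ar_st(2)[OF assms(1)] assms(3) by simp
  have hh: "h \<in> hom1 C P y" "h' \<in> hom1 C P y" using assms(1-6) by simp_all
  have "\<xi> \<in> hom2 C h h'" "\<xi>' \<in> hom2 C h h'" using assms by simp_all
  from cat_iso_inj2[OF opc_iso[OF y] hh this] show ?thesis using assms by simp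
qed

lemma po_iso: "y \<in> Obs \<Longrightarrow> cat_iso_by (hom1 C Q y) (hom2 C)
          {(k0, k1). k0 \<in> hom1 C (trg1 C d0) y \<and> k1 \<in> hom1 C (trg1 C d1) y \<and>
                     cmp C k0 d0 = cmp C k1 d1}
          (\<lambda>(k0, k1) (k0', k1').
             {(\<xi>0, \<xi>1). \<xi>0 \<in> hom2 C k0 k0' \<and> \<xi>1 \<in> hom2 C k1 k1' \<and>
                hc C \<xi>0 (id2 C d0) = hc C \<xi>1 (id2 C d1)})
          (\<lambda>k. (cmp C k D2, cmp C k D0))
          (\<lambda>\<xi>. (hc C \<xi> (id2 C D2), hc C \<xi> (id2 C D0)))"
  using po unfolding pushout2_def by (elim conjE) (drule bspec, assumption)

lemma po_ex1: assumes "y \<in> Obs" "k0 \<in> Arr" "k1 \<in> Arr" "sr k0 = P" "sr k1 = P" "tg k0 = y" "tg k1 = y"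
  "k0 \<odot> d0 = k1 \<odot> d1"
  shows "\<exists>k. k \<in> Arr \<and> sr k = Q \<and> tg k = y \<and> k \<odot> D2 = k0 \<and> k \<odot> D0 = k1"
proof -
  note Z = cat_iso_surj[OF po_iso[OF assms(1)], where y="(k0,k1)"]
  have "\<exists>h\<in>hom1 C Q y. (h \<odot> D2, h \<odot> D0) = (k0,k1)"
    apply (rule Z) apply (simp only: mem_Collect_eq case_prod_conv hom1_iff basic) by (intro conjI; rule assms)
  then obtain h where "h \<in> hom1 C Q y" "(h \<odot> D2, h \<odot> D0) = (k0,k1)" by (elim bexE)
  then show ?thesis by (intro exI[of _ h]) (simp only: hom1_iff prod.inject)
qed

lemma po_uniq1: assumes "h \<in> Arr" "sr h = Q" "tg h = y" "h' \<in> Arr" "sr h' = Q" "tg h' = y"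
  "h \<odot> D2 = h' \<odot> D2" "h \<odot> D0 = h' \<odot> D0"
  shows "h = h'"
proof -
  have y: "y \<in> Obs" using ar_st(2)[OF assms(1)] assms(3) by simp
  have "h \<in> hom1 C Q y" "h' \<in> hom1 C Q y" using assms by simp_all
  from cat_iso_inj[OF po_iso[OF y] this] show ?thesis using assms by simp
qed

lemma po_ex2: assumes "h \<in> Arr" "sr h = Q" "tg h = y" "h' \<in> Arr" "sr h' = Q" "tg h' = y"
  "\<xi>0 \<in> Cel" "dm \<xi>0 = h \<odot> D2" "cd \<xi>0 = h' \<odot> D2" "\<xi>1 \<in> Cel" "dm \<xi>1 = h \<odot> D0" "cd \<xi>1 = h' \<odot> D0"
  "\<xi>0 \<star> I d0 = \<xi>1 \<star> I d1"
  shows "\<exists>\<xi>. \<xi> \<in> Cel \<and> dm \<xi> = h \<and> cd \<xi> = h' \<and> \<xi> \<star> I D2 = \<xi>0 \<and> \<xi> \<star> I D0 = \<xi>1"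
proof -
  have y: "y \<in> Obs" using ar_st(2)[OF assms(1)] assms(3) by simp
  have hh: "h \<in> hom1 C Q y" "h' \<in> hom1 C Q y" using assms(1-6) by simp_all
  note Z = cat_iso_surj2[OF po_iso[OF y] hh, where \<eta>="(\<xi>0,\<xi>1)"]
  have "\<exists>\<xi>\<in>hom2 C h h'. (\<xi> \<star> I D2, \<xi> \<star> I D0) = (\<xi>0, \<xi>1)"
    apply (rule Z) apply (simp only: mem_Collect_eq case_prod_conv hom2_iff) by (intro conjI; rule assms)
  then obtain \<xi> where "\<xi> \<in> hom2 C h h'" "(\<xi> \<star> I D2, \<xi> \<star> I D0) = (\<xi>0, \<xi>1)" by (elim bexE)
  then show ?thesis by (intro exI[of _ \<xi>]) (simp only: hom2_iff prod.inject)
qed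

end

locale adjk = ckd +
  fixes l \<eta>a \<epsilon>a T \<gamma> mm et
  assumes adj: "adjunction C l p \<eta>a \<epsilon>a" and cod: "codensity_monad C p T \<gamma> mm et"
begin

lemma adjf[simp]: "l \<in> Arr" "sr l = bb" "tg l = ee" "\<eta>a \<in> Cel" "dm \<eta>a = ii bb" "cd \<eta>a = p \<odot> l"
  "\<epsilon>a \<in> Cel" "dm \<epsilon>a = l \<odot> p" "cd \<epsilon>a = ii ee"
proof -
  have "l \<in> Ar C \<and> p \<in> hom1 C (trg1 C l) (src1 C l) \<and>
     \<eta>a \<in> hom2 C (ide1 C (src1 C l)) (cmp C p l) \<and>
     \<epsilon>a \<in> hom2 C (cmp C l p) (ide1 C (trg1 C l))" using adj unfolding adjunction_def by (elim conjE) simp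
  then show "l \<in> Arr" "sr l = bb" "tg l = ee" "\<eta>a \<in> Cel" "dm \<eta>a = ii bb" "cd \<eta>a = p \<odot> l"
  "\<epsilon>a \<in> Cel" "dm \<epsilon>a = l \<odot> p" "cd \<epsilon>a = ii ee" by auto
qed

lemma tri1[simp]: "WR \<epsilon>a l \<bullet> WL l \<eta>a = I l"
proof -
  have "vc C (hc C \<epsilon>a (id2 C l)) (hc C (id2 C l) \<eta>a) = id2 C l" using adj unfolding adjunction_def by (elim conjE)
  then show ?thesis by simp
qed
lemma tri2[simp]: "WL p \<epsilon>a \<bullet> WR \<eta>a p = I p"
  using adj unfolding adjunction_def by simp

lemma rk: "right_kan C p p T \<gamma>" using cod unfolding codensity_monad_def by blast

lemma codf[simp]: "T \<in> Arr" "sr T = bb" "tg T = bb" "\<gamma> \<in> Cel" "dm \<gamma> = T \<odot> p" "cd \<gamma> = p"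
  "mm \<in> Cel" "dm mm = T \<odot> T" "cd mm = T" "et \<in> Cel" "dm et = ii bb" "cd et = T"
proof -
  have a: "T \<in> hom1 C (trg1 C p) (trg1 C p) \<and> \<gamma> \<in> hom2 C (cmp C T p) p" using rk unfolding right_kan_def by (elim conjE) simp
  have b: "mm \<in> hom2 C (cmp C T T) T \<and> et \<in> hom2 C (ide1 C (trg1 C p)) T" using cod unfolding codensity_monad_def by (elim conjE) simp
  show "T \<in> Arr" "sr T = bb" "tg T = bb" "\<gamma> \<in> Cel" "dm \<gamma> = T \<odot> p" "cd \<gamma> = p"
  "mm \<in> Cel" "dm mm = T \<odot> T" "cd mm = T" "et \<in> Cel" "dm et = ii bb" "cd et = T" using a b by auto
qed

lemma cod_m: "\<gamma> \<bullet> WR mm p = \<gamma> \<bullet> WL T \<gamma>"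
proof -
  have "vc C \<gamma> (hc C mm (id2 C p)) = vc C \<gamma> (hc C (id2 C T) \<gamma>)" using cod unfolding codensity_monad_def by (elim conjE)
  then show ?thesis by simp
qed
lemma cod_e[simp]: "\<gamma> \<bullet> WR et p = I p"
proof -
  have "vc C \<gamma> (hc C et (id2 C p)) = id2 C p" using cod unfolding codensity_monad_def by (elim conjE)
  then show ?thesis by simp
qed

lemma kan_bij: "k \<in> Arr \<Longrightarrow> sr k = bb \<Longrightarrow> tg k = bb \<Longrightarrow>
   bij_betw (\<lambda>\<beta>. \<gamma> \<bullet> (\<beta> \<star> I p)) (hom2 C k T) (hom2 C (k \<odot> p) p)"
proof -
  assume "k \<in> Arr" "sr k = bb" "tg k = bb"
  then have "k \<in> hom1 C (trg1 C p) (trg1 C p)" by simp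
  moreover have "\<forall>k\<in>hom1 C (trg1 C p) (trg1 C p).
        bij_betw (\<lambda>\<beta>. vc C \<gamma> (hc C \<beta> (id2 C p))) (hom2 C k T) (hom2 C (cmp C k p) p)"
    using rk unfolding right_kan_def by (elim conjE)
  ultimately show ?thesis by blast
qed

lemma kan_ex: assumes "k \<in> Arr" "sr k = bb" "tg k = bb" "\<sigma> \<in> Cel" "dm \<sigma> = k \<odot> p" "cd \<sigma> = p"
  shows "\<exists>\<beta>. \<beta> \<in> Cel \<and> dm \<beta> = k \<and> cd \<beta> = T \<and> \<gamma> \<bullet> WR \<beta> p = \<sigma>"
proof -
  have "\<sigma> \<in> hom2 C (k \<odot> p) p" using assms(4-6) by simp
  then have "\<sigma> \<in> (\<lambda>\<beta>. \<gamma> \<bullet> (\<beta> \<star> I p)) ` (hom2 C k T)"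
    using bij_betw_imp_surj_on[OF kan_bij[OF assms(1-3)]] by (simp only:)
  then obtain \<beta> where "\<beta> \<in> hom2 C k T" "\<sigma> = \<gamma> \<bullet> (\<beta> \<star> I p)" by (elim imageE)
  then show ?thesis by (intro exI[of _ \<beta>]) (simp only: hom2_iff to_WR)
qed

lemma kan_uniq: assumes "k \<in> Arr" "sr k = bb" "tg k = bb" "\<beta> \<in> Cel" "dm \<beta> = k" "cd \<beta> = T"
   "\<beta>' \<in> Cel" "dm \<beta>' = k" "cd \<beta>' = T" "\<gamma> \<bullet> WR \<beta> p = \<gamma> \<bullet> WR \<beta>' p"
  shows "\<beta> = \<beta>'"
proof -
  have "\<beta> \<in> hom2 C k T" "\<beta>' \<in> hom2 C k T" using assms(4-9) by simp_all
  moreover have "inj_on (\<lambda>\<beta>. \<gamma> \<bullet> (\<beta> \<star> I p)) (hom2 C k T)"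
    using kan_bij[OF assms(1-3)] by (rule bij_betw_imp_inj_on)
  ultimately show ?thesis using assms(10) unfolding inj_on_def to_WR by blast
qed

definition "kk = (SOME h. h \<in> Arr \<and> sr h = P \<and> tg h = bb \<and> h \<odot> d0 = ii bb \<and> h \<odot> d1 = T \<and> I h \<star> \<alpha> = \<gamma>)"

lemma kk: "kk \<in> Arr \<and> sr kk = P \<and> tg kk = bb \<and> kk \<odot> d0 = ii bb \<and> kk \<odot> d1 = T \<and> I kk \<star> \<alpha> = \<gamma>"
proof -
  have "\<exists>h. h \<in> Arr \<and> sr h = P \<and> tg h = bb \<and> h \<odot> d0 = ii bb \<and> h \<odot> d1 = T \<and> I h \<star> \<alpha> = \<gamma>"
    by (rule op_ex1) simp_all
  then show ?thesis unfolding kk_def by (rule someI_ex)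
qed

lemma kk_simps[simp]: "kk \<in> Arr" "sr kk = P" "tg kk = bb" "kk \<odot> d0 = ii bb" "kk \<odot> d1 = T" "WL kk \<alpha> = \<gamma>"
  using kk by (simp_all del: to_WL add: WL_def)

lemma kk_ctx[simp]: "X \<in> Arr \<Longrightarrow> tg X = bb \<Longrightarrow> kk \<odot> d0 \<odot> X = X" "X \<in> Arr \<Longrightarrow> tg X = bb \<Longrightarrow> kk \<odot> d1 \<odot> X = T \<odot> X"
  using cmp_ctx[of X d0 kk "ii bb" "ii bb"] cmp_ctx[of X d1 kk "ii bb" T] by simp_all

end

context adjk begin

lemma D1\<alpha>[simp]: "WL D1 \<alpha> = WL D0 \<alpha> \<bullet> WL D2 \<alpha>" using eqs(4) by simp
lemma s0\<alpha>[simp]: "WL s0 \<alpha> = I p" using eqs(7) by simp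

definition "KK = (SOME k. k \<in> Arr \<and> sr k = Q \<and> tg k = bb \<and> k \<odot> D2 = T \<odot> kk \<and> k \<odot> D0 = kk)"

lemma KK: "KK \<in> Arr \<and> sr KK = Q \<and> tg KK = bb \<and> KK \<odot> D2 = T \<odot> kk \<and> KK \<odot> D0 = kk"
proof -
  have "\<exists>k. k \<in> Arr \<and> sr k = Q \<and> tg k = bb \<and> k \<odot> D2 = T \<odot> kk \<and> k \<odot> D0 = kk"
    by (rule po_ex1) simp_all
  then show ?thesis unfolding KK_def by (rule someI_ex)
qed

lemma KK_simps[simp]: "KK \<in> Arr" "sr KK = Q" "tg KK = bb" "KK \<odot> D2 = T \<odot> kk" "KK \<odot> D0 = kk"
  using KK by simp_all

lemma KK_ctx[simp]: "X \<in> Arr \<Longrightarrow> tg X = P \<Longrightarrow> KK \<odot> D2 \<odot> X = T \<odot> kk \<odot> X"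
   "X \<in> Arr \<Longrightarrow> tg X = P \<Longrightarrow> KK \<odot> D0 \<odot> X = kk \<odot> X"
  using cmp_ctx[of X D2 KK kk T] cmp_ctx[of X D0 KK "ii P" kk] by simp_all

lemma KK_WL[simp]: "\<xi> \<in> Cel \<Longrightarrow> tg (dm \<xi>) = P \<Longrightarrow> WL KK (WL D2 \<xi>) = WL T (WL kk \<xi>)"
   "\<xi> \<in> Cel \<Longrightarrow> tg (dm \<xi>) = P \<Longrightarrow> WL KK (WL D0 \<xi>) = WL kk \<xi>"
  using WL_cmp[of KK D2 \<xi>] WL_cmp[of KK D0 \<xi>] WL_cmp[of T kk \<xi>] by simp_all

definition "\<nu> = (SOME \<xi>. \<xi> \<in> Cel \<and> dm \<xi> = KK \<odot> D1 \<and> cd \<xi> = kk \<and> \<xi> \<star> I d0 = I (ii bb) \<and> \<xi> \<star> I d1 = mm)"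

lemma \<nu>: "\<nu> \<in> Cel \<and> dm \<nu> = KK \<odot> D1 \<and> cd \<nu> = kk \<and> \<nu> \<star> I d0 = I (ii bb) \<and> \<nu> \<star> I d1 = mm"
proof -
  have "\<exists>\<xi>. \<xi> \<in> Cel \<and> dm \<xi> = KK \<odot> D1 \<and> cd \<xi> = kk \<and> \<xi> \<star> I d0 = I (ii bb) \<and> \<xi> \<star> I d1 = mm"
    apply (rule op_ex2[where y=bb])
    apply (simp_all)
    using cod_m by simp
  then show ?thesis unfolding \<nu>_def by (rule someI_ex)
qed

lemma \<nu>_simps[simp]: "\<nu> \<in> Cel" "dm \<nu> = KK \<odot> D1" "cd \<nu> = kk" "WR \<nu> d0 = I (ii bb)" "WR \<nu> d1 = mm"
  using \<nu> by simp_all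

definition "\<zeta> = (SOME \<xi>. \<xi> \<in> Cel \<and> dm \<xi> = s0 \<and> cd \<xi> = kk \<and> \<xi> \<star> I d0 = I (ii bb) \<and> \<xi> \<star> I d1 = et)"

lemma \<zeta>: "\<zeta> \<in> Cel \<and> dm \<zeta> = s0 \<and> cd \<zeta> = kk \<and> \<zeta> \<star> I d0 = I (ii bb) \<and> \<zeta> \<star> I d1 = et"
proof -
  have "\<exists>\<xi>. \<xi> \<in> Cel \<and> dm \<xi> = s0 \<and> cd \<xi> = kk \<and> \<xi> \<star> I d0 = I (ii bb) \<and> \<xi> \<star> I d1 = et"
    apply (rule op_ex2[where y=bb])
    by (simp_all)
  then show ?thesis unfolding \<zeta>_def by (rule someI_ex)
qed

lemma \<zeta>_simps[simp]: "\<zeta> \<in> Cel" "dm \<zeta> = s0" "cd \<zeta> = kk" "WR \<zeta> d0 = I (ii bb)" "WR \<zeta> d1 = et"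
  using \<zeta> by simp_all

definition "\<theta> = (SOME \<beta>. \<beta> \<in> Cel \<and> dm \<beta> = p \<odot> l \<and> cd \<beta> = T \<and> \<gamma> \<bullet> WR \<beta> p = WL p \<epsilon>a)"

lemma \<theta>: "\<theta> \<in> Cel \<and> dm \<theta> = p \<odot> l \<and> cd \<theta> = T \<and> \<gamma> \<bullet> WR \<theta> p = WL p \<epsilon>a"
proof -
  have "\<exists>\<beta>. \<beta> \<in> Cel \<and> dm \<beta> = p \<odot> l \<and> cd \<beta> = T \<and> \<gamma> \<bullet> WR \<beta> p = WL p \<epsilon>a"
    by (rule kan_ex) simp_all
  then show ?thesis unfolding \<theta>_def by (rule someI_ex)
qed

lemma \<theta>_simps[simp]: "\<theta> \<in> Cel" "dm \<theta> = p \<odot> l" "cd \<theta> = T"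
  using \<theta> by simp_all
lemma \<theta>_eq: "\<gamma> \<bullet> WR \<theta> p = WL p \<epsilon>a" using \<theta> by simp

end

context adjk begin

definition "\<rho> = WL d0 \<theta> \<bullet> WR \<alpha> l \<bullet> WL d1 \<eta>a"

lemma \<rho>_simps[simp]: "\<rho> \<in> Cel" "dm \<rho> = d1" "cd \<rho> = d0 \<odot> T"
  unfolding \<rho>_def by simp_all

lemma \<rho>_eq: "WL d0 \<gamma> \<bullet> WR \<rho> p = \<alpha>"
proof -
  have n: "\<alpha> \<bullet> WL d1 (WL p \<epsilon>a) = WL d0 (WL p \<epsilon>a) \<bullet> WR (WR \<alpha> l) p"
    using nat_WLR[of \<epsilon>a \<alpha>] by simp
  have e1: "WL d0 \<gamma> \<bullet> WL d0 (WR \<theta> p) = WL d0 (WL p \<epsilon>a)"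
    using \<theta>_eq WL_vc_rev[of "WR \<theta> p" \<gamma> d0] by simp
  have "WL d0 \<gamma> \<bullet> WR \<rho> p = WL d0 \<gamma> \<bullet> WL d0 (WR \<theta> p) \<bullet> WR (WR \<alpha> l) p \<bullet> WL d1 (WR \<eta>a p)"
    unfolding \<rho>_def by simp
  also have "\<dots> = WL d0 (WL p \<epsilon>a) \<bullet> WR (WR \<alpha> l) p \<bullet> WL d1 (WR \<eta>a p)"
    using vc_pair_ctx[OF e1] by simp
  also have "\<dots> = \<alpha> \<bullet> WL d1 (WL p \<epsilon>a) \<bullet> WL d1 (WR \<eta>a p)"
    using vc_pair_ctx[OF n[symmetric]] by simp
  also have "\<dots> = \<alpha> \<bullet> WL d1 (I p)"
    using WL_pair[OF tri2, of d1] by simp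
  also have "\<dots> = \<alpha>" by simp
  finally show ?thesis .
qed

end

context adjk begin

lemma WL_eqs[simp]:
  "\<xi> \<in> Cel \<Longrightarrow> tg (dm \<xi>) = bb \<Longrightarrow> WL D0 (WL d1 \<xi>) = WL D2 (WL d0 \<xi>)"
  "\<xi> \<in> Cel \<Longrightarrow> tg (dm \<xi>) = bb \<Longrightarrow> WL D1 (WL d1 \<xi>) = WL D2 (WL d1 \<xi>)"
  "\<xi> \<in> Cel \<Longrightarrow> tg (dm \<xi>) = bb \<Longrightarrow> WL D1 (WL d0 \<xi>) = WL D0 (WL d0 \<xi>)"
  "\<xi> \<in> Cel \<Longrightarrow> tg (dm \<xi>) = bb \<Longrightarrow> WL s0 (WL d0 \<xi>) = \<xi>"
  "\<xi> \<in> Cel \<Longrightarrow> tg (dm \<xi>) = bb \<Longrightarrow> WL s0 (WL d1 \<xi>) = \<xi>"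
  "\<xi> \<in> Cel \<Longrightarrow> tg (dm \<xi>) = bb \<Longrightarrow> WL kk (WL d0 \<xi>) = \<xi>"
  "\<xi> \<in> Cel \<Longrightarrow> tg (dm \<xi>) = bb \<Longrightarrow> WL kk (WL d1 \<xi>) = WL T \<xi>"
  using WL_cmp[of D0 d1 \<xi>] WL_cmp[of D2 d0 \<xi>] WL_cmp[of D1 d1 \<xi>] WL_cmp[of D2 d1 \<xi>]
    WL_cmp[of D1 d0 \<xi>] WL_cmp[of D0 d0 \<xi>] WL_cmp[of s0 d0 \<xi>] WL_cmp[of s0 d1 \<xi>]
    WL_cmp[of kk d0 \<xi>] WL_cmp[of kk d1 \<xi>]
  by (simp_all del: WL_cmp)

definition "\<omega> = (SOME \<xi>. \<xi> \<in> Cel \<and> dm \<xi> = ii P \<and> cd \<xi> = d0 \<odot> kk \<and> \<xi> \<star> I d0 = I d0 \<and> \<xi> \<star> I d1 = \<rho>)"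

lemma \<omega>: "\<omega> \<in> Cel \<and> dm \<omega> = ii P \<and> cd \<omega> = d0 \<odot> kk \<and> \<omega> \<star> I d0 = I d0 \<and> \<omega> \<star> I d1 = \<rho>"
proof -
  have "\<exists>\<xi>. \<xi> \<in> Cel \<and> dm \<xi> = ii P \<and> cd \<xi> = d0 \<odot> kk \<and> \<xi> \<star> I d0 = I d0 \<and> \<xi> \<star> I d1 = \<rho>"
    apply (rule op_ex2[where y=P])
    apply (simp_all)
    using \<rho>_eq by simp
  then show ?thesis unfolding \<omega>_def by (rule someI_ex)
qed

lemma \<omega>_simps[simp]: "\<omega> \<in> Cel" "dm \<omega> = ii P" "cd \<omega> = d0 \<odot> kk" "WR \<omega> d0 = I d0" "WR \<omega> d1 = \<rho>"
  using \<omega> by simp_all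

lemma factP: assumes "\<sigma> \<in> Cel" "Y \<in> Arr" "tg Y = bb" "cd \<sigma> = d0 \<odot> Y"
  shows "\<sigma> = WL d0 (WL kk \<sigma>) \<bullet> WR \<omega> (dm \<sigma>)"
proof -
  have "tg (dm \<sigma>) = P" using assms ce_dc(4)[OF assms(1)] by simp
  then show ?thesis using nat_WLR[of \<sigma> \<omega>] assms by simp
qed

lemma injP: assumes "\<sigma> \<in> Cel" "\<sigma>' \<in> Cel" "Y \<in> Arr" "tg Y = bb" "cd \<sigma> = d0 \<odot> Y" "cd \<sigma>' = d0 \<odot> Y"
  "dm \<sigma> = dm \<sigma>'" "WL kk \<sigma> = WL kk \<sigma>'"
  shows "\<sigma> = \<sigma>'"
  using factP[OF assms(1,3,4,5)] factP[OF assms(2,3,4,6)] assms(7,8) by simp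

definition "\<xi>2 = (SOME \<xi>. \<xi> \<in> Cel \<and> dm \<xi> = D2 \<and> cd \<xi> = D0 \<odot> d0 \<odot> T \<odot> kk \<and> \<xi> \<star> I d0 = WL D0 \<rho>
    \<and> \<xi> \<star> I d1 = WL D0 (WR \<rho> T) \<bullet> WL D2 \<rho>)"

lemma \<xi>2: "\<xi>2 \<in> Cel \<and> dm \<xi>2 = D2 \<and> cd \<xi>2 = D0 \<odot> d0 \<odot> T \<odot> kk \<and> \<xi>2 \<star> I d0 = WL D0 \<rho>
    \<and> \<xi>2 \<star> I d1 = WL D0 (WR \<rho> T) \<bullet> WL D2 \<rho>"
proof -
  have n: "WL d0 (WL T \<gamma>) \<bullet> WR (WR \<rho> T) p = WR \<rho> p \<bullet> WL d1 \<gamma>"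
    using nat_WLR[of \<gamma> \<rho>] by simp
  have n2: "WL D0 (WL d0 (WL T \<gamma>)) \<bullet> WL D0 (WR (WR \<rho> T) p) = WL D0 (WR \<rho> p) \<bullet> WL D2 (WL d0 \<gamma>)"
    using WL_pair[OF n, of D0] WL_vc[of "WL d1 \<gamma>" "WR \<rho> p" D0] by simp
  have n3: "WL D2 (WL d0 \<gamma>) \<bullet> WL D2 (WR \<rho> p) = WL D2 \<alpha>"
    using WL_pair[OF \<rho>_eq, of D2] by simp
  have "\<exists>\<xi>. \<xi> \<in> Cel \<and> dm \<xi> = D2 \<and> cd \<xi> = D0 \<odot> d0 \<odot> T \<odot> kk \<and> \<xi> \<star> I d0 = WL D0 \<rho>
    \<and> \<xi> \<star> I d1 = WL D0 (WR \<rho> T) \<bullet> WL D2 \<rho>"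
    apply (rule op_ex2[where y=Q])
    apply (simp_all)
    using vc_pair_ctx[OF n2] n3 by simp
  then show ?thesis unfolding \<xi>2_def by (rule someI_ex)
qed

lemma \<xi>2_simps[simp]: "\<xi>2 \<in> Cel" "dm \<xi>2 = D2" "cd \<xi>2 = D0 \<odot> d0 \<odot> T \<odot> kk" "WR \<xi>2 d0 = WL D0 \<rho>"
    "WR \<xi>2 d1 = WL D0 (WR \<rho> T) \<bullet> WL D2 \<rho>"
  using \<xi>2 by simp_all

definition "\<Omega> = (SOME \<xi>. \<xi> \<in> Cel \<and> dm \<xi> = ii Q \<and> cd \<xi> = D0 \<odot> d0 \<odot> KK \<and> \<xi> \<star> I D2 = \<xi>2 \<and> \<xi> \<star> I D0 = WL D0 \<omega>)"

lemma \<Omega>: "\<Omega> \<in> Cel \<and> dm \<Omega> = ii Q \<and> cd \<Omega> = D0 \<odot> d0 \<odot> KK \<and> \<Omega> \<star> I D2 = \<xi>2 \<and> \<Omega> \<star> I D0 = WL D0 \<omega>"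
proof -
  have "\<exists>\<xi>. \<xi> \<in> Cel \<and> dm \<xi> = ii Q \<and> cd \<xi> = D0 \<odot> d0 \<odot> KK \<and> \<xi> \<star> I D2 = \<xi>2 \<and> \<xi> \<star> I D0 = WL D0 \<omega>"
    apply (rule po_ex2[where y=Q])
    by (simp_all)
  then show ?thesis unfolding \<Omega>_def by (rule someI_ex)
qed

lemma \<Omega>_simps[simp]: "\<Omega> \<in> Cel" "dm \<Omega> = ii Q" "cd \<Omega> = D0 \<odot> d0 \<odot> KK" "WR \<Omega> D2 = \<xi>2" "WR \<Omega> D0 = WL D0 \<omega>"
  using \<Omega> by simp_all

lemma factQ: assumes "\<sigma> \<in> Cel" "Y \<in> Arr" "tg Y = bb" "cd \<sigma> = D0 \<odot> d0 \<odot> Y"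
  shows "\<sigma> = WL D0 (WL d0 (WL KK \<sigma>)) \<bullet> WR \<Omega> (dm \<sigma>)"
proof -
  have "tg (dm \<sigma>) = Q" using assms ce_dc(4)[OF assms(1)] by simp
  then show ?thesis using nat_WLR[of \<sigma> \<Omega>] assms by simp
qed

lemma injQ: assumes "\<sigma> \<in> Cel" "\<sigma>' \<in> Cel" "Y \<in> Arr" "tg Y = bb" "cd \<sigma> = D0 \<odot> d0 \<odot> Y" "cd \<sigma>' = D0 \<odot> d0 \<odot> Y"
  "dm \<sigma> = dm \<sigma>'" "WL KK \<sigma> = WL KK \<sigma>'"
  shows "\<sigma> = \<sigma>'"
  using factQ[OF assms(1,3,4,5)] factQ[OF assms(2,3,4,6)] assms(7,8) by simp

end

context adjk begin

lemma kk\<rho>: "WL kk \<rho> = I T"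
proof -
  have "WL kk (WL d0 \<gamma>) \<bullet> WL kk (WR \<rho> p) = WL kk \<alpha>" using WL_pair[OF \<rho>_eq, of kk] by simp
  then have A: "\<gamma> \<bullet> WL kk (WR \<rho> p) = \<gamma>" by simp
  have B: "\<gamma> \<bullet> WR (WL kk \<rho>) p = \<gamma> \<bullet> WR (I T) p" using A by simp
  show ?thesis by (rule kan_uniq[of T, OF _ _ _ _ _ _ _ _ _ B]) simp_all
qed

lemma kk\<rho>_ctx[simp]: "X \<in> Arr \<Longrightarrow> tg X = bb \<Longrightarrow> WL kk (WR \<rho> X) = I (T \<odot> X)"
  using WR_WL[of kk X \<rho>] kk\<rho> by simp

lemma L_nu: assumes "\<beta> \<in> Cel" "X \<in> Arr" "Y \<in> Arr" "tg X = bb" "tg Y = bb" "dm \<beta> = d1 \<odot> X" "cd \<beta> = d0 \<odot> Y"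
  shows "WL KK (WL D1 \<beta>) = WL kk \<beta> \<bullet> WR mm X"
  using nat_WLR[of \<beta> \<nu>] assms by simp

lemma L_zeta: assumes "\<beta> \<in> Cel" "X \<in> Arr" "Y \<in> Arr" "tg X = bb" "tg Y = bb" "dm \<beta> = d1 \<odot> X" "cd \<beta> = d0 \<odot> Y"
  shows "WL s0 \<beta> = WL kk \<beta> \<bullet> WR et X"
  using nat_WLR[of \<beta> \<zeta>] assms by simp

lemma cocycle_of: assumes "\<beta> \<in> Cel" "h \<in> Arr" "tg h = bb" "dm \<beta> = d1 \<odot> h" "cd \<beta> = d0 \<odot> h"
  "WL kk \<beta> \<bullet> WL T (WL kk \<beta>) = WL kk \<beta> \<bullet> WR mm h"
  shows "WL D0 \<beta> \<bullet> WL D2 \<beta> = WL D1 \<beta>"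
proof (rule injQ[where Y=h])
  show "WL KK (WL D0 \<beta> \<bullet> WL D2 \<beta>) = WL KK (WL D1 \<beta>)"
    using L_nu[OF assms(1,2,2,3,3,4,5)] assms by simp
qed (use assms in simp_all)

lemma alg_of_desc: assumes "\<beta> \<in> Cel" "h \<in> Arr" "tg h = bb" "dm \<beta> = d1 \<odot> h" "cd \<beta> = d0 \<odot> h"
  "WL D0 \<beta> \<bullet> WL D2 \<beta> = WL D1 \<beta>"
  shows "WL kk \<beta> \<bullet> WL T (WL kk \<beta>) = WL kk \<beta> \<bullet> WR mm h"
proof -
  have "WL KK (WL D0 \<beta>) \<bullet> WL KK (WL D2 \<beta>) = WL KK (WL D1 \<beta>)"
    using WL_pair[OF assms(6), of KK] assms(1-5) by simp
  then show ?thesis using L_nu[OF assms(1,2,2,3,3,4,5)] assms(1-5) by simp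
qed

definition "DescS y = {(h, \<beta>). h \<in> hom1 C y (trg1 C p) \<and> \<beta> \<in> hom2 C (cmp C d1 h) (cmp C d0 h) \<and>
                   vc C (hc C (id2 C D0) \<beta>) (hc C (id2 C D2) \<beta>) = hc C (id2 C D1) \<beta> \<and>
                   hc C (id2 C s0) \<beta> = id2 C h}"
definition "DescH = (\<lambda>(h, \<beta>) (h', \<beta>').
             {\<xi>. \<xi> \<in> hom2 C h h' \<and>
                 vc C \<beta>' (hc C (id2 C d1) \<xi>) = vc C (hc C (id2 C d0) \<xi>) \<beta>})"
definition "AlgS y = {(h, \<beta>). h \<in> hom1 C y (trg1 C p) \<and> \<beta> \<in> hom2 C (cmp C T h) h \<and>
                   vc C \<beta> (hc C (id2 C T) \<beta>) = vc C \<beta> (hc C mm (id2 C h)) \<and>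
                   vc C \<beta> (hc C et (id2 C h)) = id2 C h}"
definition "AlgH = (\<lambda>(h, \<beta>) (h', \<beta>').
             {\<xi>. \<xi> \<in> hom2 C h h' \<and> vc C \<xi> \<beta> = vc C \<beta>' (hc C (id2 C T) \<xi>)})"

definition "Phi = (\<lambda>(h, \<beta>). (h, WL kk \<beta>))"
definition "Aa = (\<lambda>(h, a). (h, WL d0 a \<bullet> WR \<rho> h))"

lemma DescS_iff: "(h, \<beta>) \<in> DescS y \<longleftrightarrow> (h \<in> Arr \<and> sr h = y \<and> tg h = bb \<and> \<beta> \<in> Cel \<and> dm \<beta> = d1 \<odot> h \<and> cd \<beta> = d0 \<odot> h \<and>
   WL D0 \<beta> \<bullet> WL D2 \<beta> = WL D1 \<beta> \<and> WL s0 \<beta> = I h)"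
  unfolding DescS_def by (simp only: mem_Collect_eq case_prod_conv hom1_iff hom2_iff to_WL conj_assoc)

lemma AlgS_iff: "(h, a) \<in> AlgS y \<longleftrightarrow> (h \<in> Arr \<and> sr h = y \<and> tg h = bb \<and> a \<in> Cel \<and> dm a = T \<odot> h \<and> cd a = h \<and>
   a \<bullet> WL T a = a \<bullet> WR mm h \<and> a \<bullet> WR et h = I h)"
  unfolding AlgS_def by (simp only: mem_Collect_eq case_prod_conv hom1_iff hom2_iff to_WL to_WR conj_assoc)

lemma DescH_iff: "\<xi> \<in> DescH (h, \<beta>) (h', \<beta>') \<longleftrightarrow> (\<xi> \<in> Cel \<and> dm \<xi> = h \<and> cd \<xi> = h' \<and> \<beta>' \<bullet> WL d1 \<xi> = WL d0 \<xi> \<bullet> \<beta>)"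
  unfolding DescH_def by (simp only: mem_Collect_eq case_prod_conv hom2_iff to_WL conj_assoc)

lemma AlgH_iff: "\<xi> \<in> AlgH (h, a) (h', a') \<longleftrightarrow> (\<xi> \<in> Cel \<and> dm \<xi> = h \<and> cd \<xi> = h' \<and> \<xi> \<bullet> a = a' \<bullet> WL T \<xi>)"
  unfolding AlgH_def by (simp only: mem_Collect_eq case_prod_conv hom2_iff to_WL conj_assoc)

lemma Phi_mem: assumes "(h, \<beta>) \<in> DescS y" shows "Phi (h, \<beta>) \<in> AlgS y"
proof -
  have a: "h \<in> Arr" "sr h = y" "tg h = bb" "\<beta> \<in> Cel" "dm \<beta> = d1 \<odot> h" "cd \<beta> = d0 \<odot> h"
   "WL D0 \<beta> \<bullet> WL D2 \<beta> = WL D1 \<beta>" "WL s0 \<beta> = I h" using assms unfolding DescS_iff by blast+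
  have u: "WL kk \<beta> \<bullet> WR et h = I h" using L_zeta[OF a(4,1,1,3,3,5,6)] a(8) by simp
  show ?thesis unfolding Phi_def AlgS_iff prod.case
    using a alg_of_desc[OF a(4,1,3,5,6,7)] u by simp
qed

lemma Aa_mem: assumes "(h, a) \<in> AlgS y" shows "Aa (h, a) \<in> DescS y"
proof -
  have a: "h \<in> Arr" "sr h = y" "tg h = bb" "a \<in> Cel" "dm a = T \<odot> h" "cd a = h"
   "a \<bullet> WL T a = a \<bullet> WR mm h" "a \<bullet> WR et h = I h" using assms unfolding AlgS_iff by blast+
  define \<beta> where "\<beta> = WL d0 a \<bullet> WR \<rho> h"
  have b: "\<beta> \<in> Cel" "dm \<beta> = d1 \<odot> h" "cd \<beta> = d0 \<odot> h" "WL kk \<beta> = a" unfolding \<beta>_def using a by simp_all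
  have c: "WL D0 \<beta> \<bullet> WL D2 \<beta> = WL D1 \<beta>" using cocycle_of[OF b(1) a(1,3) b(2,3)] b(4) a(7) by simp
  have u: "WL s0 \<beta> = I h" using L_zeta[OF b(1) a(1,1,3,3) b(2,3)] b(4) a(8) by simp
  show ?thesis unfolding Aa_def prod.case DescS_iff using a b c u unfolding \<beta>_def[symmetric] by simp
qed

lemma Phi_Aa: "(h, a) \<in> AlgS y \<Longrightarrow> Phi (Aa (h, a)) = (h, a)"
  unfolding AlgS_iff Phi_def Aa_def by simp

lemma Aa_Phi: "(h, \<beta>) \<in> DescS y \<Longrightarrow> Aa (Phi (h, \<beta>)) = (h, \<beta>)"
  unfolding DescS_iff Phi_def Aa_def using factP[of \<beta> h] by simp

lemma hom_eq: assumes "(h, \<beta>) \<in> DescS y" "(h', \<beta>') \<in> DescS y"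
  shows "DescH (h, \<beta>) (h', \<beta>') = AlgH (Phi (h, \<beta>)) (Phi (h', \<beta>'))"
proof -
  have a: "h \<in> Arr" "sr h = y" "tg h = bb" "\<beta> \<in> Cel" "dm \<beta> = d1 \<odot> h" "cd \<beta> = d0 \<odot> h"
    using assms(1) unfolding DescS_iff by blast+
  have a': "h' \<in> Arr" "sr h' = y" "tg h' = bb" "\<beta>' \<in> Cel" "dm \<beta>' = d1 \<odot> h'" "cd \<beta>' = d0 \<odot> h'"
    using assms(2) unfolding DescS_iff by blast+
  show ?thesis
  proof (rule set_eqI)
    fix \<xi>
    show "\<xi> \<in> DescH (h, \<beta>) (h', \<beta>') \<longleftrightarrow> \<xi> \<in> AlgH (Phi (h, \<beta>)) (Phi (h', \<beta>'))"
      unfolding Phi_def prod.case DescH_iff AlgH_iff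
    proof (intro iffI; elim conjE; intro conjI)
      assume t: "\<xi> \<in> Cel" "dm \<xi> = h" "cd \<xi> = h'" and e: "\<beta>' \<bullet> WL d1 \<xi> = WL d0 \<xi> \<bullet> \<beta>"
      have "WL kk (\<beta>' \<bullet> WL d1 \<xi>) = WL kk (WL d0 \<xi> \<bullet> \<beta>)" using e by simp
      then show "\<xi> \<bullet> WL kk \<beta> = WL kk \<beta>' \<bullet> WL T \<xi>" using t a a' by simp
    next
      assume t: "\<xi> \<in> Cel" "dm \<xi> = h" "cd \<xi> = h'" and e: "\<xi> \<bullet> WL kk \<beta> = WL kk \<beta>' \<bullet> WL T \<xi>"
      show "\<beta>' \<bullet> WL d1 \<xi> = WL d0 \<xi> \<bullet> \<beta>"
        by (rule injP[where Y=h']) (use t a a' e in simp_all)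
    qed
  qed
qed

end

lemma cat_iso_comp:
  assumes "cat_iso_by X HX Y HY F G" "cat_iso_by Y HY Z HZ F' G'"
    "\<And>x. x \<in> X \<Longrightarrow> F'' x = F' (F x)"
    "\<And>a b \<xi>. a \<in> X \<Longrightarrow> b \<in> X \<Longrightarrow> \<xi> \<in> HX a b \<Longrightarrow> G'' \<xi> = G' (G \<xi>)"
  shows "cat_iso_by X HX Z HZ F'' G''"
proof -
  have b1: "bij_betw F X Y" and h1: "\<And>a b. a \<in> X \<Longrightarrow> b \<in> X \<Longrightarrow> bij_betw G (HX a b) (HY (F a) (F b))"
    using assms(1) unfolding cat_iso_by_def by blast+
  have b2: "bij_betw F' Y Z" and h2: "\<And>a b. a \<in> Y \<Longrightarrow> b \<in> Y \<Longrightarrow> bij_betw G' (HY a b) (HZ (F' a) (F' b))"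
    using assms(2) unfolding cat_iso_by_def by blast+
  have "bij_betw (F' \<circ> F) X Z" using b1 b2 by (rule bij_betw_trans)
  then have B: "bij_betw F'' X Z" using assms(3) bij_betw_cong[of X F'' "F' \<circ> F" Z] by simp
  have H: "bij_betw G'' (HX a b) (HZ (F'' a) (F'' b))" if ab: "a \<in> X" "b \<in> X" for a b
  proof -
    have Fa: "F a \<in> Y" "F b \<in> Y" using b1 ab unfolding bij_betw_def by blast+
    have "bij_betw (G' \<circ> G) (HX a b) (HZ (F' (F a)) (F' (F b)))"
      using h1[OF ab] h2[OF Fa] by (rule bij_betw_trans)
    then have "bij_betw G'' (HX a b) (HZ (F' (F a)) (F' (F b)))"
      using assms(4)[OF ab] bij_betw_cong[of "HX a b" G'' "G' \<circ> G"] by simp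
    then show ?thesis using assms(3) ab by simp
  qed
  show ?thesis unfolding cat_iso_by_def using B H by blast
qed

context adjk begin

lemma Phi_iso: "cat_iso_by (DescS y) DescH (AlgS y) AlgH Phi id"
  unfolding cat_iso_by_def
proof (intro conjI ballI)
  show "bij_betw Phi (DescS y) (AlgS y)"
  proof (rule bij_betw_byWitness[where f'=Aa])
    show "\<forall>a\<in>DescS y. Aa (Phi a) = a" using Aa_Phi by auto
    show "\<forall>a'\<in>AlgS y. Phi (Aa a') = a'" using Phi_Aa by auto
    show "Phi ` DescS y \<subseteq> AlgS y" using Phi_mem by auto
    show "Aa ` AlgS y \<subseteq> DescS y" using Aa_mem by auto
  qed
next
  fix a b assume "a \<in> DescS y" "b \<in> DescS y"
  then show "bij_betw id (DescH a b) (AlgH (Phi a) (Phi b))"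
    using hom_eq by (cases a, cases b) (simp add: bij_betw_id)
qed

lemma Aa_iso: "cat_iso_by (AlgS y) AlgH (DescS y) DescH Aa id"
  unfolding cat_iso_by_def
proof (intro conjI ballI)
  show "bij_betw Aa (AlgS y) (DescS y)"
  proof (rule bij_betw_byWitness[where f'=Phi])
    show "\<forall>a\<in>DescS y. Aa (Phi a) = a" using Aa_Phi by auto
    show "\<forall>a'\<in>AlgS y. Phi (Aa a') = a'" using Phi_Aa by auto
    show "Phi ` DescS y \<subseteq> AlgS y" using Phi_mem by auto
    show "Aa ` AlgS y \<subseteq> DescS y" using Aa_mem by auto
  qed
next
  fix a b assume ab: "a \<in> AlgS y" "b \<in> AlgS y"
  then have m: "Aa a \<in> DescS y" "Aa b \<in> DescS y" using Aa_mem by (cases a, cases b, auto)+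
  have "DescH (Aa a) (Aa b) = AlgH (Phi (Aa a)) (Phi (Aa b))"
    using hom_eq m by (cases "Aa a", cases "Aa b") simp
  also have "\<dots> = AlgH a b" using Phi_Aa ab by (cases a, cases b) simp
  finally show "bij_betw id (AlgH a b) (DescH (Aa a) (Aa b))" by (simp add: bij_betw_id)
qed

end

locale adjl = tc +
  fixes p l \<eta>a \<epsilon>a
  assumes adj: "adjunction C l p \<eta>a \<epsilon>a"
begin

lemma adjf[simp]: "p \<in> Arr" "l \<in> Arr" "sr l = tg p" "tg l = sr p" "\<eta>a \<in> Cel" "dm \<eta>a = ii (tg p)" "cd \<eta>a = p \<odot> l"
  "\<epsilon>a \<in> Cel" "dm \<epsilon>a = l \<odot> p" "cd \<epsilon>a = ii (sr p)"
proof -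
  have "l \<in> Ar C \<and> p \<in> hom1 C (trg1 C l) (src1 C l) \<and>
     \<eta>a \<in> hom2 C (ide1 C (src1 C l)) (cmp C p l) \<and>
     \<epsilon>a \<in> hom2 C (cmp C l p) (ide1 C (trg1 C l))" using adj unfolding adjunction_def by (elim conjE) simp
  then show "p \<in> Arr" "l \<in> Arr" "sr l = tg p" "tg l = sr p" "\<eta>a \<in> Cel" "dm \<eta>a = ii (tg p)" "cd \<eta>a = p \<odot> l"
  "\<epsilon>a \<in> Cel" "dm \<epsilon>a = l \<odot> p" "cd \<epsilon>a = ii (sr p)" by auto
qed

lemma tri1[simp]: "WR \<epsilon>a l \<bullet> WL l \<eta>a = I l"
proof -
  have "vc C (hc C \<epsilon>a (id2 C l)) (hc C (id2 C l) \<eta>a) = id2 C l" using adj unfolding adjunction_def by (elim conjE)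
  then show ?thesis by simp
qed
lemma tri2[simp]: "WL p \<epsilon>a \<bullet> WR \<eta>a p = I p"
proof -
  have "vc C (hc C (id2 C p) \<epsilon>a) (hc C \<eta>a (id2 C p)) = id2 C p" using adj unfolding adjunction_def by (elim conjE)
  then show ?thesis by simp
qed

lemma kan_from_adj: "right_kan C p p (p \<odot> l) (WL p \<epsilon>a)"
  unfolding right_kan_def
proof (intro conjI ballI)
  fix k assume "k \<in> hom1 C (trg1 C p) (trg1 C p)"
  then have k: "k \<in> Arr" "sr k = tg p" "tg k = tg p" by simp_all
  show "bij_betw (\<lambda>\<beta>. WL p \<epsilon>a \<bullet> (\<beta> \<star> I p)) (hom2 C k (p \<odot> l)) (hom2 C (k \<odot> p) p)"
  proof (rule bij_betw_byWitness[where f'="\<lambda>\<sigma>. WR \<sigma> l \<bullet> WL k \<eta>a"])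
    show "\<forall>\<beta>\<in>hom2 C k (p \<odot> l). WR (WL p \<epsilon>a \<bullet> (\<beta> \<star> I p)) l \<bullet> WL k \<eta>a = \<beta>"
    proof
      fix \<beta> assume "\<beta> \<in> hom2 C k (p \<odot> l)"
      then have b: "\<beta> \<in> Cel" "dm \<beta> = k" "cd \<beta> = p \<odot> l" by simp_all
      have n: "WR (WR \<beta> p) l \<bullet> WL k \<eta>a = WL p (WL l \<eta>a) \<bullet> \<beta>"
        using nat_WLR[of \<eta>a \<beta>] b k by simp
      have t0: "WL p (WR \<epsilon>a l) \<bullet> WL p (WL l \<eta>a) = WL p (I l)"
        by (rule WL_pair[OF tri1]) simp_all
      have t: "WL p (WR \<epsilon>a l) \<bullet> WL p (WL l \<eta>a) = I (p \<odot> l)"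
        using t0 by simp
      have "WR (WL p \<epsilon>a \<bullet> (\<beta> \<star> I p)) l \<bullet> WL k \<eta>a = WL p (WR \<epsilon>a l) \<bullet> WR (WR \<beta> p) l \<bullet> WL k \<eta>a"
        using b k by simp
      also have "\<dots> = WL p (WR \<epsilon>a l) \<bullet> WL p (WL l \<eta>a) \<bullet> \<beta>" using n b k by simp
      also have "\<dots> = \<beta>" using vc_pair_ctx[OF t] b k by simp
      finally show "WR (WL p \<epsilon>a \<bullet> (\<beta> \<star> I p)) l \<bullet> WL k \<eta>a = \<beta>" .
    qed
    show "\<forall>\<sigma>\<in>hom2 C (k \<odot> p) p. WL p \<epsilon>a \<bullet> ((WR \<sigma> l \<bullet> WL k \<eta>a) \<star> I p) = \<sigma>"
    proof
      fix \<sigma> assume "\<sigma> \<in> hom2 C (k \<odot> p) p"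
      then have s: "\<sigma> \<in> Cel" "dm \<sigma> = k \<odot> p" "cd \<sigma> = p" by simp_all
      have n: "WL p \<epsilon>a \<bullet> WR (WR \<sigma> l) p = \<sigma> \<bullet> WL k (WL p \<epsilon>a)"
        using nat_WLR[of \<epsilon>a \<sigma>] s k by simp
      have t0: "WL k (WL p \<epsilon>a) \<bullet> WL k (WR \<eta>a p) = WL k (I p)"
        by (rule WL_pair[OF tri2]) (use k in simp_all)
      have t: "WL k (WL p \<epsilon>a) \<bullet> WL k (WR \<eta>a p) = I (k \<odot> p)"
        using t0 k by simp
      have "WL p \<epsilon>a \<bullet> ((WR \<sigma> l \<bullet> WL k \<eta>a) \<star> I p) = WL p \<epsilon>a \<bullet> WR (WR \<sigma> l) p \<bullet> WL k (WR \<eta>a p)"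
        using s k by simp
      also have "\<dots> = \<sigma> \<bullet> WL k (WL p \<epsilon>a) \<bullet> WL k (WR \<eta>a p)" using vc_pair_ctx[OF n] s k by simp
      also have "\<dots> = \<sigma>" using t s k by simp
      finally show "WL p \<epsilon>a \<bullet> ((WR \<sigma> l \<bullet> WL k \<eta>a) \<star> I p) = \<sigma>" .
    qed
    show "(\<lambda>\<beta>. WL p \<epsilon>a \<bullet> (\<beta> \<star> I p)) ` hom2 C k (p \<odot> l) \<subseteq> hom2 C (k \<odot> p) p"
      using k by auto
    show "(\<lambda>\<sigma>. WR \<sigma> l \<bullet> WL k \<eta>a) ` hom2 C (k \<odot> p) p \<subseteq> hom2 C k (p \<odot> l)"
      using k by auto
  qed
qed (simp_all)

lemma codensity_from_adj: "codensity_monad C p (p \<odot> l) (WL p \<epsilon>a) (WL p (WR \<epsilon>a l)) \<eta>a"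
  unfolding codensity_monad_def
proof (intro conjI)
  show "right_kan C p p (p \<odot> l) (WL p \<epsilon>a)" by (rule kan_from_adj)
  have n: "\<epsilon>a \<bullet> WL l (WL p \<epsilon>a) = \<epsilon>a \<bullet> WR (WR \<epsilon>a l) p"
    using nat_WLR[of \<epsilon>a \<epsilon>a] by simp
  have n2: "WL p \<epsilon>a \<bullet> WL p (WL l (WL p \<epsilon>a)) = WL p (\<epsilon>a \<bullet> WR (WR \<epsilon>a l) p)"
    by (rule WL_pair[OF n]) simp_all
  have "WL p \<epsilon>a \<bullet> WL p (WL l (WL p \<epsilon>a)) = WL p \<epsilon>a \<bullet> WL p (WR (WR \<epsilon>a l) p)"
    using n2 by simp
  then show "WL p \<epsilon>a \<bullet> (WL p (WR \<epsilon>a l) \<star> I p) = WL p \<epsilon>a \<bullet> (I (p \<odot> l) \<star> WL p \<epsilon>a)" by simp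
qed (simp_all)

end

context adjk begin

lemma desc_char: "lax_descent_object C p d0 d1 D0 D1 D2 s0 L d \<Psi> \<longleftrightarrow>
  (L \<in> Ob C \<and> d \<in> hom1 C L (trg1 C p) \<and> \<Psi> \<in> hom2 C (cmp C d1 d) (cmp C d0 d) \<and>
   (\<forall>y\<in>Ob C. cat_iso_by (hom1 C y L) (hom2 C) (DescS y) DescH
          (\<lambda>g. (cmp C d g, hc C \<Psi> (id2 C g))) (\<lambda>\<xi>. hc C (id2 C d) \<xi>)))"
  unfolding lax_descent_object_def DescS_def DescH_def by (rule refl)

lemma em_char: "eilenberg_moore C (trg1 C p) T mm et bT u \<mu> \<longleftrightarrow>
  (bT \<in> Ob C \<and> u \<in> hom1 C bT (trg1 C p) \<and> \<mu> \<in> hom2 C (cmp C T u) u \<and>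
   (\<forall>y\<in>Ob C. cat_iso_by (hom1 C y bT) (hom2 C) (AlgS y) AlgH
          (\<lambda>g. (cmp C u g, hc C \<mu> (id2 C g))) (\<lambda>\<xi>. hc C (id2 C u) \<xi>)))"
  unfolding eilenberg_moore_def AlgS_def AlgH_def by (rule refl)

lemma monadic_from_desc:
  assumes ld: "lax_descent_object C p d0 d1 D0 D1 D2 s0 L d \<Psi>"
    and pH: "pH \<in> hom1 C ee L" "d \<odot> pH = p" "\<Psi> \<star> I pH = \<alpha>" "equivalence1 C pH"
  shows "monadic C p"
proof -
  have L: "L \<in> Obs" "d \<in> Arr" "sr d = L" "tg d = bb" "\<Psi> \<in> Cel" "dm \<Psi> = d1 \<odot> d" "cd \<Psi> = d0 \<odot> d"
    and iso: "\<And>y. y \<in> Obs \<Longrightarrow> cat_iso_by (hom1 C y L) (hom2 C) (DescS y) DescH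
          (\<lambda>g. (cmp C d g, hc C \<Psi> (id2 C g))) (\<lambda>\<xi>. hc C (id2 C d) \<xi>)"
  proof -
    have A: "L \<in> Ob C \<and> d \<in> hom1 C L (trg1 C p) \<and> \<Psi> \<in> hom2 C (cmp C d1 d) (cmp C d0 d)"
      using ld unfolding desc_char by blast
    have B: "\<forall>y\<in>Ob C. cat_iso_by (hom1 C y L) (hom2 C) (DescS y) DescH
          (\<lambda>g. (cmp C d g, hc C \<Psi> (id2 C g))) (\<lambda>\<xi>. hc C (id2 C d) \<xi>)"
      using ld unfolding desc_char by blast
    show "L \<in> Obs" "d \<in> Arr" "sr d = L" "tg d = bb" "\<Psi> \<in> Cel" "dm \<Psi> = d1 \<odot> d" "cd \<Psi> = d0 \<odot> d"
      using A by simp_all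
    show "\<And>y. y \<in> Obs \<Longrightarrow> cat_iso_by (hom1 C y L) (hom2 C) (DescS y) DescH
          (\<lambda>g. (cmp C d g, hc C \<Psi> (id2 C g))) (\<lambda>\<xi>. hc C (id2 C d) \<xi>)" using B by blast
  qed
  define \<mu> where "\<mu> = WL kk \<Psi>"
  have mu: "\<mu> \<in> Cel" "dm \<mu> = T \<odot> d" "cd \<mu> = d" unfolding \<mu>_def using L by simp_all
  have em: "eilenberg_moore C (trg1 C p) T mm et L d \<mu>"
    unfolding em_char
  proof (intro conjI ballI)
    fix y assume y: "y \<in> Obs"
    show "cat_iso_by (hom1 C y L) (hom2 C) (AlgS y) AlgH
          (\<lambda>g. (cmp C d g, hc C \<mu> (id2 C g))) (\<lambda>\<xi>. hc C (id2 C d) \<xi>)"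
    proof (rule cat_iso_comp[OF iso[OF y] Phi_iso])
      fix g assume "g \<in> hom1 C y L"
      then have g: "g \<in> Arr" "sr g = y" "tg g = L" by simp_all
      show "(d \<odot> g, \<mu> \<star> I g) = Phi (d \<odot> g, \<Psi> \<star> I g)"
        unfolding Phi_def \<mu>_def using g L by simp
    qed simp
  qed (use L mu in simp_all)
  have pH2: "pH \<in> Arr" "sr pH = ee" "tg pH = L" using pH(1) by simp_all
  have "\<mu> \<star> I pH = WL kk (\<Psi> \<star> I pH)" unfolding \<mu>_def using pH2 L by simp
  also have "\<dots> = \<gamma>" using pH(3) by simp
  finally have g: "\<mu> \<star> I pH = \<gamma>" .
  show ?thesis unfolding monadic_def
    using cod em pH(1,2,4) g by (intro conjI exI[of _ T] exI[of _ \<gamma>] exI[of _ mm] exI[of _ et]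
          exI[of _ L] exI[of _ d] exI[of _ \<mu>] exI[of _ pH]) simp_all
qed

lemma desc_from_em:
  assumes em: "eilenberg_moore C (trg1 C p) T mm et bT u \<mu>"
    and pT: "pT \<in> hom1 C ee bT" "u \<odot> pT = p" "\<mu> \<star> I pT = \<gamma>" "equivalence1 C pT"
  shows "effective_faithful C p"
proof -
  have L: "bT \<in> Obs" "u \<in> Arr" "sr u = bT" "tg u = bb" "\<mu> \<in> Cel" "dm \<mu> = T \<odot> u" "cd \<mu> = u"
    and iso: "\<And>y. y \<in> Obs \<Longrightarrow> cat_iso_by (hom1 C y bT) (hom2 C) (AlgS y) AlgH
          (\<lambda>g. (cmp C u g, hc C \<mu> (id2 C g))) (\<lambda>\<xi>. hc C (id2 C u) \<xi>)"
  proof -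
    have A: "bT \<in> Ob C \<and> u \<in> hom1 C bT (trg1 C p) \<and> \<mu> \<in> hom2 C (cmp C T u) u"
      using em unfolding em_char by blast
    have B: "\<forall>y\<in>Ob C. cat_iso_by (hom1 C y bT) (hom2 C) (AlgS y) AlgH
          (\<lambda>g. (cmp C u g, hc C \<mu> (id2 C g))) (\<lambda>\<xi>. hc C (id2 C u) \<xi>)"
      using em unfolding em_char by blast
    show "bT \<in> Obs" "u \<in> Arr" "sr u = bT" "tg u = bb" "\<mu> \<in> Cel" "dm \<mu> = T \<odot> u" "cd \<mu> = u"
      using A by simp_all
    show "\<And>y. y \<in> Obs \<Longrightarrow> cat_iso_by (hom1 C y bT) (hom2 C) (AlgS y) AlgH
          (\<lambda>g. (cmp C u g, hc C \<mu> (id2 C g))) (\<lambda>\<xi>. hc C (id2 C u) \<xi>)" using B by blast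
  qed
  define \<Psi> where "\<Psi> = WL d0 \<mu> \<bullet> WR \<rho> u"
  have psi: "\<Psi> \<in> Cel" "dm \<Psi> = d1 \<odot> u" "cd \<Psi> = d0 \<odot> u" unfolding \<Psi>_def using L by simp_all
  have ld: "lax_descent_object C p d0 d1 D0 D1 D2 s0 bT u \<Psi>"
    unfolding desc_char
  proof (intro conjI ballI)
    fix y assume y: "y \<in> Obs"
    show "cat_iso_by (hom1 C y bT) (hom2 C) (DescS y) DescH
          (\<lambda>g. (cmp C u g, hc C \<Psi> (id2 C g))) (\<lambda>\<xi>. hc C (id2 C u) \<xi>)"
    proof (rule cat_iso_comp[OF iso[OF y] Aa_iso])
      fix g assume "g \<in> hom1 C y bT"
      then have g: "g \<in> Arr" "sr g = y" "tg g = bT" by simp_all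
      show "(u \<odot> g, \<Psi> \<star> I g) = Aa (u \<odot> g, \<mu> \<star> I g)"
        unfolding Aa_def \<Psi>_def using g L by simp
    qed simp
  qed (use L psi in simp_all)
  have pT2: "pT \<in> Arr" "sr pT = ee" "tg pT = bT" using pT(1) by simp_all
  have r: "WR (WR \<rho> u) pT = WR \<rho> p"
    using WR_cmp[of u pT \<rho>] pT2 L pT(2) by simp
  have m: "WL d0 (WR \<mu> pT) = WL d0 \<gamma>" using pT(3) by simp
  have "\<Psi> \<star> I pT = WL d0 (WR \<mu> pT) \<bullet> WR (WR \<rho> u) pT" unfolding \<Psi>_def using pT2 L by simp
  also have "\<dots> = \<alpha>" unfolding m r by (rule \<rho>_eq)
  finally have a: "\<Psi> \<star> I pT = \<alpha>" .
  show ?thesis unfolding effective_faithful_def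
    using ck ld pT(1,2,4) a by blast
qed

end

context tc begin

lemma adjD: assumes "adjunction C l r \<eta> \<epsilon>"
  shows "l \<in> Arr" "r \<in> Arr" "sr r = tg l" "tg r = sr l" "\<eta> \<in> Cel" "dm \<eta> = ii (sr l)" "cd \<eta> = r \<odot> l"
  "\<epsilon> \<in> Cel" "dm \<epsilon> = l \<odot> r" "cd \<epsilon> = ii (tg l)"
  "WR \<epsilon> l \<bullet> WL l \<eta> = I l" "WL r \<epsilon> \<bullet> WR \<eta> r = I r"
proof -
  have A: "l \<in> Ar C \<and> r \<in> hom1 C (trg1 C l) (src1 C l) \<and>
     \<eta> \<in> hom2 C (ide1 C (src1 C l)) (cmp C r l) \<and>
     \<epsilon> \<in> hom2 C (cmp C l r) (ide1 C (trg1 C l))" using assms unfolding adjunction_def by (elim conjE) simp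
  then show "l \<in> Arr" "r \<in> Arr" "sr r = tg l" "tg r = sr l" "\<eta> \<in> Cel" "dm \<eta> = ii (sr l)" "cd \<eta> = r \<odot> l"
  "\<epsilon> \<in> Cel" "dm \<epsilon> = l \<odot> r" "cd \<epsilon> = ii (tg l)" by auto
  have "vc C (hc C \<epsilon> (id2 C l)) (hc C (id2 C l) \<eta>) = id2 C l" using assms unfolding adjunction_def by (elim conjE)
  then show "WR \<epsilon> l \<bullet> WL l \<eta> = I l" by simp
  have "vc C (hc C (id2 C r) \<epsilon>) (hc C \<eta> (id2 C r)) = id2 C r" using assms unfolding adjunction_def by (elim conjE)
  then show "WL r \<epsilon> \<bullet> WR \<eta> r = I r" by simp
qed

lemma adjI: assumes "l \<in> Arr" "r \<in> Arr" "sr r = tg l" "tg r = sr l" "\<eta> \<in> Cel" "dm \<eta> = ii (sr l)" "cd \<eta> = r \<odot> l"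
  "\<epsilon> \<in> Cel" "dm \<epsilon> = l \<odot> r" "cd \<epsilon> = ii (tg l)"
  "WR \<epsilon> l \<bullet> WL l \<eta> = I l" "WL r \<epsilon> \<bullet> WR \<eta> r = I r"
  shows "adjunction C l r \<eta> \<epsilon>"
  unfolding adjunction_def using assms by simp

lemma adj_comp: assumes a1: "adjunction C f u \<eta>1 \<epsilon>1" and a2: "adjunction C g e \<eta>2 \<epsilon>2" and st: "sr g = tg f"
  shows "adjunction C (g \<odot> f) (u \<odot> e) (WL u (WR \<eta>2 f) \<bullet> \<eta>1) (\<epsilon>2 \<bullet> WL g (WR \<epsilon>1 e))"
proof -
  note A = adjD[OF a1] and B = adjD[OF a2]
  have n1: "WR (WR (WR \<epsilon>1 e) g) f \<bullet> WL f (WL u (WR \<eta>2 f)) = WR \<eta>2 f \<bullet> WR \<epsilon>1 f"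
    using nat_WLR[of "WR \<eta>2 f" \<epsilon>1] A B st by simp
  have n1': "WL g (WR (WR (WR \<epsilon>1 e) g) f) \<bullet> WL g (WL f (WL u (WR \<eta>2 f))) = WL g (WR \<eta>2 f) \<bullet> WL g (WR \<epsilon>1 f)"
  proof -
    have "WL g (WR (WR (WR \<epsilon>1 e) g) f) \<bullet> WL g (WL f (WL u (WR \<eta>2 f))) = WL g (WR \<eta>2 f \<bullet> WR \<epsilon>1 f)"
      by (rule WL_pair[OF n1]) (use A B st in simp_all)
    then show ?thesis using A B st by simp
  qed
  have t1a: "WR (WR \<epsilon>2 g) f \<bullet> WL g (WR \<eta>2 f) = I (g \<odot> f)"
  proof -
    have "WR (WR \<epsilon>2 g) f \<bullet> WR (WL g \<eta>2) f = WR (I g) f" by (rule WR_pair[OF B(11)]) (use A B st in simp_all)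
    then show ?thesis using A B st by simp
  qed
  have t1b: "WL g (WR \<epsilon>1 f) \<bullet> WL g (WL f \<eta>1) = I (g \<odot> f)"
  proof -
    have "WL g (WR \<epsilon>1 f) \<bullet> WL g (WL f \<eta>1) = WL g (I f)" by (rule WL_pair[OF A(11)]) (use A B st in simp_all)
    then show ?thesis using A B st by simp
  qed
  have T1: "WR (\<epsilon>2 \<bullet> WL g (WR \<epsilon>1 e)) (g \<odot> f) \<bullet> WL (g \<odot> f) (WL u (WR \<eta>2 f) \<bullet> \<eta>1) = I (g \<odot> f)"
  proof -
    have "WR (\<epsilon>2 \<bullet> WL g (WR \<epsilon>1 e)) (g \<odot> f) \<bullet> WL (g \<odot> f) (WL u (WR \<eta>2 f) \<bullet> \<eta>1) =
      WR (WR \<epsilon>2 g) f \<bullet> WL g (WR (WR (WR \<epsilon>1 e) g) f) \<bullet> WL g (WL f (WL u (WR \<eta>2 f))) \<bullet> WL g (WL f \<eta>1)"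
      using A B st by simp
    also have "\<dots> = WR (WR \<epsilon>2 g) f \<bullet> WL g (WR \<eta>2 f) \<bullet> WL g (WR \<epsilon>1 f) \<bullet> WL g (WL f \<eta>1)"
      using vc_pair_ctx[OF n1'] A B st by simp
    also have "\<dots> = WL g (WR \<epsilon>1 f) \<bullet> WL g (WL f \<eta>1)"
      using vc_pair_ctx[OF t1a] A B st by simp
    also have "\<dots> = I (g \<odot> f)" by (rule t1b)
    finally show ?thesis .
  qed
  have n2: "WL e (WL g (WR \<epsilon>1 e)) \<bullet> WR (WR (WR \<eta>2 f) u) e = WR \<eta>2 e \<bullet> WR \<epsilon>1 e"
    using nat_WLR[of "WR \<epsilon>1 e" \<eta>2] A B st by simp
  have n2': "WL u (WL e (WL g (WR \<epsilon>1 e))) \<bullet> WL u (WR (WR (WR \<eta>2 f) u) e) = WL u (WR \<eta>2 e) \<bullet> WL u (WR \<epsilon>1 e)"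
  proof -
    have "WL u (WL e (WL g (WR \<epsilon>1 e))) \<bullet> WL u (WR (WR (WR \<eta>2 f) u) e) = WL u (WR \<eta>2 e \<bullet> WR \<epsilon>1 e)"
      by (rule WL_pair[OF n2]) (use A B st in simp_all)
    then show ?thesis using A B st by simp
  qed
  have t2a: "WL u (WL e \<epsilon>2) \<bullet> WL u (WR \<eta>2 e) = I (u \<odot> e)"
  proof -
    have "WL u (WL e \<epsilon>2) \<bullet> WL u (WR \<eta>2 e) = WL u (I e)" by (rule WL_pair[OF B(12)]) (use A B st in simp_all)
    then show ?thesis using A B st by simp
  qed
  have t2b: "WL u (WR \<epsilon>1 e) \<bullet> WR (WR \<eta>1 u) e = I (u \<odot> e)"
  proof -
    have "WR (WL u \<epsilon>1) e \<bullet> WR (WR \<eta>1 u) e = WR (I u) e" by (rule WR_pair[OF A(12)]) (use A B st in simp_all)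
    then show ?thesis using A B st by simp
  qed
  have T2: "WL (u \<odot> e) (\<epsilon>2 \<bullet> WL g (WR \<epsilon>1 e)) \<bullet> WR (WL u (WR \<eta>2 f) \<bullet> \<eta>1) (u \<odot> e) = I (u \<odot> e)"
  proof -
    have "WL (u \<odot> e) (\<epsilon>2 \<bullet> WL g (WR \<epsilon>1 e)) \<bullet> WR (WL u (WR \<eta>2 f) \<bullet> \<eta>1) (u \<odot> e) =
      WL u (WL e \<epsilon>2) \<bullet> WL u (WL e (WL g (WR \<epsilon>1 e))) \<bullet> WL u (WR (WR (WR \<eta>2 f) u) e) \<bullet> WR (WR \<eta>1 u) e"
      using A B st by simp
    also have "\<dots> = WL u (WL e \<epsilon>2) \<bullet> WL u (WR \<eta>2 e) \<bullet> WL u (WR \<epsilon>1 e) \<bullet> WR (WR \<eta>1 u) e"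
      using vc_pair_ctx[OF n2'] A B st by simp
    also have "\<dots> = WL u (WR \<epsilon>1 e) \<bullet> WR (WR \<eta>1 u) e"
      using vc_pair_ctx[OF t2a] A B st by simp
    also have "\<dots> = I (u \<odot> e)" by (rule t2b)
    finally show ?thesis .
  qed
  show ?thesis
    by (rule adjI) (use A B st T1 T2 in simp_all)
qed

end

context tc begin

lemma inv2D: assumes "invertible2 C \<xi>"
  shows "\<exists>\<theta>. \<theta> \<in> Cel \<and> dm \<theta> = cd \<xi> \<and> cd \<theta> = dm \<xi> \<and> \<theta> \<bullet> \<xi> = I (dm \<xi>) \<and> \<xi> \<bullet> \<theta> = I (cd \<xi>)"
  using assms unfolding invertible2_def by auto

lemma idem_inv: assumes "\<phi> \<in> Cel" "\<psi> \<in> Cel" "dm \<phi> = f" "cd \<phi> = f" "dm \<psi> = f" "cd \<psi> = f"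
  "\<phi> \<bullet> \<phi> = \<phi>" "\<phi> \<bullet> \<psi> = I f"
  shows "\<phi> = I f"
proof -
  have "\<phi> = \<phi> \<bullet> I f" using vc_id'(2)[OF assms(1,3)] by (rule sym)
  also have "\<dots> = \<phi> \<bullet> (\<phi> \<bullet> \<psi>)" by (simp only: assms(8))
  also have "\<dots> = (\<phi> \<bullet> \<phi>) \<bullet> \<psi>" by (rule vc_assoc) (simp_all only: assms)
  also have "\<dots> = \<phi> \<bullet> \<psi>" by (simp only: assms(7))
  also have "\<dots> = I f" by (rule assms(8))
  finally show ?thesis .
qed

lemma equiv_left_adj: assumes "equivalence1 C e" shows "\<exists>g \<eta> \<epsilon>. adjunction C g e \<eta> \<epsilon>"
proof -
  from assms obtain g \<eta>0 \<epsilon>0 where e: "e \<in> Arr" and g: "g \<in> hom1 C (tg e) (sr e)"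
    and h: "\<eta>0 \<in> hom2 C (ii (sr e)) (g \<odot> e)" "\<epsilon>0 \<in> hom2 C (e \<odot> g) (ii (tg e))"
    and i: "invertible2 C \<eta>0" "invertible2 C \<epsilon>0"
    unfolding equivalence1_def by blast
  have G: "g \<in> Arr" "sr g = tg e" "tg g = sr e" "\<eta>0 \<in> Cel" "dm \<eta>0 = ii (sr e)" "cd \<eta>0 = g \<odot> e"
    "\<epsilon>0 \<in> Cel" "dm \<epsilon>0 = e \<odot> g" "cd \<epsilon>0 = ii (tg e)" using g h by simp_all
  obtain \<eta>i where Hi: "\<eta>i \<in> Cel" "dm \<eta>i = g \<odot> e" "cd \<eta>i = ii (sr e)" "\<eta>i \<bullet> \<eta>0 = I (ii (sr e))" "\<eta>0 \<bullet> \<eta>i = I (g \<odot> e)"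
    using inv2D[OF i(1)] G by auto
  obtain \<epsilon>i where Ei: "\<epsilon>i \<in> Cel" "dm \<epsilon>i = ii (tg e)" "cd \<epsilon>i = e \<odot> g" "\<epsilon>i \<bullet> \<epsilon>0 = I (e \<odot> g)" "\<epsilon>0 \<bullet> \<epsilon>i = I (ii (tg e))"
    using inv2D[OF i(2)] G by auto
  note all = e G Hi Ei
  define \<epsilon>' where "\<epsilon>' = \<eta>i \<bullet> WL g (WR \<epsilon>0 e) \<bullet> WR (WR \<eta>0 g) e"
  have E': "\<epsilon>' \<in> Cel" "dm \<epsilon>' = g \<odot> e" "cd \<epsilon>' = ii (sr e)" unfolding \<epsilon>'_def using all by simp_all
  note all = all E'
  have a: "WR (WR (WR \<eta>0 g) e) g \<bullet> WL g \<epsilon>i = WL g (WL e (WL g \<epsilon>i)) \<bullet> WR \<eta>0 g"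
    using nat_WLR[of "WL g \<epsilon>i" \<eta>0] all by simp
  have b: "WR (WR \<epsilon>0 e) g \<bullet> WL e (WL g \<epsilon>i) = \<epsilon>i \<bullet> \<epsilon>0"
    using nat_WLR[of \<epsilon>i \<epsilon>0] all by simp
  have b2: "WL g (WR (WR \<epsilon>0 e) g) \<bullet> WL g (WL e (WL g \<epsilon>i)) = I (g \<odot> e \<odot> g)"
  proof -
    have "WL g (WR (WR \<epsilon>0 e) g) \<bullet> WL g (WL e (WL g \<epsilon>i)) = WL g (\<epsilon>i \<bullet> \<epsilon>0)"
      by (rule WL_pair[OF b]) (use all in simp_all)
    then show ?thesis using all by simp
  qed
  have c: "WR \<eta>i g \<bullet> WR \<eta>0 g = I g"
  proof -
    have "WR \<eta>i g \<bullet> WR \<eta>0 g = WR (I (ii (sr e))) g" by (rule WR_pair[OF Hi(4)]) (use all in simp_all)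
    then show ?thesis using all by simp
  qed
  have TL: "WR \<epsilon>' g \<bullet> WL g \<epsilon>i = I g"
  proof -
    have "WR \<epsilon>' g \<bullet> WL g \<epsilon>i = WR \<eta>i g \<bullet> WL g (WR (WR \<epsilon>0 e) g) \<bullet> WR (WR (WR \<eta>0 g) e) g \<bullet> WL g \<epsilon>i"
      unfolding \<epsilon>'_def using all by simp
    also have "\<dots> = WR \<eta>i g \<bullet> WL g (WR (WR \<epsilon>0 e) g) \<bullet> WL g (WL e (WL g \<epsilon>i)) \<bullet> WR \<eta>0 g"
      using a all by simp
    also have "\<dots> = WR \<eta>i g \<bullet> WR \<eta>0 g" using vc_pair_ctx[OF b2] all by simp
    also have "\<dots> = I g" by (rule c)
    finally show ?thesis .
  qed
  define \<epsilon>'i where "\<epsilon>'i = WR (WR \<eta>i g) e \<bullet> WL g (WR \<epsilon>i e) \<bullet> \<eta>0"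
  have E'i: "\<epsilon>'i \<in> Cel" "dm \<epsilon>'i = ii (sr e)" "cd \<epsilon>'i = g \<odot> e" unfolding \<epsilon>'i_def using all by simp_all
  have inv1: "WR (WR \<eta>0 g) e \<bullet> WR (WR \<eta>i g) e = I (g \<odot> e \<odot> g \<odot> e)"
  proof -
    have "WR \<eta>0 g \<bullet> WR \<eta>i g = WR (I (g \<odot> e)) g" by (rule WR_pair[OF Hi(5)]) (use all in simp_all)
    then have x: "WR \<eta>0 g \<bullet> WR \<eta>i g = I (g \<odot> e \<odot> g)" using all by simp
    have "WR (WR \<eta>0 g) e \<bullet> WR (WR \<eta>i g) e = WR (I (g \<odot> e \<odot> g)) e" by (rule WR_pair[OF x]) (use all in simp_all)
    then show ?thesis using all by simp
  qed
  have inv2: "WL g (WR \<epsilon>0 e) \<bullet> WL g (WR \<epsilon>i e) = I (g \<odot> e)"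
  proof -
    have "WR \<epsilon>0 e \<bullet> WR \<epsilon>i e = WR (I (ii (tg e))) e" by (rule WR_pair[OF Ei(5)]) (use all in simp_all)
    then have "WR \<epsilon>0 e \<bullet> WR \<epsilon>i e = I e" using all by simp
    then have "WL g (WR \<epsilon>0 e) \<bullet> WL g (WR \<epsilon>i e) = WL g (I e)" by (rule WL_pair) (use all in simp_all)
    then show ?thesis using all by simp
  qed
  have EE: "\<epsilon>' \<bullet> \<epsilon>'i = I (ii (sr e))"
  proof -
    have "\<epsilon>' \<bullet> \<epsilon>'i = \<eta>i \<bullet> WL g (WR \<epsilon>0 e) \<bullet> WR (WR \<eta>0 g) e \<bullet> WR (WR \<eta>i g) e \<bullet> WL g (WR \<epsilon>i e) \<bullet> \<eta>0"
      unfolding \<epsilon>'_def \<epsilon>'i_def using all by simp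
    also have "\<dots> = \<eta>i \<bullet> WL g (WR \<epsilon>0 e) \<bullet> WL g (WR \<epsilon>i e) \<bullet> \<eta>0" using vc_pair_ctx[OF inv1] all by simp
    also have "\<dots> = \<eta>i \<bullet> \<eta>0" using vc_pair_ctx[OF inv2] all by simp
    also have "\<dots> = I (ii (sr e))" by (rule Hi(4))
    finally show ?thesis .
  qed
  text \<open>right triangle via idempotence\<close>
  define \<phi> where "\<phi> = WL e \<epsilon>' \<bullet> WR \<epsilon>i e"
  define \<psi> where "\<psi> = WR \<epsilon>0 e \<bullet> WL e \<epsilon>'i"
  have P: "\<phi> \<in> Cel" "dm \<phi> = e" "cd \<phi> = e" "\<psi> \<in> Cel" "dm \<psi> = e" "cd \<psi> = e"
    unfolding \<phi>_def \<psi>_def using all E'i by simp_all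
  have PP: "\<phi> \<bullet> \<psi> = I e"
  proof -
    have x: "WR \<epsilon>i e \<bullet> WR \<epsilon>0 e = I (e \<odot> g \<odot> e)"
    proof -
      have "WR \<epsilon>i e \<bullet> WR \<epsilon>0 e = WR (I (e \<odot> g)) e" by (rule WR_pair[OF Ei(4)]) (use all in simp_all)
      then show ?thesis using all by simp
    qed
    have y: "WL e \<epsilon>' \<bullet> WL e \<epsilon>'i = I e"
    proof -
      have "WL e \<epsilon>' \<bullet> WL e \<epsilon>'i = WL e (I (ii (sr e)))" by (rule WL_pair[OF EE]) (use all E'i in simp_all)
      then show ?thesis using all by simp
    qed
    have "\<phi> \<bullet> \<psi> = WL e \<epsilon>' \<bullet> WR \<epsilon>i e \<bullet> WR \<epsilon>0 e \<bullet> WL e \<epsilon>'i" unfolding \<phi>_def \<psi>_def using all E'i by simp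
    also have "\<dots> = WL e \<epsilon>' \<bullet> WL e \<epsilon>'i" using vc_pair_ctx[OF x] all E'i by simp
    also have "\<dots> = I e" by (rule y)
    finally show ?thesis .
  qed
  have n1: "WR \<epsilon>i e \<bullet> WL e \<epsilon>' = WL e (WL g (WL e \<epsilon>')) \<bullet> WR (WR (WR \<epsilon>i e) g) e"
    using nat_WLR[of "WL e \<epsilon>'" \<epsilon>i] all by simp
  have n2: "\<epsilon>' \<bullet> WL g (WL e \<epsilon>') = \<epsilon>' \<bullet> WR (WR \<epsilon>' g) e"
    using nat_WLR[of \<epsilon>' \<epsilon>'] all by simp
  have n2': "WL e \<epsilon>' \<bullet> WL e (WL g (WL e \<epsilon>')) = WL e \<epsilon>' \<bullet> WL e (WR (WR \<epsilon>' g) e)"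
  proof -
    have "WL e \<epsilon>' \<bullet> WL e (WL g (WL e \<epsilon>')) = WL e (\<epsilon>' \<bullet> WR (WR \<epsilon>' g) e)"
      by (rule WL_pair[OF n2]) (use all in simp_all)
    then show ?thesis using all by simp
  qed
  have n3: "WR (WR \<epsilon>i e) g \<bullet> \<epsilon>i = WL e (WL g \<epsilon>i) \<bullet> \<epsilon>i"
    using nat_WLR[of \<epsilon>i \<epsilon>i] all by simp
  have n3': "WR (WR (WR \<epsilon>i e) g) e \<bullet> WR \<epsilon>i e = WL e (WL g (WR \<epsilon>i e)) \<bullet> WR \<epsilon>i e"
  proof -
    have "WR (WR (WR \<epsilon>i e) g) e \<bullet> WR \<epsilon>i e = WR (WL e (WL g \<epsilon>i) \<bullet> \<epsilon>i) e"
      by (rule WR_pair[OF n3]) (use all in simp_all)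
    then show ?thesis using all by simp
  qed
  have tl': "WL e (WR (WR \<epsilon>' g) e) \<bullet> WL e (WL g (WR \<epsilon>i e)) = I (e \<odot> g \<odot> e)"
  proof -
    have "WR (WR \<epsilon>' g) e \<bullet> WR (WL g \<epsilon>i) e = WR (I g) e" by (rule WR_pair[OF TL]) (use all in simp_all)
    then have "WR (WR \<epsilon>' g) e \<bullet> WL g (WR \<epsilon>i e) = I (g \<odot> e)" using all by simp
    then have "WL e (WR (WR \<epsilon>' g) e) \<bullet> WL e (WL g (WR \<epsilon>i e)) = WL e (I (g \<odot> e))" by (rule WL_pair) (use all in simp_all)
    then show ?thesis using all by simp
  qed
  have PH: "\<phi> \<bullet> \<phi> = \<phi>"
  proof -
    have "\<phi> \<bullet> \<phi> = WL e \<epsilon>' \<bullet> WR \<epsilon>i e \<bullet> WL e \<epsilon>' \<bullet> WR \<epsilon>i e" unfolding \<phi>_def using all by simp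
    also have "\<dots> = WL e \<epsilon>' \<bullet> WL e (WL g (WL e \<epsilon>')) \<bullet> WR (WR (WR \<epsilon>i e) g) e \<bullet> WR \<epsilon>i e"
      using vc_pair_ctx[OF n1] all by simp
    also have "\<dots> = WL e \<epsilon>' \<bullet> WL e (WR (WR \<epsilon>' g) e) \<bullet> WR (WR (WR \<epsilon>i e) g) e \<bullet> WR \<epsilon>i e"
      using vc_pair_ctx[OF n2'] all by simp
    also have "\<dots> = WL e \<epsilon>' \<bullet> WL e (WR (WR \<epsilon>' g) e) \<bullet> WL e (WL g (WR \<epsilon>i e)) \<bullet> WR \<epsilon>i e"
      using n3' all by simp
    also have "\<dots> = WL e \<epsilon>' \<bullet> WR \<epsilon>i e" using vc_pair_ctx[OF tl'] all by simp
    finally show ?thesis unfolding \<phi>_def .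
  qed
  have TR: "\<phi> = I e" by (rule idem_inv[OF P(1,4,2,3,5,6) PH PP])
  have "adjunction C g e \<epsilon>i \<epsilon>'"
    by (rule adjI) (use all TL TR[unfolded \<phi>_def] in simp_all)
  then show ?thesis by blast
qed

end

locale codl = tc +
  fixes p T \<gamma> mm et
  assumes cod: "codensity_monad C p T \<gamma> mm et"
begin

lemma rk: "right_kan C p p T \<gamma>" using cod unfolding codensity_monad_def by blast

lemma codf[simp]: "p \<in> Arr" "T \<in> Arr" "sr T = tg p" "tg T = tg p" "\<gamma> \<in> Cel" "dm \<gamma> = T \<odot> p" "cd \<gamma> = p"
  "mm \<in> Cel" "dm mm = T \<odot> T" "cd mm = T" "et \<in> Cel" "dm et = ii (tg p)" "cd et = T"
proof -
  have a: "p \<in> Ar C \<and> T \<in> hom1 C (trg1 C p) (trg1 C p) \<and> \<gamma> \<in> hom2 C (cmp C T p) p" using rk unfolding right_kan_def by (elim conjE) simp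
  have b: "mm \<in> hom2 C (cmp C T T) T \<and> et \<in> hom2 C (ide1 C (trg1 C p)) T" using cod unfolding codensity_monad_def by (elim conjE) simp
  show "p \<in> Arr" "T \<in> Arr" "sr T = tg p" "tg T = tg p" "\<gamma> \<in> Cel" "dm \<gamma> = T \<odot> p" "cd \<gamma> = p"
  "mm \<in> Cel" "dm mm = T \<odot> T" "cd mm = T" "et \<in> Cel" "dm et = ii (tg p)" "cd et = T" using a b by auto
qed

lemma cod_m: "\<gamma> \<bullet> WR mm p = \<gamma> \<bullet> WL T \<gamma>"
proof -
  have "vc C \<gamma> (hc C mm (id2 C p)) = vc C \<gamma> (hc C (id2 C T) \<gamma>)" using cod unfolding codensity_monad_def by (elim conjE)
  then show ?thesis by simp
qed
lemma cod_e[simp]: "\<gamma> \<bullet> WR et p = I p"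
proof -
  have "vc C \<gamma> (hc C et (id2 C p)) = id2 C p" using cod unfolding codensity_monad_def by (elim conjE)
  then show ?thesis by simp
qed

lemma kan_bij: "k \<in> Arr \<Longrightarrow> sr k = tg p \<Longrightarrow> tg k = tg p \<Longrightarrow>
   bij_betw (\<lambda>\<beta>. \<gamma> \<bullet> (\<beta> \<star> I p)) (hom2 C k T) (hom2 C (k \<odot> p) p)"
proof -
  assume "k \<in> Arr" "sr k = tg p" "tg k = tg p"
  then have "k \<in> hom1 C (trg1 C p) (trg1 C p)" by simp
  moreover have "\<forall>k\<in>hom1 C (trg1 C p) (trg1 C p).
        bij_betw (\<lambda>\<beta>. vc C \<gamma> (hc C \<beta> (id2 C p))) (hom2 C k T) (hom2 C (cmp C k p) p)"
    using rk unfolding right_kan_def by (elim conjE)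
  ultimately show ?thesis by blast
qed

lemma kan_uniq: assumes "k \<in> Arr" "sr k = tg p" "tg k = tg p" "\<beta> \<in> Cel" "dm \<beta> = k" "cd \<beta> = T"
   "\<beta>' \<in> Cel" "dm \<beta>' = k" "cd \<beta>' = T" "\<gamma> \<bullet> WR \<beta> p = \<gamma> \<bullet> WR \<beta>' p"
  shows "\<beta> = \<beta>'"
proof -
  have "\<beta> \<in> hom2 C k T" "\<beta>' \<in> hom2 C k T" using assms(4-9) by simp_all
  moreover have "inj_on (\<lambda>\<beta>. \<gamma> \<bullet> (\<beta> \<star> I p)) (hom2 C k T)"
    using kan_bij[OF assms(1-3)] by (rule bij_betw_imp_inj_on)
  ultimately show ?thesis using assms(10) unfolding inj_on_def to_WR by blast
qed

lemma m_assoc: "mm \<bullet> WL T mm = mm \<bullet> WR mm T"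
proof (rule kan_uniq[of "T \<odot> T \<odot> T"])
  have n: "WR mm p \<bullet> WL T (WL T \<gamma>) = WL T \<gamma> \<bullet> WR (WR mm T) p"
    using nat_WLR[of \<gamma> mm] by simp
  have c1: "WL T \<gamma> \<bullet> WL T (WR mm p) = WL T \<gamma> \<bullet> WL T (WL T \<gamma>)"
  proof -
    have "WL T \<gamma> \<bullet> WL T (WR mm p) = WL T (\<gamma> \<bullet> WL T \<gamma>)" by (rule WL_pair[OF cod_m]) simp_all
    then show ?thesis by simp
  qed
  have "\<gamma> \<bullet> WR (mm \<bullet> WL T mm) p = \<gamma> \<bullet> WR mm p \<bullet> WL T (WR mm p)" by simp
  also have "\<dots> = \<gamma> \<bullet> WL T \<gamma> \<bullet> WL T (WR mm p)" using vc_pair_ctx[OF cod_m] by simp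
  also have "\<dots> = \<gamma> \<bullet> WL T \<gamma> \<bullet> WL T (WL T \<gamma>)" using c1 by simp
  finally have L: "\<gamma> \<bullet> WR (mm \<bullet> WL T mm) p = \<gamma> \<bullet> WL T \<gamma> \<bullet> WL T (WL T \<gamma>)" .
  have "\<gamma> \<bullet> WR (mm \<bullet> WR mm T) p = \<gamma> \<bullet> WR mm p \<bullet> WR (WR mm T) p" by simp
  also have "\<dots> = \<gamma> \<bullet> WL T \<gamma> \<bullet> WR (WR mm T) p" using vc_pair_ctx[OF cod_m] by simp
  also have "\<dots> = \<gamma> \<bullet> WR mm p \<bullet> WL T (WL T \<gamma>)" using n[symmetric] by simp
  also have "\<dots> = \<gamma> \<bullet> WL T \<gamma> \<bullet> WL T (WL T \<gamma>)" using vc_pair_ctx[OF cod_m] by simp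
  finally show "\<gamma> \<bullet> WR (mm \<bullet> WL T mm) p = \<gamma> \<bullet> WR (mm \<bullet> WR mm T) p" using L by simp
qed simp_all

lemma m_unitL: "mm \<bullet> WR et T = I T"
proof (rule kan_uniq[of T])
  have n: "WR et p \<bullet> \<gamma> = WL T \<gamma> \<bullet> WR (WR et T) p"
    using nat_WLR[of \<gamma> et] by simp
  have "\<gamma> \<bullet> WR (mm \<bullet> WR et T) p = \<gamma> \<bullet> WR mm p \<bullet> WR (WR et T) p" by simp
  also have "\<dots> = \<gamma> \<bullet> WL T \<gamma> \<bullet> WR (WR et T) p" using vc_pair_ctx[OF cod_m] by simp
  also have "\<dots> = \<gamma> \<bullet> WR et p \<bullet> \<gamma>" using n[symmetric] by simp
  also have "\<dots> = \<gamma>" using vc_pair_ctx[OF cod_e] by simp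
  finally show "\<gamma> \<bullet> WR (mm \<bullet> WR et T) p = \<gamma> \<bullet> WR (I T) p" by simp
qed simp_all

lemma m_unitR: "mm \<bullet> WL T et = I T"
proof (rule kan_uniq[of T])
  have c: "WL T \<gamma> \<bullet> WL T (WR et p) = I (T \<odot> p)"
  proof -
    have "WL T \<gamma> \<bullet> WL T (WR et p) = WL T (I p)" by (rule WL_pair[OF cod_e]) simp_all
    then show ?thesis by simp
  qed
  have "\<gamma> \<bullet> WR (mm \<bullet> WL T et) p = \<gamma> \<bullet> WR mm p \<bullet> WL T (WR et p)" by simp
  also have "\<dots> = \<gamma> \<bullet> WL T \<gamma> \<bullet> WL T (WR et p)" using vc_pair_ctx[OF cod_m] by simp
  also have "\<dots> = \<gamma>" using c by simp
  finally show "\<gamma> \<bullet> WR (mm \<bullet> WL T et) p = \<gamma> \<bullet> WR (I T) p" by simp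
qed simp_all

end

context codl begin

definition "EMS y = {(h, \<beta>). h \<in> hom1 C y (trg1 C p) \<and> \<beta> \<in> hom2 C (cmp C T h) h \<and>
                   vc C \<beta> (hc C (id2 C T) \<beta>) = vc C \<beta> (hc C mm (id2 C h)) \<and>
                   vc C \<beta> (hc C et (id2 C h)) = id2 C h}"
definition "EMH = (\<lambda>(h, \<beta>) (h', \<beta>').
             {\<xi>. \<xi> \<in> hom2 C h h' \<and> vc C \<xi> \<beta> = vc C \<beta>' (hc C (id2 C T) \<xi>)})"

lemma em_char: "eilenberg_moore C (trg1 C p) T mm et bT u \<mu> \<longleftrightarrow>
  (bT \<in> Ob C \<and> u \<in> hom1 C bT (trg1 C p) \<and> \<mu> \<in> hom2 C (cmp C T u) u \<and>
   (\<forall>y\<in>Ob C. cat_iso_by (hom1 C y bT) (hom2 C) (EMS y) EMH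
          (\<lambda>g. (cmp C u g, hc C \<mu> (id2 C g))) (\<lambda>\<xi>. hc C (id2 C u) \<xi>)))"
  unfolding eilenberg_moore_def EMS_def EMH_def by (rule refl)

lemma EMS_iff: "(h, a) \<in> EMS y \<longleftrightarrow> (h \<in> Arr \<and> sr h = y \<and> tg h = tg p \<and> a \<in> Cel \<and> dm a = T \<odot> h \<and> cd a = h \<and>
   a \<bullet> WL T a = a \<bullet> WR mm h \<and> a \<bullet> WR et h = I h)"
  unfolding EMS_def by (simp only: mem_Collect_eq case_prod_conv hom1_iff hom2_iff to_WL to_WR conj_assoc)

lemma EMH_iff: "\<xi> \<in> EMH (h, a) (h', a') \<longleftrightarrow> (\<xi> \<in> Cel \<and> dm \<xi> = h \<and> cd \<xi> = h' \<and> \<xi> \<bullet> a = a' \<bullet> WL T \<xi>)"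
  unfolding EMH_def by (simp only: mem_Collect_eq case_prod_conv hom2_iff to_WL conj_assoc)

lemma left_adj_from_em:
  assumes em: "eilenberg_moore C (trg1 C p) T mm et bT u \<mu>"
    and pT: "pT \<in> hom1 C (sr p) bT" "u \<odot> pT = p" "equivalence1 C pT"
  shows "has_left_adjoint C p"
proof -
  have A: "bT \<in> Ob C \<and> u \<in> hom1 C bT (trg1 C p) \<and> \<mu> \<in> hom2 C (cmp C T u) u"
    using em unfolding em_char by blast
  have B: "\<forall>y\<in>Ob C. cat_iso_by (hom1 C y bT) (hom2 C) (EMS y) EMH
          (\<lambda>g. (cmp C u g, hc C \<mu> (id2 C g))) (\<lambda>\<xi>. hc C (id2 C u) \<xi>)"
    using em unfolding em_char by blast
  have U: "bT \<in> Obs" "u \<in> Arr" "sr u = bT" "tg u = tg p" "\<mu> \<in> Cel" "dm \<mu> = T \<odot> u" "cd \<mu> = u"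
    using A by simp_all
  have iso_b: "cat_iso_by (hom1 C (tg p) bT) (hom2 C) (EMS (tg p)) EMH
          (\<lambda>g. (cmp C u g, hc C \<mu> (id2 C g))) (\<lambda>\<xi>. hc C (id2 C u) \<xi>)" using B by simp
  have iso_T: "cat_iso_by (hom1 C bT bT) (hom2 C) (EMS bT) EMH
          (\<lambda>g. (cmp C u g, hc C \<mu> (id2 C g))) (\<lambda>\<xi>. hc C (id2 C u) \<xi>)" using B U by simp
  have TmS: "(T, mm) \<in> EMS (tg p)" unfolding EMS_iff using m_assoc m_unitL by simp
  obtain f where f: "f \<in> hom1 C (tg p) bT" "(u \<odot> f, \<mu> \<star> I f) = (T, mm)"
    using cat_iso_surj[OF iso_b TmS] by blast
  have F: "f \<in> Arr" "sr f = tg p" "tg f = bT" "u \<odot> f = T" "WR \<mu> f = mm" using f by simp_all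
  have uf_ctx[simp]: "X \<in> Arr \<Longrightarrow> tg X = tg p \<Longrightarrow> u \<odot> f \<odot> X = T \<odot> X" for X
    using cmp_ctx[of X f u "ii (tg p)" T] F U by simp
  have uf_WL[simp]: "\<xi> \<in> Cel \<Longrightarrow> tg (dm \<xi>) = tg p \<Longrightarrow> WL u (WL f \<xi>) = WL T \<xi>" for \<xi>
    using WL_cmp[of u f \<xi>] F U by simp
  have "(u \<odot> ii bT, \<mu> \<star> I (ii bT)) \<in> EMS bT"
    using cat_iso_map[OF iso_T, of "ii bT"] U by simp
  then have uS: "(u, \<mu>) \<in> EMS bT" using U by simp
  have mu_laws: "\<mu> \<bullet> WL T \<mu> = \<mu> \<bullet> WR mm u" "\<mu> \<bullet> WR et u = I u" using uS unfolding EMS_iff by blast+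
  have "\<exists>\<xi>\<in>hom2 C (f \<odot> u) (ii bT). I u \<star> \<xi> = \<mu>"
  proof (rule cat_iso_surj2[OF iso_T, where a="f \<odot> u" and b="ii bT" and \<eta>=\<mu>])
    show "f \<odot> u \<in> hom1 C bT bT" using F U by simp
    show "ii bT \<in> hom1 C bT bT" using U by simp
    show "\<mu> \<in> EMH (u \<odot> f \<odot> u, \<mu> \<star> I (f \<odot> u)) (u \<odot> ii bT, \<mu> \<star> I (ii bT))"
      unfolding EMH_iff using F U mu_laws(1) by simp
  qed
  then obtain \<epsilon> where e: "\<epsilon> \<in> hom2 C (f \<odot> u) (ii bT)" "I u \<star> \<epsilon> = \<mu>" by blast
  have E: "\<epsilon> \<in> Cel" "dm \<epsilon> = f \<odot> u" "cd \<epsilon> = ii bT" "WL u \<epsilon> = \<mu>" using e by simp_all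
  have uef: "WL u (WR \<epsilon> f) = mm"
    using WR_WL[of u f \<epsilon>] E F U by simp
  have T1: "WR \<epsilon> f \<bullet> WL f et = I f"
  proof (rule cat_iso_inj2[OF iso_b, of f f])
    show "f \<in> hom1 C (tg p) bT" using F by simp
    show "f \<in> hom1 C (tg p) bT" using F by simp
    show "WR \<epsilon> f \<bullet> WL f et \<in> hom2 C f f" using F E U by simp
    show "I f \<in> hom2 C f f" using F by simp
    show "I u \<star> (WR \<epsilon> f \<bullet> WL f et) = I u \<star> I f" using F E U uef m_unitR by simp
  qed
  have adj1: "adjunction C f u et \<epsilon>"
    by (rule adjI) (use F U E T1 mu_laws(2) in simp_all)
  obtain g \<eta>2 \<epsilon>2 where adj2: "adjunction C g pT \<eta>2 \<epsilon>2" using equiv_left_adj[OF pT(3)] by blast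
  have PT: "pT \<in> Arr" "sr pT = sr p" "tg pT = bT" using pT(1) by simp_all
  have "sr g = tg f" using adjD(3,4)[OF adj2] PT F by simp
  from adj_comp[OF adj1 adj2 this] have "adjunction C (g \<odot> f) (u \<odot> pT) (WL u (WR \<eta>2 f) \<bullet> et) (\<epsilon>2 \<bullet> WL g (WR \<epsilon> pT))" .
  then show ?thesis unfolding has_left_adjoint_def pT(2) by blast
qed

end

context tc begin

lemma part1: assumes p: "p \<in> Arr" and hc: "has_cokernel_diagram C p"
  shows "monadic C p \<longleftrightarrow> has_left_adjoint C p \<and> effective_faithful C p"
proof
  assume "monadic C p"
  then obtain t \<gamma> m \<eta> bT u \<mu> pT where cd: "codensity_monad C p t \<gamma> m \<eta>"
    and em: "eilenberg_moore C (trg1 C p) t m \<eta> bT u \<mu>"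
    and pT: "pT \<in> hom1 C (src1 C p) bT" "cmp C u pT = p" "hc C \<mu> (id2 C pT) = \<gamma>" "equivalence1 C pT"
    unfolding monadic_def by blast
  interpret codl C p t \<gamma> m \<eta> using cd by unfold_locales
  have la: "has_left_adjoint C p" using left_adj_from_em[OF em pT(1,2,4)] .
  then obtain l \<eta>a \<epsilon>a where adj: "adjunction C l p \<eta>a \<epsilon>a" unfolding has_left_adjoint_def by blast
  from hc obtain P d0 d1 \<alpha> Q D0 D1 D2 s0 where ck: "cokernel_diagram C p P d0 d1 \<alpha> Q D0 D1 D2 s0"
    unfolding has_cokernel_diagram_def by blast
  interpret adjk C p P d0 d1 \<alpha> Q D0 D1 D2 s0 l \<eta>a \<epsilon>a t \<gamma> m \<eta>
    using ck adj cd by unfold_locales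
  have "effective_faithful C p" using desc_from_em[OF em pT] .
  with la show "has_left_adjoint C p \<and> effective_faithful C p" by blast
next
  assume "has_left_adjoint C p \<and> effective_faithful C p"
  then obtain l \<eta>a \<epsilon>a where adj: "adjunction C l p \<eta>a \<epsilon>a" and ef: "effective_faithful C p"
    unfolding has_left_adjoint_def by blast
  from ef obtain P d0 d1 \<alpha> Q D0 D1 D2 s0 L d \<Psi> pH where
    ck: "cokernel_diagram C p P d0 d1 \<alpha> Q D0 D1 D2 s0" and
    ld: "lax_descent_object C p d0 d1 D0 D1 D2 s0 L d \<Psi>" and
    pH: "pH \<in> hom1 C (src1 C p) L" "cmp C d pH = p" "hc C \<Psi> (id2 C pH) = \<alpha>" "equivalence1 C pH"
    unfolding effective_faithful_def by blast
  interpret adjl C p l \<eta>a \<epsilon>a using adj by unfold_locales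
  have cd: "codensity_monad C p (p \<odot> l) (WL p \<epsilon>a) (WL p (WR \<epsilon>a l)) \<eta>a" by (rule codensity_from_adj)
  interpret adjk C p P d0 d1 \<alpha> Q D0 D1 D2 s0 l \<eta>a \<epsilon>a "p \<odot> l" "WL p \<epsilon>a" "WL p (WR \<epsilon>a l)" \<eta>a
    using ck adj cd by unfold_locales
  show "monadic C p" using monadic_from_desc[OF ld pH] .
qed

end

lemma co_simps[simp]: "Ob (co C) = Ob C" "Ar (co C) = Ar C" "Ce (co C) = Ce C" "src1 (co C) = src1 C"
  "trg1 (co C) = trg1 C" "dom2 (co C) = cod2 C" "cod2 (co C) = dom2 C" "cmp (co C) = cmp C"
  "ide1 (co C) = ide1 C" "vc (co C) a b = vc C b a" "hc (co C) = hc C" "id2 (co C) = id2 C"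
  by (simp_all add: co_def)

lemma co_co[simp]: "co (co C) = C"
  by (simp add: co_def)

lemma co_hom1[simp]: "hom1 (co C) = hom1 C" by (simp add: hom1_def fun_eq_iff)
lemma co_hom2: "hom2 (co C) f g = hom2 C g f" by (auto simp add: hom2_def)

context tc begin

lemma co_twocat: "twocat (co C)"
  unfolding twocat_def co_simps co_hom1 co_hom2
proof (intro conjI ballI allI impI)
  show "\<And>x. x \<in> Obs \<Longrightarrow> ii x \<in> hom1 C x x" by simp
  show "\<And>f. f \<in> Arr \<Longrightarrow> sr f \<in> Obs" by simp
  show "\<And>f. f \<in> Arr \<Longrightarrow> tg f \<in> Obs" by simp
  show "\<And>x y z f g. x \<in> Obs \<Longrightarrow> y \<in> Obs \<Longrightarrow> z \<in> Obs \<Longrightarrow> f \<in> hom1 C x y \<Longrightarrow> g \<in> hom1 C y z \<Longrightarrow> g \<odot> f \<in> hom1 C x z"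
    by simp
  show "\<And>x y z w f g h. x \<in> Obs \<Longrightarrow> y \<in> Obs \<Longrightarrow> z \<in> Obs \<Longrightarrow> w \<in> Obs \<Longrightarrow>
    f \<in> hom1 C x y \<Longrightarrow> g \<in> hom1 C y z \<Longrightarrow> h \<in> hom1 C z w \<Longrightarrow> h \<odot> g \<odot> f = (h \<odot> g) \<odot> f"
    by simp
  show "\<And>f. f \<in> Arr \<Longrightarrow> ii (tg f) \<odot> f = f" by simp
  show "\<And>f. f \<in> Arr \<Longrightarrow> f \<odot> ii (sr f) = f" by simp
  show "\<And>\<xi>. \<xi> \<in> Cel \<Longrightarrow> cd \<xi> \<in> Arr" by simp
  show "\<And>\<xi>. \<xi> \<in> Cel \<Longrightarrow> dm \<xi> \<in> Arr" by simp
  show "\<And>\<xi>. \<xi> \<in> Cel \<Longrightarrow> sr (cd \<xi>) = sr (dm \<xi>)" by simp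
  show "\<And>\<xi>. \<xi> \<in> Cel \<Longrightarrow> tg (cd \<xi>) = tg (dm \<xi>)" by simp
  show "\<And>f. f \<in> Arr \<Longrightarrow> I f \<in> hom2 C f f" by simp
  show "\<And>f g h \<xi> \<eta>. \<xi> \<in> hom2 C g f \<Longrightarrow> \<eta> \<in> hom2 C h g \<Longrightarrow> \<xi> \<bullet> \<eta> \<in> hom2 C h f" by simp
  show "\<And>f g h k \<xi> \<eta> \<theta>. \<xi> \<in> hom2 C g f \<Longrightarrow> \<eta> \<in> hom2 C h g \<Longrightarrow> \<theta> \<in> hom2 C k h \<Longrightarrow>
        (\<xi> \<bullet> \<eta>) \<bullet> \<theta> = \<xi> \<bullet> \<eta> \<bullet> \<theta>" by simp
  show "\<And>\<xi>. \<xi> \<in> Cel \<Longrightarrow> \<xi> \<bullet> I (dm \<xi>) = \<xi>" by simp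
  show "\<And>\<xi>. \<xi> \<in> Cel \<Longrightarrow> I (cd \<xi>) \<bullet> \<xi> = \<xi>" by simp
  show "\<And>x y z f f' g g' \<xi> \<eta>. x \<in> Obs \<Longrightarrow> y \<in> Obs \<Longrightarrow> z \<in> Obs \<Longrightarrow> f \<in> hom1 C x y \<Longrightarrow> f' \<in> hom1 C x y \<Longrightarrow>
       g \<in> hom1 C y z \<Longrightarrow> g' \<in> hom1 C y z \<Longrightarrow> \<xi> \<in> hom2 C f' f \<Longrightarrow> \<eta> \<in> hom2 C g' g \<Longrightarrow>
        \<eta> \<star> \<xi> \<in> hom2 C (g' \<odot> f') (g \<odot> f)"
    by (simp del: to_WL to_WR)
  show "\<And>\<xi> \<eta> \<theta>. \<xi> \<in> Cel \<Longrightarrow> \<eta> \<in> Cel \<Longrightarrow> \<theta> \<in> Cel \<Longrightarrow>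
        sr (cd \<eta>) = tg (cd \<xi>) \<Longrightarrow> sr (cd \<theta>) = tg (cd \<eta>) \<Longrightarrow> \<theta> \<star> \<eta> \<star> \<xi> = (\<theta> \<star> \<eta>) \<star> \<xi>"
    by (rule hc_assoc) simp_all
  show "\<And>\<xi>. \<xi> \<in> Cel \<Longrightarrow> I (ii (tg (cd \<xi>))) \<star> \<xi> = \<xi>" by (simp del: to_WL to_WR)
  show "\<And>\<xi>. \<xi> \<in> Cel \<Longrightarrow> \<xi> \<star> I (ii (sr (cd \<xi>))) = \<xi>" by (simp del: to_WL to_WR)
  show "\<And>f g. f \<in> Arr \<Longrightarrow> g \<in> Arr \<Longrightarrow> sr g = tg f \<Longrightarrow> I (g \<odot> f) = I g \<star> I f" by (simp del: to_WL to_WR)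
  show "\<And>x y z f f' f'' g g' g'' \<xi> \<xi>' \<eta> \<eta>'. x \<in> Obs \<Longrightarrow> y \<in> Obs \<Longrightarrow> z \<in> Obs \<Longrightarrow>
       f \<in> hom1 C x y \<Longrightarrow> f' \<in> hom1 C x y \<Longrightarrow> f'' \<in> hom1 C x y \<Longrightarrow>
       g \<in> hom1 C y z \<Longrightarrow> g' \<in> hom1 C y z \<Longrightarrow> g'' \<in> hom1 C y z \<Longrightarrow>
       \<xi> \<in> hom2 C f' f \<Longrightarrow> \<xi>' \<in> hom2 C f'' f' \<Longrightarrow> \<eta> \<in> hom2 C g' g \<Longrightarrow> \<eta>' \<in> hom2 C g'' g' \<Longrightarrow>
        (\<eta> \<bullet> \<eta>') \<star> (\<xi> \<bullet> \<xi>') = (\<eta> \<star> \<xi>) \<bullet> (\<eta>' \<star> \<xi>')"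
    by (rule interchange) simp_all
qed

end

lemma co_hom2': "hom2 (co C) = (\<lambda>a b. hom2 C b a)" by (simp add: fun_eq_iff co_hom2)

lemma cat_iso_dual:
  assumes iso: "cat_iso_by X HX Y HY F G"
    and s: "bij_betw \<sigma> Y Y'"
    and F: "\<And>x. x \<in> X \<Longrightarrow> F' x = \<sigma> (F x)"
    and H: "\<And>a b. a \<in> Y \<Longrightarrow> b \<in> Y \<Longrightarrow> HY' (\<sigma> a) (\<sigma> b) = \<tau> ` HY b a"
    and t: "inj \<tau>"
    and G: "\<And>\<xi>. G' \<xi> = \<tau> (G \<xi>)"
  shows "cat_iso_by X (\<lambda>a b. HX b a) Y' HY' F' G'"
proof -
  have b1: "bij_betw F X Y" and h1: "\<And>a b. a \<in> X \<Longrightarrow> b \<in> X \<Longrightarrow> bij_betw G (HX a b) (HY (F a) (F b))"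
    using iso unfolding cat_iso_by_def by blast+
  have "bij_betw (\<sigma> \<circ> F) X Y'" using b1 s by (rule bij_betw_trans)
  then have B: "bij_betw F' X Y'" using F bij_betw_cong[of X F' "\<sigma> \<circ> F" Y'] by simp
  have Hh: "bij_betw G' (HX b a) (HY' (F' a) (F' b))" if ab: "a \<in> X" "b \<in> X" for a b
  proof -
    have Fa: "F a \<in> Y" "F b \<in> Y" using b1 ab unfolding bij_betw_def by blast+
    have "bij_betw \<tau> (HY (F b) (F a)) (\<tau> ` HY (F b) (F a))"
      using t by (simp add: inj_on_imp_bij_betw inj_on_subset)
    then have "bij_betw (\<tau> \<circ> G) (HX b a) (\<tau> ` HY (F b) (F a))"
      using h1[OF ab(2,1)] by (intro bij_betw_trans)
    then have "bij_betw G' (HX b a) (\<tau> ` HY (F b) (F a))"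
      using G bij_betw_cong[of "HX b a" G' "\<tau> \<circ> G"] by simp
    then show ?thesis using H[OF Fa] F ab by simp
  qed
  show ?thesis unfolding cat_iso_by_def using B Hh by blast
qed

lemma swap_mem_image: "(a, b) \<in> prod.swap ` S \<longleftrightarrow> (b, a) \<in> S"
  by force

lemma opcomma_co: assumes "opcomma C p P d0 d1 \<alpha>" shows "opcomma (co C) p P d1 d0 \<alpha>"
proof -
  have A: "p \<in> Ar C \<and> P \<in> Ob C \<and> d0 \<in> hom1 C (trg1 C p) P \<and> d1 \<in> hom1 C (trg1 C p) P \<and>
     \<alpha> \<in> hom2 C (cmp C d1 p) (cmp C d0 p)" using assms unfolding opcomma_def by blast
  have B: "\<forall>y\<in>Ob C.
        cat_iso_by (hom1 C P y) (hom2 C)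
          {(h0, h1, \<beta>). h0 \<in> hom1 C (trg1 C p) y \<and> h1 \<in> hom1 C (trg1 C p) y \<and>
                        \<beta> \<in> hom2 C (cmp C h1 p) (cmp C h0 p)}
          (\<lambda>(h0, h1, \<beta>) (h0', h1', \<beta>').
             {(\<xi>0, \<xi>1). \<xi>0 \<in> hom2 C h0 h0' \<and> \<xi>1 \<in> hom2 C h1 h1' \<and>
                vc C (hc C \<xi>0 (id2 C p)) \<beta> = vc C \<beta>' (hc C \<xi>1 (id2 C p))})
          (\<lambda>h. (cmp C h d0, cmp C h d1, hc C (id2 C h) \<alpha>))
          (\<lambda>\<xi>. (hc C \<xi> (id2 C d0), hc C \<xi> (id2 C d1)))" using assms unfolding opcomma_def by blast
  show ?thesis unfolding opcomma_def co_simps co_hom1 co_hom2'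
  proof (intro conjI ballI)
    fix y assume y: "y \<in> Ob C"
    show "cat_iso_by (hom1 C P y) (\<lambda>a b. hom2 C b a)
          {(h0, h1, \<beta>). h0 \<in> hom1 C (trg1 C p) y \<and> h1 \<in> hom1 C (trg1 C p) y \<and>
                        \<beta> \<in> hom2 C (cmp C h0 p) (cmp C h1 p)}
          (\<lambda>(h0, h1, \<beta>) (h0', h1', \<beta>').
             {(\<xi>0, \<xi>1). \<xi>0 \<in> hom2 C h0' h0 \<and> \<xi>1 \<in> hom2 C h1' h1 \<and>
                vc C \<beta> (hc C \<xi>0 (id2 C p)) = vc C (hc C \<xi>1 (id2 C p)) \<beta>'})
          (\<lambda>h. (cmp C h d1, cmp C h d0, hc C (id2 C h) \<alpha>))
          (\<lambda>\<xi>. (hc C \<xi> (id2 C d1), hc C \<xi> (id2 C d0)))"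
    proof (rule cat_iso_dual[OF B[rule_format, OF y], where \<sigma>="\<lambda>(h0, h1, \<beta>). (h1, h0, \<beta>)" and \<tau>=prod.swap])
      show "bij_betw (\<lambda>(h0, h1, \<beta>). (h1, h0, \<beta>))
       {(h0, h1, \<beta>). h0 \<in> hom1 C (trg1 C p) y \<and> h1 \<in> hom1 C (trg1 C p) y \<and>
                        \<beta> \<in> hom2 C (cmp C h1 p) (cmp C h0 p)}
       {(h0, h1, \<beta>). h0 \<in> hom1 C (trg1 C p) y \<and> h1 \<in> hom1 C (trg1 C p) y \<and>
                        \<beta> \<in> hom2 C (cmp C h0 p) (cmp C h1 p)}"
        by (rule bij_betw_byWitness[where f'="\<lambda>(h0, h1, \<beta>). (h1, h0, \<beta>)"]) auto
      show "inj prod.swap" by simp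
    qed (auto simp: swap_mem_image)
  qed (use A in auto)
qed


lemma pushout2_co: assumes "pushout2 C f0 f1 P q0 q1" shows "pushout2 (co C) f1 f0 P q1 q0"
proof -
  have A: "f0 \<in> Ar C \<and> f1 \<in> Ar C \<and> src1 C f0 = src1 C f1 \<and> P \<in> Ob C \<and>
     q0 \<in> hom1 C (trg1 C f0) P \<and> q1 \<in> hom1 C (trg1 C f1) P \<and> cmp C q0 f0 = cmp C q1 f1"
    using assms unfolding pushout2_def by blast
  have B: "\<forall>y\<in>Ob C.
        cat_iso_by (hom1 C P y) (hom2 C)
          {(k0, k1). k0 \<in> hom1 C (trg1 C f0) y \<and> k1 \<in> hom1 C (trg1 C f1) y \<and>
                     cmp C k0 f0 = cmp C k1 f1}
          (\<lambda>(k0, k1) (k0', k1').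
             {(\<xi>0, \<xi>1). \<xi>0 \<in> hom2 C k0 k0' \<and> \<xi>1 \<in> hom2 C k1 k1' \<and>
                hc C \<xi>0 (id2 C f0) = hc C \<xi>1 (id2 C f1)})
          (\<lambda>k. (cmp C k q0, cmp C k q1))
          (\<lambda>\<xi>. (hc C \<xi> (id2 C q0), hc C \<xi> (id2 C q1)))" using assms unfolding pushout2_def by blast
  show ?thesis unfolding pushout2_def co_simps co_hom1 co_hom2'
  proof (intro conjI ballI)
    fix y assume y: "y \<in> Ob C"
    show "cat_iso_by (hom1 C P y) (\<lambda>a b. hom2 C b a)
          {(k0, k1). k0 \<in> hom1 C (trg1 C f1) y \<and> k1 \<in> hom1 C (trg1 C f0) y \<and>
                     cmp C k0 f1 = cmp C k1 f0}
          (\<lambda>(k0, k1) (k0', k1').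
             {(\<xi>0, \<xi>1). \<xi>0 \<in> hom2 C k0' k0 \<and> \<xi>1 \<in> hom2 C k1' k1 \<and>
                hc C \<xi>0 (id2 C f1) = hc C \<xi>1 (id2 C f0)})
          (\<lambda>k. (cmp C k q1, cmp C k q0))
          (\<lambda>\<xi>. (hc C \<xi> (id2 C q1), hc C \<xi> (id2 C q0)))"
    proof (rule cat_iso_dual[OF B[rule_format, OF y], where \<sigma>=prod.swap and \<tau>=prod.swap])
      show "bij_betw prod.swap {(k0, k1). k0 \<in> hom1 C (trg1 C f0) y \<and> k1 \<in> hom1 C (trg1 C f1) y \<and>
                     cmp C k0 f0 = cmp C k1 f1}
          {(k0, k1). k0 \<in> hom1 C (trg1 C f1) y \<and> k1 \<in> hom1 C (trg1 C f0) y \<and>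
                     cmp C k0 f1 = cmp C k1 f0}"
        by (rule bij_betw_byWitness[where f'=prod.swap]) auto
      show "inj prod.swap" by simp
    qed (auto simp: swap_mem_image)
  qed (use A in auto)
qed

lemma cokernel_co: assumes "cokernel_diagram C p P d0 d1 \<alpha> Q D0 D1 D2 s0"
  shows "cokernel_diagram (co C) p P d1 d0 \<alpha> Q D2 D1 D0 s0"
proof -
  have o: "opcomma C p P d0 d1 \<alpha>" and po: "pushout2 C d0 d1 Q D2 D0"
    and r: "D1 \<in> hom1 C P Q \<and> cmp C D1 d1 = cmp C D2 d1 \<and> cmp C D1 d0 = cmp C D0 d0 \<and>
     hc C (id2 C D1) \<alpha> = vc C (hc C (id2 C D0) \<alpha>) (hc C (id2 C D2) \<alpha>) \<and>
     s0 \<in> hom1 C P (trg1 C p) \<and> cmp C s0 d0 = ide1 C (trg1 C p) \<and>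
     cmp C s0 d1 = ide1 C (trg1 C p) \<and> hc C (id2 C s0) \<alpha> = id2 C p"
    using assms unfolding cokernel_diagram_def by blast+
  show ?thesis unfolding cokernel_diagram_def
    using opcomma_co[OF o] pushout2_co[OF po] r by simp
qed

lemma lax_descent_co: assumes "lax_descent_object C p d0 d1 D0 D1 D2 s0 L d \<Psi>"
  shows "lax_descent_object (co C) p d1 d0 D2 D1 D0 s0 L d \<Psi>"
proof -
  have A: "L \<in> Ob C \<and> d \<in> hom1 C L (trg1 C p) \<and> \<Psi> \<in> hom2 C (cmp C d1 d) (cmp C d0 d)"
    using assms unfolding lax_descent_object_def by blast
  have B: "\<forall>y\<in>Ob C.
        cat_iso_by (hom1 C y L) (hom2 C)
          {(h, \<beta>). h \<in> hom1 C y (trg1 C p) \<and> \<beta> \<in> hom2 C (cmp C d1 h) (cmp C d0 h) \<and>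
                   vc C (hc C (id2 C D0) \<beta>) (hc C (id2 C D2) \<beta>) = hc C (id2 C D1) \<beta> \<and>
                   hc C (id2 C s0) \<beta> = id2 C h}
          (\<lambda>(h, \<beta>) (h', \<beta>').
             {\<xi>. \<xi> \<in> hom2 C h h' \<and>
                 vc C \<beta>' (hc C (id2 C d1) \<xi>) = vc C (hc C (id2 C d0) \<xi>) \<beta>})
          (\<lambda>g. (cmp C d g, hc C \<Psi> (id2 C g)))
          (\<lambda>\<xi>. hc C (id2 C d) \<xi>)" using assms unfolding lax_descent_object_def by blast
  show ?thesis unfolding lax_descent_object_def co_simps co_hom1 co_hom2'
  proof (intro conjI ballI)
    fix y assume y: "y \<in> Ob C"
    show "cat_iso_by (hom1 C y L) (\<lambda>a b. hom2 C b a)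
          {(h, \<beta>). h \<in> hom1 C y (trg1 C p) \<and> \<beta> \<in> hom2 C (cmp C d1 h) (cmp C d0 h) \<and>
                   vc C (hc C (id2 C D0) \<beta>) (hc C (id2 C D2) \<beta>) = hc C (id2 C D1) \<beta> \<and>
                   hc C (id2 C s0) \<beta> = id2 C h}
          (\<lambda>(h, \<beta>) (h', \<beta>').
             {\<xi>. \<xi> \<in> hom2 C h' h \<and>
                 vc C (hc C (id2 C d0) \<xi>) \<beta>' = vc C \<beta> (hc C (id2 C d1) \<xi>)})
          (\<lambda>g. (cmp C d g, hc C \<Psi> (id2 C g)))
          (\<lambda>\<xi>. hc C (id2 C d) \<xi>)"
    proof (rule cat_iso_dual[OF B[rule_format, OF y], where \<sigma>=id and \<tau>=id])
      show "inj id" by simp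
    qed (auto simp: bij_betw_id)
  qed (use A in auto)
qed

lemma invertible2_co: "invertible2 (co C) \<xi> \<longleftrightarrow> invertible2 C \<xi>"
  unfolding invertible2_def co_simps co_hom2 by auto

lemma invertible2_inv: assumes "\<theta> \<in> hom2 C (cod2 C \<xi>) (dom2 C \<xi>)" "\<xi> \<in> Ce C"
  "vc C \<theta> \<xi> = id2 C (dom2 C \<xi>)" "vc C \<xi> \<theta> = id2 C (cod2 C \<xi>)"
  shows "invertible2 C \<theta>"
  unfolding invertible2_def using assms by (auto simp: hom2_def)

lemma equivalence1_co: assumes "equivalence1 C f" shows "equivalence1 (co C) f"
proof -
  from assms obtain g \<eta> \<epsilon> where f: "f \<in> Ar C" and g: "g \<in> hom1 C (trg1 C f) (src1 C f)"
    and h: "\<eta> \<in> hom2 C (ide1 C (src1 C f)) (cmp C g f)" "\<epsilon> \<in> hom2 C (cmp C f g) (ide1 C (trg1 C f))"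
    and i: "invertible2 C \<eta>" "invertible2 C \<epsilon>"
    unfolding equivalence1_def by blast
  from i(1) obtain \<eta>i where \<eta>i: "\<eta>i \<in> hom2 C (cod2 C \<eta>) (dom2 C \<eta>)" "vc C \<eta>i \<eta> = id2 C (dom2 C \<eta>)"
    "vc C \<eta> \<eta>i = id2 C (cod2 C \<eta>)" unfolding invertible2_def by blast
  from i(2) obtain \<epsilon>i where \<epsilon>i: "\<epsilon>i \<in> hom2 C (cod2 C \<epsilon>) (dom2 C \<epsilon>)" "vc C \<epsilon>i \<epsilon> = id2 C (dom2 C \<epsilon>)"
    "vc C \<epsilon> \<epsilon>i = id2 C (cod2 C \<epsilon>)" unfolding invertible2_def by blast
  have "invertible2 C \<eta>i" by (rule invertible2_inv[OF \<eta>i(1) _ \<eta>i(2,3)]) (use h in \<open>simp add: hom2_def\<close>)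
  moreover have "invertible2 C \<epsilon>i" by (rule invertible2_inv[OF \<epsilon>i(1) _ \<epsilon>i(2,3)]) (use h in \<open>simp add: hom2_def\<close>)
  moreover have "\<eta>i \<in> hom2 C (cmp C g f) (ide1 C (src1 C f))" "\<epsilon>i \<in> hom2 C (ide1 C (trg1 C f)) (cmp C f g)"
    using \<eta>i(1) \<epsilon>i(1) h by (simp_all add: hom2_def)
  ultimately show ?thesis unfolding equivalence1_def co_simps co_hom1 co_hom2 invertible2_co
    using f g by blast
qed

lemma adjunction_co: "adjunction (co C) l r \<eta> \<epsilon> \<longleftrightarrow> adjunction C r l \<epsilon> \<eta>"
  unfolding adjunction_def co_simps co_hom1 co_hom2 by (auto simp: hom1_def)

lemma has_left_adjoint_co: "has_left_adjoint (co C) p \<longleftrightarrow> has_right_adjoint C p"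
  unfolding has_left_adjoint_def has_right_adjoint_def adjunction_co by blast

lemma effective_faithful_co: assumes "effective_faithful C p" shows "effective_faithful (co C) p"
proof -
  from assms obtain P d0 d1 \<alpha> Q D0 D1 D2 s0 L d \<Psi> pH where
    ck: "cokernel_diagram C p P d0 d1 \<alpha> Q D0 D1 D2 s0" and
    ld: "lax_descent_object C p d0 d1 D0 D1 D2 s0 L d \<Psi>" and
    pH: "pH \<in> hom1 C (src1 C p) L" "cmp C d pH = p" "hc C \<Psi> (id2 C pH) = \<alpha>" "equivalence1 C pH"
    unfolding effective_faithful_def by blast
  show ?thesis unfolding effective_faithful_def
    using cokernel_co[OF ck] lax_descent_co[OF ld] pH(1-3) equivalence1_co[OF pH(4)]
    by (simp only: co_simps co_hom1) blast
qed

lemma has_cokernel_co: assumes "has_cokernel_diagram C p" shows "has_cokernel_diagram (co C) p"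
proof -
  from assms obtain P d0 d1 \<alpha> Q D0 D1 D2 s0 where "cokernel_diagram C p P d0 d1 \<alpha> Q D0 D1 D2 s0"
    unfolding has_cokernel_diagram_def by blast
  from cokernel_co[OF this] show ?thesis unfolding has_cokernel_diagram_def by blast
qed

theorem corollary5p11:
  fixes C :: "('o, 'a, 'c) twocat_data" and p :: 'a
  assumes "twocat C" and "p \<in> Ar C" and "has_cokernel_diagram C p"
  shows "(monadic C p \<longleftrightarrow> has_left_adjoint C p \<and> effective_faithful C p) \<and>
         (comonadic C p \<longleftrightarrow> has_right_adjoint C p \<and> effective_faithful C p)"
proof -
  interpret tc C by unfold_locales (rule assms(1))
  have 1: "monadic C p \<longleftrightarrow> has_left_adjoint C p \<and> effective_faithful C p"
    using part1[OF assms(2,3)] .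
  interpret X: tc "co C" by unfold_locales (rule co_twocat)
  have "monadic (co C) p \<longleftrightarrow> has_left_adjoint (co C) p \<and> effective_faithful (co C) p"
    using X.part1[of p] assms(2) has_cokernel_co[OF assms(3)] by simp
  moreover have "effective_faithful (co C) p \<longleftrightarrow> effective_faithful C p"
    using effective_faithful_co[of C p] effective_faithful_co[of "co C" p] by auto
  ultimately have 2: "comonadic C p \<longleftrightarrow> has_right_adjoint C p \<and> effective_faithful C p"
    unfolding comonadic_def has_left_adjoint_co by simp
  from 1 2 show ?thesis by blast
qed


end
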